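(* Let $M,N$ be $\lambda\mu$-terms with $\lambda\mu\vdash M=N$. If $\Gamma\vdash M:\delta\mid\Delta$ is derivable in the intersection type assignment system, then $\Gamma\vdash N:\delta\mid\Delta$ is derivable.
   Context: $\lambda\mu$-calculus. Terms and commands: $M::=x\mid\lambda x.M\mid MN\mid\mu\alpha.\mathsf C$ and $\mathsf C::=[\alpha]M$, up to renaming of bound variables and names. Structural substitution $T[\alpha\Leftarrow L]$ replaces, recursively, every subterm $[\alpha]N$ by $[\alpha](N[\alpha\Leftarrow L])L$ and leaves everything else unchanged. $\to_{\beta\mu}$ is the compatible closure of: - $(\lambda x.M)N\to M[N/x]$; - $(\mu\alpha.\mathsf C)N\to\mu\alpha.\mathsf C[\alpha\Leftarrow N]$; - $[\alpha]\mu\beta.\mathsf C\to\mathsf C[\alpha/\beta]$. $\lambda\mu\vdash M=N$ is the equational theory it generates. Types (for a fixed $\omega$-algebraic lattice $R$ with compact elements $\mathcal K(R)$): - $\Lambda_R$: $\rho::=\psi_a\mid\omega\mid\rho\wedge\rho$; - $\Lambda_D$: $\delta::=\rho\mid\kappa\to\rho\mid\omega\mid\delta\wedge\delta$; - $\Lambda_C$: $\kappa::=\delta\times\kappa\mid\omega\mid\kappa\wedge\kappa$. The relations $\le_R,\le_D,\le_C$ are the least reflexive, transitive relations with $\sigma\wedge\tau\le\sigma,\tau$, $\sigma\le\omega$, $\rho\le\sigma,\tau\Rightarrow\rho\le\sigma\wedge\tau$, and additionally: - $\psi_\bot\sim\omega$ and $\psi_{a\sqcup b}\sim\psi_a\wedge\psi_b$;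 - $\le_R\subseteq\le_D$; - $\omega\le_D\omega\to\omega$; - $\psi_a\le_D\omega\to\psi_a\le_D\psi_a$; - $\omega\le_C\omega\times\omega$; - $(\kappa\to\rho_1)\wedge(\kappa\to\rho_2)\le_D\kappa\to(\rho_1\wedge\rho_2)$; - $(\delta_1\times\kappa_1)\wedge(\delta_2\times\kappa_2)\le_C(\delta_1\wedge\delta_2)\times(\kappa_1\wedge\kappa_2)$; - $\to$ is contravariant in $\Lambda_C$ and covariant in $\Lambda_R$; - $\times$ is covariant in both arguments. Type assignment. Bases $\Gamma$ are finite maps from variables to $\Lambda_D$, and contexts $\Delta$ are finite maps from names to $\Lambda_C$. $\Gamma(x)$ and $\Delta(\alpha)$ are $\omega$ outside the domain. The rules are: - (Ax) $\Gamma,x{:}\delta\vdash x:\delta\mid\Delta$. - (Abs) From $\Gamma\vdash M:\kappa\to\rho\mid\Delta$, $\Gamma(x)=\delta$, infer $\Gamma\setminus x\vdash\lambda x.M:(\delta\times\kappa)\to\rho\mid\Delta$. - (App) From $\Gamma\vdash M:(\delta\times\kappa)\to\rho\mid\Delta$ and $\Gamma\vdash N:\delta\mid\Delta$, infer $\Gamma\vdash MN:\kappa\to\rho\mid\Delta$. - (Cmd) From $\Gamma\vdash M:\delta\mid\Delta$, $\Delta(\alpha)=\kappa$, infer $\Gamma\vdash[\alpha]M:\delta\times\kappa\mid\Delta$. - ($\mu$) From $\Gamma\vdash\mathsf C:(\kappa'\to\rho)\times\kappa'\mid\Delta$, $\Delta(\alpha)=\kappa$, infer $\Gamma\vdash\mu\alpha.\mathsf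 C:\kappa\to\rho\mid\Delta\setminus\alpha$. - ($\wedge$) intersection introduction; ($\omega$) every $T$ has type $\omega$; ($\le$) subsumption. Variables in $\Gamma$ and names in $\Delta$ are assumed not bound in the subject. *)

theory Defs
  imports Main "HOL-Library.Countable_Set"
begin

text \<open>Terms and commands of the lambda-mu calculus, up to alpha-conversion, represented
with de Bruijn indices. Term variables and names (mu-variables) live in two separate
index spaces: Lam binds term variable 0, Mu binds name 0.\<close>

datatype trm = Var nat | Lam trm | App trm trm | Mu cmd
     and cmd = Cmd nat trm

primrec liftV :: "nat \<Rightarrow> trm \<Rightarrow> trm" and liftVc :: "nat \<Rightarrow> cmd \<Rightarrow> cmd" where
  "liftV k (Var i) = (if i < k then Var i else Var (Suc i))"
| "liftV k (Lam M) = Lam (liftV (Suc k) M)"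
| "liftV k (App M N) = App (liftV k M) (liftV k N)"
| "liftV k (Mu C) = Mu (liftVc k C)"
| "liftVc k (Cmd a M) = Cmd a (liftV k M)"

primrec liftN :: "nat \<Rightarrow> trm \<Rightarrow> trm" and liftNc :: "nat \<Rightarrow> cmd \<Rightarrow> cmd" where
  "liftN k (Var i) = Var i"
| "liftN k (Lam M) = Lam (liftN k M)"
| "liftN k (App M N) = App (liftN k M) (liftN k N)"
| "liftN k (Mu C) = Mu (liftNc (Suc k) C)"
| "liftNc k (Cmd a M) = Cmd (if a < k then a else Suc a) (liftN k M)"

primrec substV :: "trm \<Rightarrow> nat \<Rightarrow> trm \<Rightarrow> trm"
    and substVc :: "cmd \<Rightarrow> nat \<Rightarrow> trm \<Rightarrow> cmd" where
  "substV (Var i) k N = (if i < k then Var i else if i = k then N else Var (i - 1))"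
| "substV (Lam M) k N = Lam (substV M (Suc k) (liftV 0 N))"
| "substV (App M1 M2) k N = App (substV M1 k N) (substV M2 k N)"
| "substV (Mu C) k N = Mu (substVc C k (liftN 0 N))"
| "substVc (Cmd a M) k N = Cmd a (substV M k N)"

primrec struct :: "trm \<Rightarrow> nat \<Rightarrow> trm \<Rightarrow> trm"
    and structc :: "cmd \<Rightarrow> nat \<Rightarrow> trm \<Rightarrow> cmd" where
  "struct (Var i) a L = Var i"
| "struct (Lam M) a L = Lam (struct M a (liftV 0 L))"
| "struct (App M1 M2) a L = App (struct M1 a L) (struct M2 a L)"
| "struct (Mu C) a L = Mu (structc C (Suc a) (liftN 0 L))"
| "structc (Cmd b M) a L =
     (if b = a then Cmd a (App (struct M a L) L) else Cmd b (struct M a L))"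

primrec renN :: "trm \<Rightarrow> nat \<Rightarrow> nat \<Rightarrow> trm"
    and renNc :: "cmd \<Rightarrow> nat \<Rightarrow> nat \<Rightarrow> cmd" where
  "renN (Var i) k a = Var i"
| "renN (Lam M) k a = Lam (renN M k a)"
| "renN (App M1 M2) k a = App (renN M1 k a) (renN M2 k a)"
| "renN (Mu C) k a = Mu (renNc C (Suc k) (Suc a))"
| "renNc (Cmd b M) k a =
     Cmd (if b < k then b else if b = k then a else b - 1) (renN M k a)"

inductive red :: "trm \<Rightarrow> trm \<Rightarrow> bool" and redc :: "cmd \<Rightarrow> cmd \<Rightarrow> bool" where
  beta: "red (App (Lam M) N) (substV M 0 N)"
| mu: "red (App (Mu C) N) (Mu (structc C 0 (liftN 0 N)))"
| ren: "redc (Cmd a (Mu C)) (renNc C 0 a)"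
| lam: "red M M' \<Longrightarrow> red (Lam M) (Lam M')"
| appL: "red M M' \<Longrightarrow> red (App M N) (App M' N)"
| appR: "red N N' \<Longrightarrow> red (App M N) (App M N')"
| muC: "redc C C' \<Longrightarrow> red (Mu C) (Mu C')"
| cmdC: "red M M' \<Longrightarrow> redc (Cmd a M) (Cmd a M')"

definition lmu_eq :: "trm \<Rightarrow> trm \<Rightarrow> bool" where
  "lmu_eq = equivclp red"

definition directed :: "'a::complete_lattice set \<Rightarrow> bool" where
  "directed D \<longleftrightarrow> D \<noteq> {} \<and> (\<forall>x\<in>D. \<forall>y\<in>D. \<exists>z\<in>D. x \<le> z \<and> y \<le> z)"

definition compact :: "'a::complete_lattice \<Rightarrow> bool" where
  "compact a \<longleftrightarrow> (\<forall>D. directed D \<and> a \<le> Sup D \<longrightarrow> (\<exists>d\<in>D. a \<le> d))"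

definition omega_algebraic :: "'a::complete_lattice itself \<Rightarrow> bool" where
  "omega_algebraic _ \<longleftrightarrow>
     countable {a::'a. compact a} \<and> (\<forall>x::'a. x = Sup {a. compact a \<and> a \<le> x})"

datatype 'a ity = TPsi 'a | TOm | TInter "'a ity" "'a ity" | TArr "'a ity" "'a ity"
  | TProd "'a ity" "'a ity"

datatype srt = SR | SD | SC

inductive wfty :: "srt \<Rightarrow> 'a::complete_lattice ity \<Rightarrow> bool" where
  psi: "compact a \<Longrightarrow> wfty SR (TPsi a)"
| om: "wfty s TOm"
| inter: "wfty s \<sigma> \<Longrightarrow> wfty s \<tau> \<Longrightarrow> wfty s (TInter \<sigma> \<tau>)"
| RD: "wfty SR \<rho> \<Longrightarrow> wfty SD \<rho>"
| arr: "wfty SC \<kappa> \<Longrightarrow> wfty SR \<rho> \<Longrightarrow> wfty SD (TArr \<kappa> \<rho>)"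
| prod: "wfty SD \<delta> \<Longrightarrow> wfty SC \<kappa> \<Longrightarrow> wfty SC (TProd \<delta> \<kappa>)"

inductive sub :: "srt \<Rightarrow> 'a::complete_lattice ity \<Rightarrow> 'a ity \<Rightarrow> bool" where
  refl: "wfty s \<sigma> \<Longrightarrow> sub s \<sigma> \<sigma>"
| trans: "sub s \<sigma> \<tau> \<Longrightarrow> sub s \<tau> \<upsilon> \<Longrightarrow> sub s \<sigma> \<upsilon>"
| interL: "wfty s \<sigma> \<Longrightarrow> wfty s \<tau> \<Longrightarrow> sub s (TInter \<sigma> \<tau>) \<sigma>"
| interR: "wfty s \<sigma> \<Longrightarrow> wfty s \<tau> \<Longrightarrow> sub s (TInter \<sigma> \<tau>) \<tau>"
| top: "wfty s \<sigma> \<Longrightarrow> sub s \<sigma> TOm"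
| glb: "sub s \<rho> \<sigma> \<Longrightarrow> sub s \<rho> \<tau> \<Longrightarrow> sub s \<rho> (TInter \<sigma> \<tau>)"
| psi_bot1: "sub SR (TPsi bot) TOm"
| psi_bot2: "sub SR TOm (TPsi bot)"
| psi_sup1: "compact a \<Longrightarrow> compact b \<Longrightarrow> sub SR (TPsi (sup a b)) (TInter (TPsi a) (TPsi b))"
| psi_sup2: "compact a \<Longrightarrow> compact b \<Longrightarrow> sub SR (TInter (TPsi a) (TPsi b)) (TPsi (sup a b))"
| RD: "sub SR \<sigma> \<tau> \<Longrightarrow> sub SD \<sigma> \<tau>"
| om_arr: "sub SD TOm (TArr TOm TOm)"
| psi_arr1: "compact a \<Longrightarrow> sub SD (TPsi a) (TArr TOm (TPsi a))"
| psi_arr2: "compact a \<Longrightarrow> sub SD (TArr TOm (TPsi a)) (TPsi a)"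
| om_prod: "sub SC TOm (TProd TOm TOm)"
| arr_inter: "wfty SC \<kappa> \<Longrightarrow> wfty SR \<rho>1 \<Longrightarrow> wfty SR \<rho>2 \<Longrightarrow>
    sub SD (TInter (TArr \<kappa> \<rho>1) (TArr \<kappa> \<rho>2)) (TArr \<kappa> (TInter \<rho>1 \<rho>2))"
| prod_inter: "wfty SD \<delta>1 \<Longrightarrow> wfty SD \<delta>2 \<Longrightarrow> wfty SC \<kappa>1 \<Longrightarrow> wfty SC \<kappa>2 \<Longrightarrow>
    sub SC (TInter (TProd \<delta>1 \<kappa>1) (TProd \<delta>2 \<kappa>2)) (TProd (TInter \<delta>1 \<delta>2) (TInter \<kappa>1 \<kappa>2))"
| arr_mono: "sub SC \<kappa>' \<kappa> \<Longrightarrow> sub SR \<rho> \<rho>' \<Longrightarrow> sub SD (TArr \<kappa> \<rho>) (TArr \<kappa>' \<rho>')"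
| prod_mono: "sub SD \<delta> \<delta>' \<Longrightarrow> sub SC \<kappa> \<kappa>' \<Longrightarrow> sub SC (TProd \<delta> \<kappa>) (TProd \<delta>' \<kappa>')"

text \<open>Bases and contexts are total maps that are omega outside a finite domain.
Extending a de Bruijn basis/context by a new innermost binder:\<close>
definition extend :: "'b \<Rightarrow> (nat \<Rightarrow> 'b) \<Rightarrow> nat \<Rightarrow> 'b" where
  "extend d G = (\<lambda>i. case i of 0 \<Rightarrow> d | Suc j \<Rightarrow> G j)"

definition is_basis :: "(nat \<Rightarrow> 'a::complete_lattice ity) \<Rightarrow> bool" where
  "is_basis G \<longleftrightarrow> finite {x. G x \<noteq> TOm} \<and> (\<forall>x. wfty SD (G x))"

definition is_context :: "(nat \<Rightarrow> 'a::complete_lattice ity) \<Rightarrow> bool" where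
  "is_context D \<longleftrightarrow> finite {a. D a \<noteq> TOm} \<and> (\<forall>a. wfty SC (D a))"

inductive has_type :: "(nat \<Rightarrow> 'a::complete_lattice ity) \<Rightarrow> trm \<Rightarrow> 'a ity \<Rightarrow> (nat \<Rightarrow> 'a ity) \<Rightarrow> bool"
  and cmd_type :: "(nat \<Rightarrow> 'a::complete_lattice ity) \<Rightarrow> cmd \<Rightarrow> 'a ity \<Rightarrow> (nat \<Rightarrow> 'a ity) \<Rightarrow> bool"
where
  Ax: "has_type G (Var x) (G x) D"
| Abs: "has_type (extend \<delta> G) M (TArr \<kappa> \<rho>) D \<Longrightarrow> wfty SD \<delta> \<Longrightarrow>
        has_type G (Lam M) (TArr (TProd \<delta> \<kappa>) \<rho>) D"
| App: "has_type G M (TArr (TProd \<delta> \<kappa>) \<rho>) D \<Longrightarrow> has_type G N \<delta> D \<Longrightarrow>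
        has_type G (App M N) (TArr \<kappa> \<rho>) D"
| Cmd: "has_type G M \<delta> D \<Longrightarrow> cmd_type G (Cmd a M) (TProd \<delta> (D a)) D"
| Mu: "cmd_type G C (TProd (TArr \<kappa>' \<rho>) \<kappa>') (extend \<kappa> D) \<Longrightarrow> wfty SC \<kappa> \<Longrightarrow>
        has_type G (Mu C) (TArr \<kappa> \<rho>) D"
| Inter: "has_type G M \<sigma> D \<Longrightarrow> has_type G M \<tau> D \<Longrightarrow> has_type G M (TInter \<sigma> \<tau>) D"
| Om: "has_type G M TOm D"
| Sub: "has_type G M \<sigma> D \<Longrightarrow> sub SD \<sigma> \<tau> \<Longrightarrow> has_type G M \<tau> D"
| CInter: "cmd_type G C \<sigma> D \<Longrightarrow> cmd_type G C \<tau> D \<Longrightarrow> cmd_type G C (TInter \<sigma> \<tau>) D"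
| COm: "cmd_type G C TOm D"
| CSub: "cmd_type G C \<sigma> D \<Longrightarrow> sub SC \<sigma> \<tau> \<Longrightarrow> cmd_type G C \<tau> D"

end

theory Submission
  imports Defs
begin


fun wff :: "srt \<Rightarrow> 'a::complete_lattice ity \<Rightarrow> bool" where
  "wff SR (TPsi a) = compact a"
| "wff SR TOm = True"
| "wff SR (TInter s t) = (wff SR s \<and> wff SR t)"
| "wff SR (TArr k r) = False"
| "wff SR (TProd d k) = False"
| "wff SD (TPsi a) = compact a"
| "wff SD TOm = True"
| "wff SD (TInter s t) = (wff SD s \<and> wff SD t)"
| "wff SD (TArr k r) = (wff SC k \<and> wff SR r)"
| "wff SD (TProd d k) = False"
| "wff SC (TPsi a) = False"
| "wff SC TOm = True"
| "wff SC (TInter s t) = (wff SC s \<and> wff SC t)"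
| "wff SC (TArr k r) = False"
| "wff SC (TProd d k) = (wff SD d \<and> wff SC k)"

lemma wff_RD: "wff SR t \<Longrightarrow> wff SD t" by (induction t) auto

lemma wff_TOm[simp]: "wff s TOm" by (cases s) auto
lemma wff_TInter[simp]: "wff s (TInter a b) \<longleftrightarrow> wff s a \<and> wff s b" by (cases s) auto

lemma wfty_wff[simp]: "wfty s t \<longleftrightarrow> wff s t"
proof
  assume "wfty s t" then show "wff s t" by induction (auto simp: wff_RD)
next
  assume "wff s t" then show "wfty s t"
    apply (induction t arbitrary: s)
    subgoal for a s by (cases s) (auto intro: wfty.psi wfty.RD)
    subgoal for s by (auto intro: wfty.om)
    subgoal for t1 t2 s by (cases s) (auto intro: wfty.inter)
    subgoal for t1 t2 s by (cases s) (auto intro: wfty.arr)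
    subgoal for t1 t2 s by (cases s) (auto intro: wfty.prod)
    done
qed

lemma compact_bot: "compact (bot::'a::complete_lattice)"
  unfolding compact_def directed_def by auto

lemma compact_sup: "compact a \<Longrightarrow> compact b \<Longrightarrow> compact (sup a b::'a::complete_lattice)"
  unfolding compact_def
proof (intro allI impI)
  fix X :: "'a set"
  assume ca: "\<forall>D. directed D \<and> a \<le> Sup D \<longrightarrow> (\<exists>d\<in>D. a \<le> d)"
    and cb: "\<forall>D. directed D \<and> b \<le> Sup D \<longrightarrow> (\<exists>d\<in>D. b \<le> d)"
    and h: "directed X \<and> sup a b \<le> Sup X"
  then obtain d1 where d1: "d1 \<in> X" "a \<le> d1" by auto
  from cb h obtain d2 where d2: "d2 \<in> X" "b \<le> d2" by auto
  from h d1 d2 obtain z where "z \<in> X" "d1 \<le> z" "d2 \<le> z" unfolding directed_def by blast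
  then show "\<exists>d\<in>X. sup a b \<le> d" using d1 d2 by (meson le_supI order_trans)
qed

lemma sub_wf: "sub s a b \<Longrightarrow> wff s a \<and> wff s b"
  by (induction rule: sub.induct) (auto simp: compact_bot compact_sup wff_RD)

fun val :: "'a::complete_lattice ity \<Rightarrow> 'a" where
  "val (TPsi a) = a" | "val TOm = bot" | "val (TInter s t) = sup (val s) (val t)"
| "val (TArr k r) = bot" | "val (TProd d k) = bot"

fun arr :: "'a ity \<Rightarrow> ('a ity \<times> 'a ity) list" where
  "arr (TPsi a) = [(TOm, TPsi a)]" | "arr TOm = []" | "arr (TInter s t) = arr s @ arr t"
| "arr (TArr k r) = [(k,r)]" | "arr (TProd d k) = []"

fun prods :: "'a ity \<Rightarrow> ('a ity \<times> 'a ity) list" where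
  "prods (TPsi a) = []" | "prods TOm = []" | "prods (TInter s t) = prods s @ prods t"
| "prods (TArr k r) = []" | "prods (TProd d k) = [(d,k)]"

definition meet :: "'a ity list \<Rightarrow> 'a ity" where "meet l = foldr TInter l TOm"

lemma meet_simps[simp]: "meet [] = TOm" "meet (x#l) = TInter x (meet l)"
  by (auto simp: meet_def)

lemma meet_wf: "(\<forall>x\<in>set l. wff s x) \<Longrightarrow> wff s (meet l)"
  by (induction l) (cases s; auto)+

lemma meet_le: "(\<forall>x\<in>set l. wff s x) \<Longrightarrow> x \<in> set l \<Longrightarrow> sub s (meet l) x"
proof (induction l)
  case (Cons y l)
  show ?case
  proof (cases "x = y")
    case True then show ?thesis using Cons sub.interL[of s y "meet l"] meet_wf[of l s] by auto
  next
    case False then show ?thesis using Cons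
    proof -
      have w: "wff s (meet l)" using Cons meet_wf[of l s] by auto
      have "sub s (TInter y (meet l)) (meet l)" using Cons w sub.interR[of s y "meet l"] by auto
      moreover have "sub s (meet l) x" using Cons False by auto
      ultimately have "sub s (TInter y (meet l)) x" by (rule sub.trans)
      then show ?thesis by simp
    qed
  qed
qed simp

lemma meet_glb: "wff s a \<Longrightarrow> (\<forall>x\<in>set l. sub s a x) \<Longrightarrow> sub s a (meet l)"
  by (induction l) (auto intro: sub.glb sub.top)

lemma meet_subset: "(\<forall>x\<in>set l2. wff s x) \<Longrightarrow> set l1 \<subseteq> set l2 \<Longrightarrow> sub s (meet l2) (meet l1)"
  by (rule meet_glb) (auto intro: meet_wf meet_le)

lemma sub_SR_val: "sub s a b \<Longrightarrow> s = SR \<Longrightarrow> val b \<le> val a"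
  apply (induction rule: sub.induct)
  apply (simp_all add: le_supI1 le_supI2)
  done

lemma val_compact: "wff SR a \<Longrightarrow> compact (val a)"
  by (induction a) (auto simp: compact_bot compact_sup)

lemma sub_inter_mono: "sub s a c \<Longrightarrow> sub s b d \<Longrightarrow> sub s (TInter a b) (TInter c d)"
proof -
  assume a: "sub s a c" "sub s b d"
  then have w: "wff s a" "wff s b" using sub_wf by blast+
  have "sub s (TInter a b) a" using w by (auto intro: sub.interL)
  then have 1: "sub s (TInter a b) c" using a(1) by (rule sub.trans)
  have "sub s (TInter a b) b" using w by (auto intro: sub.interR)
  then have 2: "sub s (TInter a b) d" using a(2) by (rule sub.trans)
  show ?thesis using 1 2 by (rule sub.glb)
qed

lemma SR_psi: "wff SR a \<Longrightarrow> sub SR a (TPsi (val a)) \<and> sub SR (TPsi (val a)) a"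
proof (induction a)
  case (TPsi x) then show ?case by (auto intro: sub.refl)
next
  case TOm then show ?case by (auto intro: sub.psi_bot1 sub.psi_bot2)
next
  case (TInter a1 a2)
  then have c: "compact (val a1)" "compact (val a2)" by (auto intro: val_compact)
  from TInter have i1: "sub SR a1 (TPsi (val a1))" "sub SR (TPsi (val a1)) a1"
    and i2: "sub SR a2 (TPsi (val a2))" "sub SR (TPsi (val a2)) a2" by auto
  have "sub SR (TInter a1 a2) (TInter (TPsi (val a1)) (TPsi (val a2)))"
    using sub_inter_mono[OF i1(1) i2(1)] .
  then have A: "sub SR (TInter a1 a2) (TPsi (val (TInter a1 a2)))"
    using sub.trans[OF _ sub.psi_sup2[OF c]] by simp
  have "sub SR (TInter (TPsi (val a1)) (TPsi (val a2))) (TInter a1 a2)"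
    using sub_inter_mono[OF i1(2) i2(2)] .
  then have B: "sub SR (TPsi (val (TInter a1 a2))) (TInter a1 a2)"
    using sub.trans[OF sub.psi_sup1[OF c]] by simp
  show ?case using A B by simp
qed auto

lemma psi_le: "compact a \<Longrightarrow> compact b \<Longrightarrow> b \<le> (a::'a::complete_lattice) \<Longrightarrow> sub SR (TPsi a) (TPsi b)"
proof -
  assume a: "compact a" "compact b" "b \<le> a"
  have "sub SR (TPsi (sup a b)) (TInter (TPsi a) (TPsi b))" by (rule sub.psi_sup1[OF a(1,2)])
  then have "sub SR (TPsi a) (TInter (TPsi a) (TPsi b))" using a(3) by (simp add: sup_absorb1)
  moreover have "sub SR (TInter (TPsi a) (TPsi b)) (TPsi b)" using a by (auto intro: sub.interR)
  ultimately show ?thesis by (rule sub.trans)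
qed

lemma SR_complete: "wff SR a \<Longrightarrow> wff SR b \<Longrightarrow> val b \<le> val a \<Longrightarrow> sub SR a b"
proof -
  assume a: "wff SR a" "wff SR b" "val b \<le> val a"
  have "sub SR a (TPsi (val a))" using SR_psi[OF a(1)] by simp
  moreover have "sub SR (TPsi (val a)) (TPsi (val b))" using psi_le val_compact a by blast
  moreover have "sub SR (TPsi (val b)) b" using SR_psi[OF a(2)] by simp
  ultimately show ?thesis by (blast intro: sub.trans)
qed



lemma arr_wf: "wff SD s \<Longrightarrow> (k,r) \<in> set (arr s) \<Longrightarrow> wff SC k \<and> wff SR r"
  by (induction s) auto

lemma prods_wf: "wff SC s \<Longrightarrow> (d,k) \<in> set (prods s) \<Longrightarrow> wff SD d \<and> wff SC k"
  by (induction s) auto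

lemma arr_SR: "wff SR s \<Longrightarrow> (k,r) \<in> set (arr s) \<Longrightarrow> k = TOm \<and> val r \<le> val s"
  by (induction s) (auto intro: le_supI1 le_supI2)

lemma SupI: "(k', r) \<in> set l \<Longrightarrow> sub SC k k' \<Longrightarrow>
   val r \<le> Sup {val r |k' r. (k',r) \<in> set l \<and> sub SC k k'}"
  by (rule Sup_upper) blast

lemma arr_SR_sup: "wff SR s \<Longrightarrow> val s \<le> Sup {val r |k r. (k,r) \<in> set (arr s) \<and> sub SC TOm k}"
proof (induction s)
  case (TPsi x)
  have "sub SC TOm (TOm::'a ity)" by (rule sub.refl) simp
  then show ?case by (auto intro!: Sup_upper)
next
  case (TInter s1 s2)
  have "Sup {val r |k r. (k,r) \<in> set (arr s1) \<and> sub SC TOm k} \<le> Sup {val r |k r. (k,r) \<in> set (arr (TInter s1 s2)) \<and> sub SC TOm k}"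
    by (rule Sup_subset_mono) auto
  then have "val s1 \<le> Sup {val r |k r. (k,r) \<in> set (arr (TInter s1 s2)) \<and> sub SC TOm k}"
    using TInter by (auto elim: order_trans)
  have "Sup {val r |k r. (k,r) \<in> set (arr s2) \<and> sub SC TOm k} \<le> Sup {val r |k r. (k,r) \<in> set (arr (TInter s1 s2)) \<and> sub SC TOm k}"
    by (rule Sup_subset_mono) auto
  then have "val s2 \<le> Sup {val r |k r. (k,r) \<in> set (arr (TInter s1 s2)) \<and> sub SC TOm k}"
    using TInter by (auto elim: order_trans)
  moreover note \<open>val s1 \<le> _\<close>
  ultimately show ?case by simp
qed auto

lemma AR_refl_aux: "wff SD a \<Longrightarrow> set (arr a) \<subseteq> set l \<Longrightarrow> (k0, r0) \<in> set (arr a) \<Longrightarrow>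
  val r0 \<le> Sup {val r |k r. (k,r) \<in> set l \<and> sub SC k0 k}"
proof -
  assume a: "wff SD a" "set (arr a) \<subseteq> set l" "(k0, r0) \<in> set (arr a)"
  then have "wff SC k0" using arr_wf by blast
  then have "sub SC k0 k0" by (rule sub.refl[simplified])
  then show ?thesis using a SupI[of k0 r0 l k0] by blast
qed

lemma sub_Om_Om[simp]: "sub s TOm TOm" by (rule sub.refl) simp

definition AR :: "'a::complete_lattice ity \<Rightarrow> 'a ity \<Rightarrow> bool" where
  "AR s t \<longleftrightarrow> (\<forall>k0 r0. (k0,r0) \<in> set (arr t) \<longrightarrow>
      val r0 \<le> Sup {val r |k r. (k,r) \<in> set (arr s) \<and> sub SC k0 k})"

lemma sub_AR: "sub s a b \<Longrightarrow> s = SD \<Longrightarrow> AR a b"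
proof (induction rule: sub.induct)
  case (refl s a)
  then show ?case unfolding AR_def using AR_refl_aux[of a "arr a"] by simp
next
  case (trans s a b c)
  show ?case unfolding AR_def
  proof (intro allI impI)
    fix k0 r0 assume k0: "(k0, r0) \<in> set (arr c)"
    have 1: "val r0 \<le> Sup {val r |k r. (k,r) \<in> set (arr b) \<and> sub SC k0 k}"
      using trans k0 unfolding AR_def by blast
    have "Sup {val r |k r. (k,r) \<in> set (arr b) \<and> sub SC k0 k}
       \<le> Sup {val r |k r. (k,r) \<in> set (arr a) \<and> sub SC k0 k}"
    proof (rule Sup_least)
      fix x assume "x \<in> {val r |k r. (k,r) \<in> set (arr b) \<and> sub SC k0 k}"
      then obtain k r where kr: "x = val r" "(k,r) \<in> set (arr b)" "sub SC k0 k" by blast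
      then have "x \<le> Sup {val r |k' r. (k',r) \<in> set (arr a) \<and> sub SC k k'}"
        using trans unfolding AR_def by blast
      also have "\<dots> \<le> Sup {val r |k r. (k,r) \<in> set (arr a) \<and> sub SC k0 k}"
        by (rule Sup_subset_mono) (auto dest: sub.trans[OF kr(3)])
      finally show "x \<le> Sup {val r |k r. (k,r) \<in> set (arr a) \<and> sub SC k0 k}" .
    qed
    then show "val r0 \<le> Sup {val r |k r. (k,r) \<in> set (arr a) \<and> sub SC k0 k}"
      using 1 by (rule order_trans[rotated])
  qed
next
  case (interL s a b)
  then show ?case unfolding AR_def using AR_refl_aux[of a "arr (TInter a b)"] by simp
next
  case (interR s a b)
  then show ?case unfolding AR_def using AR_refl_aux[of b "arr (TInter a b)"] by simp
next
  case (top s a)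
  then show ?case by (simp add: AR_def)
next
  case (glb s a b c)
  then show ?case by (auto simp: AR_def)
next
  case (RD a b)
  then have w: "wff SR a" "wff SR b" using sub_wf by blast+
  have v: "val b \<le> val a" using RD sub_SR_val by blast
  show ?case unfolding AR_def
  proof (intro allI impI)
    fix k0 r0 assume k0: "(k0, r0) \<in> set (arr b)"
    then have "k0 = TOm" "val r0 \<le> val b" using arr_SR w by blast+
    from \<open>val r0 \<le> val b\<close> v have "val r0 \<le> val a" by (rule order_trans)
    also have "val a \<le> Sup {val r |k r. (k,r) \<in> set (arr a) \<and> sub SC TOm k}"
      by (rule arr_SR_sup[OF w(1)])
    finally show "val r0 \<le> Sup {val r |k r. (k,r) \<in> set (arr a) \<and> sub SC k0 k}"
      using \<open>k0 = TOm\<close> by simp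
  qed
next
  case om_arr
  then show ?case by (simp add: AR_def)
next
  case (psi_arr1 a)
  then show ?case unfolding AR_def by (auto intro!: Sup_upper)
next
  case (psi_arr2 a)
  then show ?case unfolding AR_def by (auto intro!: Sup_upper)
next
  case (arr_inter k r1 r2)
  then have kk: "sub SC k k" using sub.refl by fastforce
  show ?case unfolding AR_def
    using SupI[of k r1 "arr (TInter (TArr k r1) (TArr k r2))" k, OF _ kk]
      SupI[of k r2 "arr (TInter (TArr k r1) (TArr k r2))" k, OF _ kk]
    by simp
next
  case (arr_mono k' k r r')
  have "val r' \<le> val r" using arr_mono sub_SR_val by blast
  moreover have "val r \<le> Sup {val r0 |k0 r0. (k0,r0) \<in> set (arr (TArr k r)) \<and> sub SC k' k0}"
    using SupI[of k r "arr (TArr k r)" k'] arr_mono(1) by simp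
  ultimately show ?case unfolding AR_def by simp
qed auto

definition PR :: "'a::complete_lattice ity \<Rightarrow> 'a ity \<Rightarrow> bool" where
  "PR s t \<longleftrightarrow> (\<forall>d k. (d,k) \<in> set (prods t) \<longrightarrow>
      sub SD (meet (map fst (prods s))) d \<and> sub SC (meet (map snd (prods s))) k)"

lemma prods_fst_wf: "wff SC s \<Longrightarrow> \<forall>x\<in>set (map fst (prods s)). wff SD x"
  using prods_wf by fastforce
lemma prods_snd_wf: "wff SC s \<Longrightarrow> \<forall>x\<in>set (map snd (prods s)). wff SC x"
  using prods_wf by fastforce

lemma PR_mem: "\<forall>x\<in>set (map fst l). wff SD x \<Longrightarrow> \<forall>x\<in>set (map snd l). wff SC x \<Longrightarrow> (d,k) \<in> set l \<Longrightarrow>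
   sub SD (meet (map fst l)) d \<and> sub SC (meet (map snd l)) k"
proof -
  assume a: "\<forall>x\<in>set (map fst l). wff SD x" "\<forall>x\<in>set (map snd l). wff SC x" "(d,k) \<in> set l"
  have m1: "d \<in> set (map fst l)" using a(3) by (metis fst_conv image_eqI set_map)
  have m2: "k \<in> set (map snd l)" using a(3) by (metis snd_conv image_eqI set_map)
  show ?thesis using meet_le[OF a(1) m1] meet_le[OF a(2) m2] by blast
qed

lemma sub_PR: "sub s a b \<Longrightarrow> s = SC \<Longrightarrow> PR a b"
proof (induction rule: sub.induct)
  case (refl s a)
  then have "wff SC a" by simp
  then show ?case unfolding PR_def using PR_mem[OF prods_fst_wf prods_snd_wf] by blast
next
  case (trans s a b c)
  then have w: "wff SC a" using sub_wf by blast
  have 1: "sub SD (meet (map fst (prods a))) (meet (map fst (prods b)))"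
  proof (rule meet_glb)
    show "wff SD (meet (map fst (prods a)))" using w prods_fst_wf meet_wf by blast
    show "\<forall>x\<in>set (map fst (prods b)). sub SD (meet (map fst (prods a))) x"
    proof
      fix x assume "x \<in> set (map fst (prods b))"
      then obtain k where "(x,k) \<in> set (prods b)" by auto
      then show "sub SD (meet (map fst (prods a))) x" using trans(3,5) unfolding PR_def by blast
    qed
  qed
  have 2: "sub SC (meet (map snd (prods a))) (meet (map snd (prods b)))"
  proof (rule meet_glb)
    show "wff SC (meet (map snd (prods a)))" using w prods_snd_wf meet_wf by blast
    show "\<forall>x\<in>set (map snd (prods b)). sub SC (meet (map snd (prods a))) x"
    proof
      fix x assume "x \<in> set (map snd (prods b))"
      then obtain d where "(d,x) \<in> set (prods b)" by auto
      then show "sub SC (meet (map snd (prods a))) x" using trans(3,5) unfolding PR_def by blast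
    qed
  qed
  show ?case unfolding PR_def
  proof (intro allI impI)
    fix d k assume "(d, k) \<in> set (prods c)"
    then have "sub SD (meet (map fst (prods b))) d \<and> sub SC (meet (map snd (prods b))) k"
      using trans unfolding PR_def by blast
    then show "sub SD (meet (map fst (prods a))) d \<and> sub SC (meet (map snd (prods a))) k"
      using 1 2 sub.trans by blast
  qed
next
  case (interL s a b)
  then have w: "wff SC (TInter a b)" by simp
  show ?case unfolding PR_def
  proof (intro allI impI)
    fix d k assume "(d,k) \<in> set (prods a)"
    then have "(d,k) \<in> set (prods (TInter a b))" by simp
    then show "sub SD (meet (map fst (prods (TInter a b)))) d \<and> sub SC (meet (map snd (prods (TInter a b)))) k"
      using PR_mem[OF prods_fst_wf[OF w] prods_snd_wf[OF w]] by blast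
  qed
next
  case (interR s a b)
  then have w: "wff SC (TInter a b)" by simp
  show ?case unfolding PR_def
  proof (intro allI impI)
    fix d k assume "(d,k) \<in> set (prods b)"
    then have "(d,k) \<in> set (prods (TInter a b))" by simp
    then show "sub SD (meet (map fst (prods (TInter a b)))) d \<and> sub SC (meet (map snd (prods (TInter a b)))) k"
      using PR_mem[OF prods_fst_wf[OF w] prods_snd_wf[OF w]] by blast
  qed
next
  case (top s a)
  then show ?case by (simp add: PR_def)
next
  case (glb s a b c)
  then show ?case by (auto simp: PR_def)
next
  case om_prod
  then show ?case by (auto simp: PR_def)
next
  case (prod_inter d1 d2 k1 k2)
  have a: "sub SD (meet [d1, d2]) d1" "sub SD (meet [d1, d2]) d2"
    using prod_inter by (rule_tac meet_le; simp)+
  have b: "sub SC (meet [k1, k2]) k1" "sub SC (meet [k1, k2]) k2"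
    using prod_inter by (rule_tac meet_le; simp)+
  show ?case unfolding PR_def using sub.glb[OF a] sub.glb[OF b] by simp
next
  case (prod_mono d d' k k')
  then have "wff SD d" "wff SC k" using sub_wf by blast+
  then have "sub SD (meet [d]) d" "sub SC (meet [k]) k" by (rule_tac meet_le; simp)+
  then show ?case unfolding PR_def using prod_mono sub.trans[of SD "meet [d]" d d'] sub.trans[of SC "meet [k]" k k'] by simp
qed auto



definition closedP :: "('a::complete_lattice ity \<Rightarrow> 'a ity \<Rightarrow> bool) \<Rightarrow> bool" where
 "closedP P \<longleftrightarrow> (\<forall>k. wff SC k \<longrightarrow> P k TOm) \<and>
   (\<forall>k r1 r2. wff SC k \<longrightarrow> wff SR r1 \<longrightarrow> wff SR r2 \<longrightarrow> P k r1 \<longrightarrow> P k r2 \<longrightarrow> P k (TInter r1 r2)) \<and>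
   (\<forall>k r k' r'. P k r \<longrightarrow> wff SC k \<longrightarrow> wff SR r \<longrightarrow> sub SC k' k \<longrightarrow> sub SR r r' \<longrightarrow> P k' r')"

lemma closedPI:
  assumes "\<And>k. wff SC k \<Longrightarrow> P k TOm"
    and "\<And>k r1 r2. wff SC k \<Longrightarrow> wff SR r1 \<Longrightarrow> wff SR r2 \<Longrightarrow> P k r1 \<Longrightarrow> P k r2 \<Longrightarrow> P k (TInter r1 r2)"
    and "\<And>k r k' r'. P k r \<Longrightarrow> wff SC k \<Longrightarrow> wff SR r \<Longrightarrow> sub SC k' k \<Longrightarrow> sub SR r r' \<Longrightarrow> P k' r'"
  shows "closedP P"
  using assms unfolding closedP_def by blast

lemma cP_om: "closedP P \<Longrightarrow> wff SC k \<Longrightarrow> P k TOm"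
  unfolding closedP_def by blast
lemma cP_meet: "closedP P \<Longrightarrow> wff SC k \<Longrightarrow> wff SR r1 \<Longrightarrow> wff SR r2 \<Longrightarrow> P k r1 \<Longrightarrow> P k r2 \<Longrightarrow> P k (TInter r1 r2)"
  unfolding closedP_def by blast
lemma cP_mono: "closedP P \<Longrightarrow> P k r \<Longrightarrow> wff SC k \<Longrightarrow> wff SR r \<Longrightarrow> sub SC k' k \<Longrightarrow> sub SR r r' \<Longrightarrow> P k' r'"
  unfolding closedP_def by blast

lemma closure_list:
  assumes cP: "closedP P" and k: "wff SC k"
  shows "set l \<subseteq> {x. wff SC (fst x) \<and> wff SR (snd x) \<and> P (fst x) (snd x) \<and> sub SC k (fst x)} \<Longrightarrow>
    P k (meet (map snd l)) \<and> wff SR (meet (map snd l)) \<and> val (meet (map snd l)) = Sup ((val \<circ> snd) ` set l)"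
proof (induction l)
  case Nil then show ?case using cP_om[OF cP k] by simp
next
  case (Cons x l)
  obtain k1 r1 where x: "x = (k1, r1)" by (cases x)
  from Cons.prems x have h: "wff SC k1" "wff SR r1" "P k1 r1" "sub SC k k1" by auto
  from Cons have IH: "P k (meet (map snd l))" "wff SR (meet (map snd l))"
     "val (meet (map snd l)) = Sup ((val \<circ> snd) ` set l)" by auto
  have rr: "sub SR r1 r1" using h(2) by (rule sub.refl[simplified])
  have "P k r1" using cP_mono[OF cP h(3) h(1) h(2) h(4) rr] .
  then have "P k (TInter r1 (meet (map snd l)))" using cP_meet[OF cP k h(2) IH(2) _ IH(1)] by blast
  then show ?case using x h IH by simp
qed

lemma closure:
  assumes cP: "closedP P" and s: "sub SD s (TArr k r)" and all: "\<forall>(k',r')\<in>set (arr s). P k' r'"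
  shows "P k r"
proof -
  have ws: "wff SD s" and wk: "wff SC k" and wr: "wff SR r" using sub_wf[OF s] by auto
  have A: "val r \<le> Sup {val r' |k' r'. (k',r') \<in> set (arr s) \<and> sub SC k k'}"
    using sub_AR[OF s] unfolding AR_def by simp
  define l where "l = filter (\<lambda>x. sub SC k (fst x)) (arr s)"
  have "set l \<subseteq> {x. wff SC (fst x) \<and> wff SR (snd x) \<and> P (fst x) (snd x) \<and> sub SC k (fst x)}"
    unfolding l_def using arr_wf[OF ws] all by auto
  note C = closure_list[OF cP wk this]
  have "{val r' |k' r'. (k',r') \<in> set (arr s) \<and> sub SC k k'} = (val \<circ> snd) ` set l"
    unfolding l_def by force
  then have "val r \<le> val (meet (map snd l))" using A C by simp
  then have "sub SR (meet (map snd l)) r" using SR_complete C wr by blast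
  moreover have "sub SC k k" using wk by (rule sub.refl[simplified])
  ultimately show ?thesis using cP_mono[OF cP _ wk] C by blast
qed

lemma arr_le: "wff SD t \<Longrightarrow> (k,r) \<in> set (arr t) \<Longrightarrow> sub SD t (TArr k r)"
proof (induction t)
  case (TPsi x)
  then show ?case by (auto intro: sub.psi_arr1)
next
  case (TInter t1 t2)
  show ?case
  proof (cases "(k,r) \<in> set (arr t1)")
    case True
    then have "sub SD t1 (TArr k r)" using TInter by simp
    moreover have "sub SD (TInter t1 t2) t1" using TInter by (auto intro: sub.interL)
    ultimately show ?thesis using sub.trans by blast
  next
    case False
    then have "sub SD t2 (TArr k r)" using TInter by simp
    moreover have "sub SD (TInter t1 t2) t2" using TInter by (auto intro: sub.interR)
    ultimately show ?thesis using sub.trans by blast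
  qed
next
  case (TArr t1 t2)
  then show ?case by (auto intro: sub.refl)
qed auto

lemma gen_sub: "closedP P \<Longrightarrow> sub SD s t \<Longrightarrow> \<forall>(k,r)\<in>set (arr s). P k r \<Longrightarrow> \<forall>(k,r)\<in>set (arr t). P k r"
proof (clarify)
  fix k r assume a: "closedP P" "sub SD s t" "\<forall>(k,r)\<in>set (arr s). P k r" "(k, r) \<in> set (arr t)"
  then have "wff SD t" using sub_wf by blast
  then have "sub SD t (TArr k r)" using arr_le a(4) by blast
  then have "sub SD s (TArr k r)" using a(2) sub.trans by blast
  then show "P k r" using closure a by blast
qed

definition arrl :: "'a ity \<Rightarrow> 'a ity list" where
  "arrl t = map (\<lambda>(k,r). TArr k r) (arr t)"

lemma arrl_wf: "wff SD t \<Longrightarrow> \<forall>x\<in>set (arrl t). wff SD x"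
  unfolding arrl_def using arr_wf by fastforce

lemma meetA_le: "wff SD t \<Longrightarrow> sub SD (meet (arrl t)) t"
proof (induction t)
  case (TPsi x)
  have "sub SD (TInter (TArr TOm (TPsi x)) TOm) (TArr TOm (TPsi x))"
    using TPsi by (auto intro: sub.interL)
  moreover have "sub SD (TArr TOm (TPsi x)) (TPsi x)" using TPsi by (auto intro: sub.psi_arr2)
  ultimately show ?case unfolding arrl_def using sub.trans by fastforce
next
  case TOm
  then show ?case by (simp add: arrl_def)
next
  case (TInter t1 t2)
  have w: "\<forall>x\<in>set (arrl (TInter t1 t2)). wff SD x" using TInter.prems by (rule arrl_wf)
  have "sub SD (meet (arrl (TInter t1 t2))) (meet (arrl t1))"
    by (rule meet_subset[OF w]) (auto simp: arrl_def)
  then have 1: "sub SD (meet (arrl (TInter t1 t2))) t1" using TInter sub.trans by fastforce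
  have "sub SD (meet (arrl (TInter t1 t2))) (meet (arrl t2))"
    by (rule meet_subset[OF w]) (auto simp: arrl_def)
  then have 2: "sub SD (meet (arrl (TInter t1 t2))) t2" using TInter sub.trans by fastforce
  show ?case using 1 2 by (rule sub.glb)
next
  case (TArr t1 t2)
  then show ?case by (auto simp: arrl_def intro: sub.interL)
qed auto

definition wfG :: "(nat \<Rightarrow> 'a::complete_lattice ity) \<Rightarrow> bool" where "wfG G \<longleftrightarrow> (\<forall>x. wff SD (G x))"
definition wfD :: "(nat \<Rightarrow> 'a::complete_lattice ity) \<Rightarrow> bool" where "wfD D \<longleftrightarrow> (\<forall>x. wff SC (D x))"

lemma extend_simps[simp]: "extend d G 0 = d" "extend d G (Suc j) = G j"
  by (auto simp: extend_def)

lemma wfG_extend: "wfG G \<Longrightarrow> wff SD d \<Longrightarrow> wfG (extend d G)"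
  unfolding wfG_def extend_def by (auto split: nat.split)
lemma wfD_extend: "wfD G \<Longrightarrow> wff SC d \<Longrightarrow> wfD (extend d G)"
  unfolding wfD_def extend_def by (auto split: nat.split)

lemma has_type_wf:
  "has_type G M s D \<Longrightarrow> wfG G \<Longrightarrow> wfD D \<Longrightarrow> wff SD s"
  "cmd_type G C s' D \<Longrightarrow> wfG G \<Longrightarrow> wfD D \<Longrightarrow> wff SC s'"
proof (induction rule: has_type_cmd_type.inducts)
  case (Ax G x D) then show ?case by (simp add: wfG_def)
next
  case (Abs \<delta> G M \<kappa> \<rho> D) then show ?case using wfG_extend by fastforce
next
  case (Cmd G M \<delta> D a) then show ?case by (simp add: wfD_def)
next
  case (Mu G C \<kappa>' \<rho> \<kappa> D) then show ?case using wfD_extend by fastforce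
next
  case (Sub G M \<sigma> D \<tau>) then show ?case using sub_wf by blast
next
  case (CSub G C \<sigma> D \<tau>) then show ?case using sub_wf by blast
qed auto

definition leG :: "(nat \<Rightarrow> 'a::complete_lattice ity) \<Rightarrow> (nat \<Rightarrow> 'a ity) \<Rightarrow> bool" where
  "leG G' G \<longleftrightarrow> (\<forall>x. sub SD (G' x) (G x))"
definition leD :: "(nat \<Rightarrow> 'a::complete_lattice ity) \<Rightarrow> (nat \<Rightarrow> 'a ity) \<Rightarrow> bool" where
  "leD D' D \<longleftrightarrow> (\<forall>x. sub SC (D' x) (D x))"

lemma leG_wf: "leG G' G \<Longrightarrow> wfG G' \<and> wfG G"
  unfolding leG_def wfG_def using sub_wf by blast
lemma leD_wf: "leD G' G \<Longrightarrow> wfD G' \<and> wfD G"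
  unfolding leD_def wfD_def using sub_wf by blast

lemma leG_refl: "wfG G \<Longrightarrow> leG G G"
  unfolding leG_def wfG_def by (auto intro: sub.refl)
lemma leD_refl: "wfD G \<Longrightarrow> leD G G"
  unfolding leD_def wfD_def by (auto intro: sub.refl)

lemma leG_extend: "leG G' G \<Longrightarrow> sub SD d' d \<Longrightarrow> leG (extend d' G') (extend d G)"
  unfolding leG_def extend_def by (auto split: nat.split)
lemma leD_extend: "leD G' G \<Longrightarrow> sub SC d' d \<Longrightarrow> leD (extend d' G') (extend d G)"
  unfolding leD_def extend_def by (auto split: nat.split)

lemma has_type_mono:
  "has_type G M s D \<Longrightarrow> \<forall>G' D'. leG G' G \<longrightarrow> leD D' D \<longrightarrow> has_type G' M s D'"
  "cmd_type G C s' D \<Longrightarrow> \<forall>G' D'. leG G' G \<longrightarrow> leD D' D \<longrightarrow> cmd_type G' C s' D'"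
proof (induction rule: has_type_cmd_type.inducts)
  case (Ax G x D)
  then show ?case unfolding leG_def using has_type_cmd_type.Ax has_type_cmd_type.Sub by blast
next
  case (Abs \<delta> G M \<kappa> \<rho> D)
  have "sub SD \<delta> \<delta>" using Abs by (auto intro: sub.refl)
  then show ?case using Abs leG_extend has_type_cmd_type.Abs by blast
next
  case (App G M \<delta> \<kappa> \<rho> D N)
  then show ?case using has_type_cmd_type.App by blast
next
  case (Cmd G M \<delta> D a)
  show ?case
  proof (intro allI impI)
    fix G' D' assume l: "leG G' G" "leD D' D"
    then have "wff SD \<delta>" using Cmd has_type_wf leG_wf leD_wf by blast
    then have "sub SD \<delta> \<delta>" by (rule sub.refl[simplified])
    moreover have "sub SC (D' a) (D a)" using l unfolding leD_def by blast
    ultimately have "sub SC (TProd \<delta> (D' a)) (TProd \<delta> (D a))" by (rule sub.prod_mono)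
    moreover have "cmd_type G' (Cmd a M) (TProd \<delta> (D' a)) D'" using Cmd l has_type_cmd_type.Cmd by blast
    ultimately show "cmd_type G' (Cmd a M) (TProd \<delta> (D a)) D'" using has_type_cmd_type.CSub by blast
  qed
next
  case (Mu G C \<kappa>' \<rho> \<kappa> D)
  have "sub SC \<kappa> \<kappa>" using Mu by (auto intro: sub.refl)
  then show ?case using Mu leD_extend has_type_cmd_type.Mu by blast
next
  case (Inter G M \<sigma> D \<tau>)
  then show ?case using has_type_cmd_type.Inter by blast
next
  case (Om G M D)
  then show ?case using has_type_cmd_type.Om by blast
next
  case (Sub G M \<sigma> D \<tau>)
  then show ?case using has_type_cmd_type.Sub by blast
next
  case (CInter G C \<sigma> D \<tau>)
  then show ?case using has_type_cmd_type.CInter by blast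
next
  case (COm G C D)
  then show ?case using has_type_cmd_type.COm by blast
next
  case (CSub G C \<sigma> D \<tau>)
  then show ?case using has_type_cmd_type.CSub by blast
qed

lemma typing_arrl: "wff SD t \<Longrightarrow> \<forall>(k,r)\<in>set (arr t). has_type G M (TArr k r) D \<Longrightarrow> has_type G M t D"
proof -
  assume a: "wff SD t" "\<forall>(k,r)\<in>set (arr t). has_type G M (TArr k r) D"
  have "\<forall>x\<in>set l. has_type G M x D \<Longrightarrow> has_type G M (meet l) D" for l
    by (induction l) (auto intro: has_type_cmd_type.Om has_type_cmd_type.Inter)
  moreover have "\<forall>x\<in>set (arrl t). has_type G M x D" using a(2) unfolding arrl_def by auto
  ultimately have "has_type G M (meet (arrl t)) D" by blast
  then show ?thesis using meetA_le[OF a(1)] has_type_cmd_type.Sub by blast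
qed

lemma typing_arr: "has_type G M t D \<Longrightarrow> wfG G \<Longrightarrow> wfD D \<Longrightarrow> (k,r) \<in> set (arr t) \<Longrightarrow> has_type G M (TArr k r) D"
  using has_type_wf arr_le has_type_cmd_type.Sub by blast



definition ins :: "nat \<Rightarrow> 'b \<Rightarrow> (nat \<Rightarrow> 'b) \<Rightarrow> nat \<Rightarrow> 'b" where
  "ins k d G = (\<lambda>i. if i < k then G i else if i = k then d else G (i - 1))"

lemma extend_ins0: "extend d G = ins 0 d G"
  by (rule ext) (auto simp: extend_def ins_def split: nat.split)

lemma extend_ins_Suc: "extend e (ins k d G) = ins (Suc k) d (extend e G)"
  by (rule ext) (auto simp: extend_def ins_def split: nat.split)

lemma Abs': "has_type (extend \<delta> G) M (TArr \<kappa> \<rho>) D \<Longrightarrow> wff SD \<delta> \<Longrightarrow>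
        has_type G (Lam M) (TArr (TProd \<delta> \<kappa>) \<rho>) D"
  using has_type_cmd_type.Abs by simp
lemma Mu': "cmd_type G C (TProd (TArr \<kappa>' \<rho>) \<kappa>') (extend \<kappa> D) \<Longrightarrow> wff SC \<kappa> \<Longrightarrow>
        has_type G (Mu C) (TArr \<kappa> \<rho>) D"
  using has_type_cmd_type.Mu by simp

lemma Ax': "G x = t \<Longrightarrow> has_type G (Var x) t D"
  using has_type_cmd_type.Ax by metis

lemma Cmd': "D a = t \<Longrightarrow> has_type G M d D \<Longrightarrow> cmd_type G (Cmd a M) (TProd d t) D"
  using has_type_cmd_type.Cmd by metis

lemma liftV_typing:
  "has_type G M s D \<Longrightarrow> \<forall>k d. has_type (ins k d G) (liftV k M) s D"
  "cmd_type G C s' D \<Longrightarrow> \<forall>k d. cmd_type (ins k d G) (liftVc k C) s' D"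
proof (induction rule: has_type_cmd_type.inducts)
  case (Ax G x D)
  then show ?case by (auto intro!: Ax' simp: ins_def)
next
  case (Abs \<delta> G M \<kappa> \<rho> D)
  show ?case
  proof (intro allI)
    fix k d
    have "has_type (ins (Suc k) d (extend \<delta> G)) (liftV (Suc k) M) (TArr \<kappa> \<rho>) D" using Abs.IH by blast
    then have "has_type (extend \<delta> (ins k d G)) (liftV (Suc k) M) (TArr \<kappa> \<rho>) D" by (simp add: extend_ins_Suc)
    then have "has_type (ins k d G) (Lam (liftV (Suc k) M)) (TArr (TProd \<delta> \<kappa>) \<rho>) D" using Abs.hyps(2) by (rule has_type_cmd_type.Abs)
    then show "has_type (ins k d G) (liftV k (Lam M)) (TArr (TProd \<delta> \<kappa>) \<rho>) D" by simp
  qed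
next
  case (App G M \<delta> \<kappa> \<rho> D N)
  show ?case
  proof (intro allI)
    fix k d
    have "has_type (ins k d G) (liftV k M) (TArr (TProd \<delta> \<kappa>) \<rho>) D" using App.IH(1) by blast
    moreover have "has_type (ins k d G) (liftV k N) \<delta> D" using App.IH(2) by blast
    ultimately have "has_type (ins k d G) (App (liftV k M) (liftV k N)) (TArr \<kappa> \<rho>) D" by (rule has_type_cmd_type.App)
    then show "has_type (ins k d G) (liftV k (App M N)) (TArr \<kappa> \<rho>) D" by simp
  qed
next
  case (Cmd G M \<delta> D a)
  show ?case
  proof (intro allI)
    fix k d
    have "has_type (ins k d G) (liftV k M) \<delta> D" using Cmd.IH by blast
    then have "cmd_type (ins k d G) (Cmd a (liftV k M)) (TProd \<delta> (D a)) D" by (rule has_type_cmd_type.Cmd)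
    then show "cmd_type (ins k d G) (liftVc k (Cmd a M)) (TProd \<delta> (D a)) D" by simp
  qed
next
  case (Mu G C \<kappa>' \<rho> \<kappa> D)
  show ?case
  proof (intro allI)
    fix k d
    have "cmd_type (ins k d G) (liftVc k C) (TProd (TArr \<kappa>' \<rho>) \<kappa>') (extend \<kappa> D)" using Mu.IH by blast
    then have "has_type (ins k d G) (Mu (liftVc k C)) (TArr \<kappa> \<rho>) D" using Mu.hyps(2) by (rule has_type_cmd_type.Mu)
    then show "has_type (ins k d G) (liftV k (Mu C)) (TArr \<kappa> \<rho>) D" by simp
  qed
next
  case (Inter G M \<sigma> D \<tau>)
  show ?case
  proof (intro allI)
    fix k d
    have "has_type (ins k d G) (liftV k M) \<sigma> D" using Inter.IH(1) by blast
    moreover have "has_type (ins k d G) (liftV k M) \<tau> D" using Inter.IH(2) by blast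
    ultimately show "has_type (ins k d G) (liftV k M) (TInter \<sigma> \<tau>) D" by (rule has_type_cmd_type.Inter)
  qed
next
  case (Om G M D)
  show ?case by (intro allI) (rule has_type_cmd_type.Om)
next
  case (Sub G M \<sigma> D \<tau>)
  show ?case
  proof (intro allI)
    fix k d
    have "has_type (ins k d G) (liftV k M) \<sigma> D" using Sub.IH by blast
    then show "has_type (ins k d G) (liftV k M) \<tau> D" using Sub.hyps(2) by (rule has_type_cmd_type.Sub)
  qed
next
  case (CInter G C \<sigma> D \<tau>)
  show ?case
  proof (intro allI)
    fix k d
    have "cmd_type (ins k d G) (liftVc k C) \<sigma> D" using CInter.IH(1) by blast
    moreover have "cmd_type (ins k d G) (liftVc k C) \<tau> D" using CInter.IH(2) by blast
    ultimately show "cmd_type (ins k d G) (liftVc k C) (TInter \<sigma> \<tau>) D" by (rule has_type_cmd_type.CInter)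
  qed
next
  case (COm G C D)
  show ?case by (intro allI) (rule has_type_cmd_type.COm)
next
  case (CSub G C \<sigma> D \<tau>)
  show ?case
  proof (intro allI)
    fix k d
    have "cmd_type (ins k d G) (liftVc k C) \<sigma> D" using CSub.IH by blast
    then show "cmd_type (ins k d G) (liftVc k C) \<tau> D" using CSub.hyps(2) by (rule has_type_cmd_type.CSub)
  qed
qed

lemma liftN_typing:
  "has_type G M s D \<Longrightarrow> \<forall>k d. has_type G (liftN k M) s (ins k d D)"
  "cmd_type G C s' D \<Longrightarrow> \<forall>k d. cmd_type G (liftNc k C) s' (ins k d D)"
proof (induction rule: has_type_cmd_type.inducts)
  case (Ax G x D)
  then show ?case by (auto intro: has_type_cmd_type.Ax)
next
  case (Abs \<delta> G M \<kappa> \<rho> D)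
  show ?case
  proof (intro allI)
    fix k d
    have "has_type (extend \<delta> G) (liftN k M) (TArr \<kappa> \<rho>) (ins k d D)" using Abs.IH by blast
    then have "has_type G (Lam (liftN k M)) (TArr (TProd \<delta> \<kappa>) \<rho>) (ins k d D)" using Abs.hyps(2) by (rule has_type_cmd_type.Abs)
    then show "has_type G (liftN k (Lam M)) (TArr (TProd \<delta> \<kappa>) \<rho>) (ins k d D)" by simp
  qed
next
  case (App G M \<delta> \<kappa> \<rho> D N)
  show ?case
  proof (intro allI)
    fix k d
    have "has_type G (liftN k M) (TArr (TProd \<delta> \<kappa>) \<rho>) (ins k d D)" using App.IH(1) by blast
    moreover have "has_type G (liftN k N) \<delta> (ins k d D)" using App.IH(2) by blast
    ultimately have "has_type G (App (liftN k M) (liftN k N)) (TArr \<kappa> \<rho>) (ins k d D)" by (rule has_type_cmd_type.App)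
    then show "has_type G (liftN k (App M N)) (TArr \<kappa> \<rho>) (ins k d D)" by simp
  qed
next
  case (Cmd G M \<delta> D a)
  show ?case
  proof (intro allI)
    fix k d
    have "has_type G (liftN k M) \<delta> (ins k d D)" using Cmd.IH by blast
    moreover have "ins k d D (if a < k then a else Suc a) = D a" by (simp add: ins_def)
    ultimately have "cmd_type G (Cmd (if a < k then a else Suc a) (liftN k M)) (TProd \<delta> (D a)) (ins k d D)"
      by (intro Cmd')
    then show "cmd_type G (liftNc k (Cmd a M)) (TProd \<delta> (D a)) (ins k d D)" by simp
  qed
next
  case (Mu G C \<kappa>' \<rho> \<kappa> D)
  show ?case
  proof (intro allI)
    fix k d
    have "cmd_type G (liftNc (Suc k) C) (TProd (TArr \<kappa>' \<rho>) \<kappa>') (ins (Suc k) d (extend \<kappa> D))" using Mu.IH by blast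
    then have "cmd_type G (liftNc (Suc k) C) (TProd (TArr \<kappa>' \<rho>) \<kappa>') (extend \<kappa> (ins k d D))" by (simp add: extend_ins_Suc)
    then have "has_type G (Mu (liftNc (Suc k) C)) (TArr \<kappa> \<rho>) (ins k d D)" using Mu.hyps(2) by (rule has_type_cmd_type.Mu)
    then show "has_type G (liftN k (Mu C)) (TArr \<kappa> \<rho>) (ins k d D)" by simp
  qed
next
  case (Inter G M \<sigma> D \<tau>)
  show ?case
  proof (intro allI)
    fix k d
    have "has_type G (liftN k M) \<sigma> (ins k d D)" using Inter.IH(1) by blast
    moreover have "has_type G (liftN k M) \<tau> (ins k d D)" using Inter.IH(2) by blast
    ultimately show "has_type G (liftN k M) (TInter \<sigma> \<tau>) (ins k d D)" by (rule has_type_cmd_type.Inter)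
  qed
next
  case (Om G M D)
  show ?case by (intro allI) (rule has_type_cmd_type.Om)
next
  case (Sub G M \<sigma> D \<tau>)
  show ?case
  proof (intro allI)
    fix k d
    have "has_type G (liftN k M) \<sigma> (ins k d D)" using Sub.IH by blast
    then show "has_type G (liftN k M) \<tau> (ins k d D)" using Sub.hyps(2) by (rule has_type_cmd_type.Sub)
  qed
next
  case (CInter G C \<sigma> D \<tau>)
  show ?case
  proof (intro allI)
    fix k d
    have "cmd_type G (liftNc k C) \<sigma> (ins k d D)" using CInter.IH(1) by blast
    moreover have "cmd_type G (liftNc k C) \<tau> (ins k d D)" using CInter.IH(2) by blast
    ultimately show "cmd_type G (liftNc k C) (TInter \<sigma> \<tau>) (ins k d D)" by (rule has_type_cmd_type.CInter)
  qed
next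
  case (COm G C D)
  show ?case by (intro allI) (rule has_type_cmd_type.COm)
next
  case (CSub G C \<sigma> D \<tau>)
  show ?case
  proof (intro allI)
    fix k d
    have "cmd_type G (liftNc k C) \<sigma> (ins k d D)" using CSub.IH by blast
    then show "cmd_type G (liftNc k C) \<tau> (ins k d D)" using CSub.hyps(2) by (rule has_type_cmd_type.CSub)
  qed
qed

lemma liftV_inv:
  "Var x = liftV k M \<longleftrightarrow> (\<exists>y. M = Var y \<and> x = (if y < k then y else Suc y))"
  "Lam T = liftV k M \<longleftrightarrow> (\<exists>M0. M = Lam M0 \<and> T = liftV (Suc k) M0)"
  "App T1 T2 = liftV k M \<longleftrightarrow> (\<exists>M1 M2. M = App M1 M2 \<and> T1 = liftV k M1 \<and> T2 = liftV k M2)"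
  "Mu C = liftV k M \<longleftrightarrow> (\<exists>C0. M = Mu C0 \<and> C = liftVc k C0)"
  "Cmd a T = liftVc k C' \<longleftrightarrow> (\<exists>M0. C' = Cmd a M0 \<and> T = liftV k M0)"
  subgoal by (cases M) auto
  subgoal by (cases M) auto
  subgoal by (cases M) auto
  subgoal by (cases M) auto
  subgoal by (cases C') auto
  done

lemma liftN_inv:
  "Var x = liftN k M \<longleftrightarrow> M = Var x"
  "Lam T = liftN k M \<longleftrightarrow> (\<exists>M0. M = Lam M0 \<and> T = liftN k M0)"
  "App T1 T2 = liftN k M \<longleftrightarrow> (\<exists>M1 M2. M = App M1 M2 \<and> T1 = liftN k M1 \<and> T2 = liftN k M2)"
  "Mu C = liftN k M \<longleftrightarrow> (\<exists>C0. M = Mu C0 \<and> C = liftNc (Suc k) C0)"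
  "Cmd a T = liftNc k C' \<longleftrightarrow> (\<exists>b M0. C' = Cmd b M0 \<and> a = (if b < k then b else Suc b) \<and> T = liftN k M0)"
  subgoal by (cases M) auto
  subgoal by (cases M) auto
  subgoal by (cases M) auto
  subgoal by (cases M) auto
  subgoal by (cases C') auto
  done

lemma liftV_strength:
  "has_type G' T s D \<Longrightarrow> \<forall>G k d M. G' = ins k d G \<longrightarrow> T = liftV k M \<longrightarrow> has_type G M s D"
  "cmd_type G' C s' D \<Longrightarrow> \<forall>G k d C0. G' = ins k d G \<longrightarrow> C = liftVc k C0 \<longrightarrow> cmd_type G C0 s' D"
proof (induction rule: has_type_cmd_type.inducts)
  case (Ax G x D)
  then show ?case by (auto simp: liftV_inv ins_def intro!: Ax')
next
  case (Abs \<delta> G M \<kappa> \<rho> D)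
  show ?case
  proof (intro allI impI)
    fix G0 k d M0 assume a: "G = ins k d G0" "Lam M = liftV k M0"
    then obtain M1 where m: "M0 = Lam M1" "M = liftV (Suc k) M1" by (metis liftV_inv(2))
    have "extend \<delta> G = ins (Suc k) d (extend \<delta> G0)" using a by (simp add: extend_ins_Suc)
    then have "has_type (extend \<delta> G0) M1 (TArr \<kappa> \<rho>) D" using Abs m by blast
    then show "has_type G0 M0 (TArr (TProd \<delta> \<kappa>) \<rho>) D" using m Abs(2) has_type_cmd_type.Abs by blast
  qed
next
  case (App G' M \<delta> \<kappa> \<rho> D N)
  show ?case
  proof (intro allI impI)
    fix G k d M0 assume a: "G' = ins k d G" "App M N = liftV k M0"
    then obtain M1 M2 where m: "M0 = App M1 M2" "M = liftV k M1" "N = liftV k M2" by (metis liftV_inv(3))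
    have "has_type G M1 (TArr (TProd \<delta> \<kappa>) \<rho>) D" using App.IH(1) a m by blast
    moreover have "has_type G M2 \<delta> D" using App.IH(2) a m by blast
    ultimately show "has_type G M0 (TArr \<kappa> \<rho>) D" using m has_type_cmd_type.App by blast
  qed
next
  case (Cmd G' M \<delta> D a)
  show ?case
  proof (intro allI impI)
    fix G k d C0 assume a: "G' = ins k d G" "Cmd a M = liftVc k C0"
    then obtain M1 where m: "C0 = Cmd a M1" "M = liftV k M1" by (metis liftV_inv(5))
    have "has_type G M1 \<delta> D" using Cmd.IH a m by blast
    then show "cmd_type G C0 (TProd \<delta> (D a)) D" using m has_type_cmd_type.Cmd by blast
  qed
next
  case (Mu G' C \<kappa>' \<rho> \<kappa> D)
  show ?case
  proof (intro allI impI)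
    fix G k d M0 assume a: "G' = ins k d G" "Mu C = liftV k M0"
    then obtain C0 where m: "M0 = Mu C0" "C = liftVc k C0" by (metis liftV_inv(4))
    have "cmd_type G C0 (TProd (TArr \<kappa>' \<rho>) \<kappa>') (extend \<kappa> D)" using Mu.IH a m by blast
    then show "has_type G M0 (TArr \<kappa> \<rho>) D" using m Mu(2) has_type_cmd_type.Mu by blast
  qed
next
  case Inter then show ?case using has_type_cmd_type.Inter by blast
next
  case Om then show ?case using has_type_cmd_type.Om by blast
next
  case Sub then show ?case using has_type_cmd_type.Sub[OF _ Sub.hyps(2)] by blast
next
  case CInter then show ?case using has_type_cmd_type.CInter by blast
next
  case COm then show ?case using has_type_cmd_type.COm by blast
next
  case CSub then show ?case using has_type_cmd_type.CSub[OF _ CSub.hyps(2)] by blast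
qed

lemma liftN_strength:
  "has_type G T s D' \<Longrightarrow> \<forall>D k d M. D' = ins k d D \<longrightarrow> T = liftN k M \<longrightarrow> has_type G M s D"
  "cmd_type G C s' D' \<Longrightarrow> \<forall>D k d C0. D' = ins k d D \<longrightarrow> C = liftNc k C0 \<longrightarrow> cmd_type G C0 s' D"
proof (induction rule: has_type_cmd_type.inducts)
  case (Ax G x D)
  then show ?case by (auto simp: liftN_inv intro: has_type_cmd_type.Ax)
next
  case (Abs \<delta> G M \<kappa> \<rho> D')
  show ?case
  proof (intro allI impI)
    fix D k d M0 assume a: "D' = ins k d D" "Lam M = liftN k M0"
    then obtain M1 where m: "M0 = Lam M1" "M = liftN k M1" by (metis liftN_inv(2))
    have "has_type (extend \<delta> G) M1 (TArr \<kappa> \<rho>) D" using Abs.IH a m by blast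
    then show "has_type G M0 (TArr (TProd \<delta> \<kappa>) \<rho>) D" using m Abs(2) has_type_cmd_type.Abs by blast
  qed
next
  case (App G M \<delta> \<kappa> \<rho> D' N)
  show ?case
  proof (intro allI impI)
    fix D k d M0 assume a: "D' = ins k d D" "App M N = liftN k M0"
    then obtain M1 M2 where m: "M0 = App M1 M2" "M = liftN k M1" "N = liftN k M2" by (metis liftN_inv(3))
    have "has_type G M1 (TArr (TProd \<delta> \<kappa>) \<rho>) D" using App.IH(1) a m by blast
    moreover have "has_type G M2 \<delta> D" using App.IH(2) a m by blast
    ultimately show "has_type G M0 (TArr \<kappa> \<rho>) D" using m has_type_cmd_type.App by blast
  qed
next
  case (Cmd G M \<delta> D' a)
  show ?case
  proof (intro allI impI)
    fix D k d C0 assume a: "D' = ins k d D" "Cmd a M = liftNc k C0"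
    then obtain b M0 where m: "C0 = Cmd b M0" "a = (if b < k then b else Suc b)" "M = liftN k M0"
      by (metis liftN_inv(5))
    have "has_type G M0 \<delta> D" using Cmd a m by blast
    moreover have "D' a = D b" using a m by (auto simp: ins_def)
    ultimately show "cmd_type G C0 (TProd \<delta> (D' a)) D" using m by (auto intro: Cmd')
  qed
next
  case (Mu G C \<kappa>' \<rho> \<kappa> D')
  show ?case
  proof (intro allI impI)
    fix D k d M0 assume a: "D' = ins k d D" "Mu C = liftN k M0"
    then obtain C0 where m: "M0 = Mu C0" "C = liftNc (Suc k) C0" by (metis liftN_inv(4))
    have "extend \<kappa> D' = ins (Suc k) d (extend \<kappa> D)" using a by (simp add: extend_ins_Suc)
    then have "cmd_type G C0 (TProd (TArr \<kappa>' \<rho>) \<kappa>') (extend \<kappa> D)" using Mu m by blast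
    then show "has_type G M0 (TArr \<kappa> \<rho>) D" using m Mu(2) has_type_cmd_type.Mu by blast
  qed
next
  case Inter then show ?case using has_type_cmd_type.Inter by blast
next
  case Om then show ?case using has_type_cmd_type.Om by blast
next
  case Sub then show ?case using has_type_cmd_type.Sub[OF _ Sub.hyps(2)] by blast
next
  case CInter then show ?case using has_type_cmd_type.CInter by blast
next
  case COm then show ?case using has_type_cmd_type.COm by blast
next
  case CSub then show ?case using has_type_cmd_type.CSub[OF _ CSub.hyps(2)] by blast
qed

lemma subst_typing:
  "has_type G' M s D \<Longrightarrow> \<forall>G k \<delta> N. G' = ins k \<delta> G \<longrightarrow> has_type G N \<delta> D \<longrightarrow> has_type G (substV M k N) s D"
  "cmd_type G' C s' D \<Longrightarrow> \<forall>G k \<delta> N. G' = ins k \<delta> G \<longrightarrow> has_type G N \<delta> D \<longrightarrow> cmd_type G (substVc C k N) s' D"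
proof (induction rule: has_type_cmd_type.inducts)
  case (Ax G x D)
  then show ?case by (auto simp: ins_def intro!: Ax')
next
  case (Abs \<delta> G' M \<kappa> \<rho> D)
  show ?case
  proof (intro allI impI)
    fix G k \<delta>' N assume a: "G' = ins k \<delta>' G" "has_type G N \<delta>' D"
    have "has_type (extend \<delta> G) (liftV 0 N) \<delta>' D" using liftV_typing(1)[OF a(2)] by (simp add: extend_ins0)
    moreover have "extend \<delta> G' = ins (Suc k) \<delta>' (extend \<delta> G)" using a by (simp add: extend_ins_Suc)
    ultimately have "has_type (extend \<delta> G) (substV M (Suc k) (liftV 0 N)) (TArr \<kappa> \<rho>) D"
      using Abs by blast
    then show "has_type G (substV (Lam M) k N) (TArr (TProd \<delta> \<kappa>) \<rho>) D"
      using Abs(2) by (auto intro: Abs')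
  qed
next
  case (Mu G' C \<kappa>' \<rho> \<kappa> D)
  show ?case
  proof (intro allI impI)
    fix G k \<delta>' N assume a: "G' = ins k \<delta>' G" "has_type G N \<delta>' D"
    have "has_type G (liftN 0 N) \<delta>' (extend \<kappa> D)" using liftN_typing(1)[OF a(2)] by (simp add: extend_ins0)
    then have "cmd_type G (substVc C k (liftN 0 N)) (TProd (TArr \<kappa>' \<rho>) \<kappa>') (extend \<kappa> D)"
      using Mu a by blast
    then show "has_type G (substV (Mu C) k N) (TArr \<kappa> \<rho>) D"
      using Mu(2) by (auto intro: Mu')
  qed
next
  case (App G' M \<delta> \<kappa> \<rho> D N0)
  show ?case
  proof (intro allI impI)
    fix G k \<delta>' N assume a: "G' = ins k \<delta>' G" "has_type G N \<delta>' D"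
    have "has_type G (substV M k N) (TArr (TProd \<delta> \<kappa>) \<rho>) D" using App.IH(1) a by blast
    moreover have "has_type G (substV N0 k N) \<delta> D" using App.IH(2) a by blast
    ultimately have "has_type G (App (substV M k N) (substV N0 k N)) (TArr \<kappa> \<rho>) D" by (rule has_type_cmd_type.App)
    then show "has_type G (substV (App M N0) k N) (TArr \<kappa> \<rho>) D" by simp
  qed
next
  case (Cmd G' M \<delta> D a)
  show ?case
  proof (intro allI impI)
    fix G k \<delta>' N assume a: "G' = ins k \<delta>' G" "has_type G N \<delta>' D"
    have "has_type G (substV M k N) \<delta> D" using Cmd.IH a by blast
    then have "cmd_type G (Cmd a (substV M k N)) (TProd \<delta> (D a)) D" by (rule has_type_cmd_type.Cmd)
    then show "cmd_type G (substVc (Cmd a M) k N) (TProd \<delta> (D a)) D" by simp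
  qed
next
  case Inter then show ?case using has_type_cmd_type.Inter by blast
next
  case Om then show ?case using has_type_cmd_type.Om by blast
next
  case Sub then show ?case using has_type_cmd_type.Sub[OF _ Sub.hyps(2)] by blast
next
  case CInter then show ?case using has_type_cmd_type.CInter by blast
next
  case COm then show ?case using has_type_cmd_type.COm by blast
next
  case CSub then show ?case using has_type_cmd_type.CSub[OF _ CSub.hyps(2)] by blast
qed

definition rn :: "nat \<Rightarrow> nat \<Rightarrow> nat \<Rightarrow> nat" where
  "rn k a b = (if b < k then b else if b = k then a else b - 1)"

lemma renNc_Cmd: "renNc (Cmd b M) k a = Cmd (rn k a b) (renN M k a)"
  by (simp add: rn_def)

lemma ins_rn: "ins k (D a) D b = D (rn k a b)"
  by (simp add: ins_def rn_def)

lemma extend_ins_rn: "extend e (ins k (D a) D) = ins (Suc k) (extend e D (Suc a)) (extend e D)"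
  by (simp add: extend_ins_Suc)

lemma ren_typing:
  "has_type G M s D' \<Longrightarrow> \<forall>D k a. D' = ins k (D a) D \<longrightarrow> has_type G (renN M k a) s D"
  "cmd_type G C s' D' \<Longrightarrow> \<forall>D k a. D' = ins k (D a) D \<longrightarrow> cmd_type G (renNc C k a) s' D"
proof (induction rule: has_type_cmd_type.inducts)
  case (Cmd G M \<delta> D' b)
  show ?case
  proof (intro allI impI)
    fix D k a assume a: "D' = ins k (D a) D"
    then have "has_type G (renN M k a) \<delta> D" using Cmd by blast
    then have "cmd_type G (Cmd (rn k a b) (renN M k a)) (TProd \<delta> (D' b)) D" using a by (auto intro!: Cmd' simp: ins_rn)
    then show "cmd_type G (renNc (Cmd b M) k a) (TProd \<delta> (D' b)) D" by (simp only: renNc_Cmd)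
  qed
next
  case (Mu G C \<kappa>' \<rho> \<kappa> D')
  show ?case
  proof (intro allI impI)
    fix D k a assume a: "D' = ins k (D a) D"
    have "extend \<kappa> D' = ins (Suc k) (extend \<kappa> D (Suc a)) (extend \<kappa> D)" using a extend_ins_rn by simp
    then have "cmd_type G (renNc C (Suc k) (Suc a)) (TProd (TArr \<kappa>' \<rho>) \<kappa>') (extend \<kappa> D)" using Mu by blast
    then show "has_type G (renN (Mu C) k a) (TArr \<kappa> \<rho>) D" using Mu(2) by (auto intro: Mu')
  qed
next
  case Ax then show ?case by (simp add: has_type_cmd_type.Ax)
next
  case (Abs \<delta> G M \<kappa> \<rho> D')
  show ?case
  proof (intro allI impI)
    fix D k a assume a: "D' = ins k (D a) D"
    have "has_type (extend \<delta> G) (renN M k a) (TArr \<kappa> \<rho>) D" using Abs.IH a by blast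
    then have "has_type G (Lam (renN M k a)) (TArr (TProd \<delta> \<kappa>) \<rho>) D" using Abs.hyps(2) by (rule has_type_cmd_type.Abs)
    then show "has_type G (renN (Lam M) k a) (TArr (TProd \<delta> \<kappa>) \<rho>) D" by simp
  qed
next
  case (App G M \<delta> \<kappa> \<rho> D' N)
  show ?case
  proof (intro allI impI)
    fix D k a assume a: "D' = ins k (D a) D"
    have "has_type G (renN M k a) (TArr (TProd \<delta> \<kappa>) \<rho>) D" using App.IH(1) a by blast
    moreover have "has_type G (renN N k a) \<delta> D" using App.IH(2) a by blast
    ultimately have "has_type G (App (renN M k a) (renN N k a)) (TArr \<kappa> \<rho>) D" by (rule has_type_cmd_type.App)
    then show "has_type G (renN (App M N) k a) (TArr \<kappa> \<rho>) D" by simp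
  qed
next
  case Inter then show ?case using has_type_cmd_type.Inter by blast
next
  case Om then show ?case using has_type_cmd_type.Om by blast
next
  case Sub then show ?case using has_type_cmd_type.Sub[OF _ Sub.hyps(2)] by blast
next
  case CInter then show ?case using has_type_cmd_type.CInter by blast
next
  case COm then show ?case using has_type_cmd_type.COm by blast
next
  case CSub then show ?case using has_type_cmd_type.CSub[OF _ CSub.hyps(2)] by blast
qed

lemma renN_inv:
  "Var x = renN M k a \<longleftrightarrow> M = Var x"
  "Lam T = renN M k a \<longleftrightarrow> (\<exists>M0. M = Lam M0 \<and> T = renN M0 k a)"
  "App T1 T2 = renN M k a \<longleftrightarrow> (\<exists>M1 M2. M = App M1 M2 \<and> T1 = renN M1 k a \<and> T2 = renN M2 k a)"
  "Mu C = renN M k a \<longleftrightarrow> (\<exists>C0. M = Mu C0 \<and> C = renNc C0 (Suc k) (Suc a))"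
  "Cmd b T = renNc C' k a \<longleftrightarrow> (\<exists>b0 M0. C' = Cmd b0 M0 \<and> b = rn k a b0 \<and> T = renN M0 k a)"
  subgoal by (cases M) auto
  subgoal by (cases M) auto
  subgoal by (cases M) auto
  subgoal by (cases M) auto
  subgoal by (cases C') (auto simp: rn_def)
  done

lemma ren_exp:
  "has_type G T s D \<Longrightarrow> \<forall>k a M. T = renN M k a \<longrightarrow> has_type G M s (ins k (D a) D)"
  "cmd_type G C s' D \<Longrightarrow> \<forall>k a C0. C = renNc C0 k a \<longrightarrow> cmd_type G C0 s' (ins k (D a) D)"
proof (induction rule: has_type_cmd_type.inducts)
  case (Ax G x D)
  then show ?case by (auto simp: renN_inv intro: has_type_cmd_type.Ax)
next
  case (Abs \<delta> G M \<kappa> \<rho> D)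
  then show ?case by (auto simp: renN_inv intro: Abs')
next
  case (App G M \<delta> \<kappa> \<rho> D N)
  show ?case
  proof (intro allI impI)
    fix k a M0 assume a: "App M N = renN M0 k a"
    then obtain M1 M2 where m: "M0 = App M1 M2" "M = renN M1 k a" "N = renN M2 k a" by (metis renN_inv(3))
    have "has_type G M1 (TArr (TProd \<delta> \<kappa>) \<rho>) (ins k (D a) D)" using App.IH(1) a m by blast
    moreover have "has_type G M2 \<delta> (ins k (D a) D)" using App.IH(2) a m by blast
    ultimately show "has_type G M0 (TArr \<kappa> \<rho>) (ins k (D a) D)" using m has_type_cmd_type.App by blast
  qed
next
  case (Cmd G M \<delta> D b)
  show ?case
  proof (intro allI impI)
    fix k a C0 assume "Cmd b M = renNc C0 k a"
    then obtain b0 M0 where m: "C0 = Cmd b0 M0" "b = rn k a b0" "M = renN M0 k a" by (metis renN_inv(5))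
    then have "has_type G M0 \<delta> (ins k (D a) D)" using Cmd by blast
    then show "cmd_type G C0 (TProd \<delta> (D b)) (ins k (D a) D)" using m by (auto intro!: Cmd' simp: ins_rn)
  qed
next
  case (Mu G C \<kappa>' \<rho> \<kappa> D)
  show ?case
  proof (intro allI impI)
    fix k a M0 assume "Mu C = renN M0 k a"
    then obtain C0 where m: "M0 = Mu C0" "C = renNc C0 (Suc k) (Suc a)" by (metis renN_inv(4))
    then have "cmd_type G C0 (TProd (TArr \<kappa>' \<rho>) \<kappa>') (ins (Suc k) (extend \<kappa> D (Suc a)) (extend \<kappa> D))"
      using Mu by blast
    then have "cmd_type G C0 (TProd (TArr \<kappa>' \<rho>) \<kappa>') (extend \<kappa> (ins k (D a) D))"
      by (simp add: extend_ins_rn)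
    then show "has_type G M0 (TArr \<kappa> \<rho>) (ins k (D a) D)" using m Mu(2) by (auto intro: Mu')
  qed
next
  case Inter then show ?case using has_type_cmd_type.Inter by blast
next
  case Om then show ?case using has_type_cmd_type.Om by blast
next
  case Sub then show ?case using has_type_cmd_type.Sub[OF _ Sub.hyps(2)] by blast
next
  case CInter then show ?case using has_type_cmd_type.CInter by blast
next
  case COm then show ?case using has_type_cmd_type.COm by blast
next
  case CSub then show ?case using has_type_cmd_type.CSub[OF _ CSub.hyps(2)] by blast
qed



lemmas sref = sub.refl[simplified]
lemmas sIL = sub.interL[simplified]
lemmas sIR = sub.interR[simplified]
lemmas stop = sub.top[simplified]
lemmas sarr_inter = sub.arr_inter[simplified]
lemmas sprod_inter = sub.prod_inter[simplified]

lemma wfG_ins: "wfG G \<Longrightarrow> wff SD d \<Longrightarrow> wfG (ins k d G)"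
  unfolding wfG_def ins_def by auto
lemma wfD_ins: "wfD G \<Longrightarrow> wff SC d \<Longrightarrow> wfD (ins k d G)"
  unfolding wfD_def ins_def by auto
lemma leG_ins: "wfG G \<Longrightarrow> sub SD d' d \<Longrightarrow> leG (ins k d' G) (ins k d G)"
  unfolding leG_def wfG_def ins_def by (auto intro: sref)
lemma wfD_upd: "wfD D \<Longrightarrow> wff SC d \<Longrightarrow> wfD (D(k := d))"
  unfolding wfD_def by auto
lemma leD_upd: "wfD D \<Longrightarrow> sub SC d' d \<Longrightarrow> leD (D(k := d')) (D(k := d))"
  unfolding leD_def wfD_def by (auto intro: sref)

lemma Om_le_arr: "wff SC k \<Longrightarrow> sub SR TOm r \<Longrightarrow> sub SD TOm (TArr k r)"
proof -
  assume a: "wff SC k" "sub SR TOm r"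
  have "sub SC k TOm" using a(1) by (rule stop)
  then have "sub SD (TArr TOm TOm) (TArr k r)" using a(2) by (rule sub.arr_mono)
  then show ?thesis using sub.om_arr by (rule sub.trans[rotated])
qed

lemma inter_om_ge: "wff s a \<Longrightarrow> sub s a (TInter a TOm)"
  by (rule sub.glb) (auto intro: sref stop)

lemma prod_inv: "sub SC (TProd a b) (TProd c d) \<Longrightarrow> sub SD a c \<and> sub SC b d"
proof -
  assume h: "sub SC (TProd a b) (TProd c d)"
  then have "PR (TProd a b) (TProd c d)" by (rule sub_PR) simp
  then have 1: "sub SD (TInter a TOm) c" "sub SC (TInter b TOm) d" unfolding PR_def by simp_all
  have "wff SC (TProd a b)" using h sub_wf by blast
  then have "sub SD a (TInter a TOm)" "sub SC b (TInter b TOm)" by (auto intro: inter_om_ge)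
  then show ?thesis using 1 sub.trans by blast
qed

lemma triv_rho: "sub SC TOm (TProd (TArr k r) k) \<Longrightarrow> sub SR TOm r"
proof -
  assume h: "sub SC TOm (TProd (TArr k r) k)"
  then have "PR TOm (TProd (TArr k r) k)" by (rule sub_PR) simp
  then have h2: "sub SD TOm (TArr k r)" unfolding PR_def by simp
  then have "AR TOm (TArr k r)" by (rule sub_AR) simp
  then have "val r \<le> bot" unfolding AR_def by simp
  moreover have "wff SR r" using h2 sub_wf by fastforce
  ultimately show ?thesis using SR_complete[of TOm r] by simp
qed

lemma cmd_triv: "sub SR TOm r \<Longrightarrow> cmd_type G C (TProd (TArr TOm r) TOm) D"
proof -
  assume a: "sub SR TOm r"
  have "sub SD TOm (TArr TOm r)" using Om_le_arr[OF _ a] by simp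
  then have "sub SC (TProd TOm TOm) (TProd (TArr TOm r) TOm)" by (rule sub.prod_mono) simp
  then have "sub SC TOm (TProd (TArr TOm r) TOm)" using sub.om_prod by (rule sub.trans[rotated])
  then show ?thesis by (rule has_type_cmd_type.CSub[OF has_type_cmd_type.COm])
qed

lemma cmd_triv': "sub SC TOm (TProd (TArr k r) k) \<Longrightarrow> cmd_type G C (TProd (TArr TOm r) TOm) D"
  using cmd_triv triv_rho by blast

lemma exp_var:
  assumes t: "has_type G (substV (Var i) k N) s D" and w: "wfG G" "wfD D"
  shows "\<exists>\<delta>. wff SD \<delta> \<and> has_type G N \<delta> D \<and> has_type (ins k \<delta> G) (Var i) s D"
proof (cases "i = k")
  case True
  then have "has_type G N s D" using t by simp
  moreover have "wff SD s" using has_type_wf(1)[OF t w] .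
  moreover have "has_type (ins k s G) (Var i) s D" using True by (intro Ax') (simp add: ins_def)
  ultimately show ?thesis by blast
next
  case False
  define i' where "i' = (if i < k then i else i - 1)"
  have "substV (Var i) k N = Var i'" using False by (simp add: i'_def)
  then have "has_type G (Var i') s D" using t by simp
  then have "has_type (ins k TOm G) (liftV k (Var i')) s D" using liftV_typing(1) by blast
  moreover have "liftV k (Var i') = Var i" using False by (auto simp: i'_def)
  ultimately have "has_type (ins k TOm G) (Var i) s D" by simp
  moreover have "has_type G N TOm D" by (rule has_type_cmd_type.Om)
  ultimately show ?thesis by (intro exI[of _ TOm]) simp
qed

lemma sV_inv:
  "Var x = substV M k N \<Longrightarrow> \<exists>i. M = Var i"
  "Lam T = substV M k N \<Longrightarrow> (\<exists>i. M = Var i) \<or> (\<exists>M0. M = Lam M0 \<and> T = substV M0 (Suc k) (liftV 0 N))"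
  "App T1 T2 = substV M k N \<Longrightarrow> (\<exists>i. M = Var i) \<or> (\<exists>M1 M2. M = App M1 M2 \<and> T1 = substV M1 k N \<and> T2 = substV M2 k N)"
  "Mu C = substV M k N \<Longrightarrow> (\<exists>i. M = Var i) \<or> (\<exists>C0. M = Mu C0 \<and> C = substVc C0 k (liftN 0 N))"
  "Cmd a T = substVc C0 k N \<Longrightarrow> \<exists>M0. C0 = Cmd a M0 \<and> T = substV M0 k N"
  subgoal by (cases M) auto
  subgoal by (cases M) auto
  subgoal by (cases M) auto
  subgoal by (cases M) auto
  subgoal by (cases C0) auto
  done

lemma combine_ins:
  assumes w: "wfG G" "wfD D" and d: "wff SD d1" "wff SD d2"
    and h: "has_type (ins k d1 G) M s D"
  shows "has_type (ins k (TInter d1 d2) G) M s D"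
proof -
  have "sub SD (TInter d1 d2) d1" using d by (rule sIL)
  then have "leG (ins k (TInter d1 d2) G) (ins k d1 G)" using w(1) by (intro leG_ins)
  then show ?thesis using has_type_mono(1)[OF h] leD_refl[OF w(2)] by blast
qed

lemma combine_ins2:
  assumes w: "wfG G" "wfD D" and d: "wff SD d1" "wff SD d2"
    and h: "has_type (ins k d2 G) M s D"
  shows "has_type (ins k (TInter d1 d2) G) M s D"
proof -
  have "sub SD (TInter d1 d2) d2" using d by (rule sIR)
  then have "leG (ins k (TInter d1 d2) G) (ins k d2 G)" using w(1) by (intro leG_ins)
  then show ?thesis using has_type_mono(1)[OF h] leD_refl[OF w(2)] by blast
qed

lemma combine_insc:
  assumes w: "wfG G" "wfD D" and d: "wff SD d1" "wff SD d2"
    and h: "cmd_type (ins k d1 G) M s D"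
  shows "cmd_type (ins k (TInter d1 d2) G) M s D"
proof -
  have "sub SD (TInter d1 d2) d1" using d by (rule sIL)
  then have "leG (ins k (TInter d1 d2) G) (ins k d1 G)" using w(1) by (intro leG_ins)
  then show ?thesis using has_type_mono(2)[OF h] leD_refl[OF w(2)] by blast
qed

lemma combine_insc2:
  assumes w: "wfG G" "wfD D" and d: "wff SD d1" "wff SD d2"
    and h: "cmd_type (ins k d2 G) M s D"
  shows "cmd_type (ins k (TInter d1 d2) G) M s D"
proof -
  have "sub SD (TInter d1 d2) d2" using d by (rule sIR)
  then have "leG (ins k (TInter d1 d2) G) (ins k d2 G)" using w(1) by (intro leG_ins)
  then show ?thesis using has_type_mono(2)[OF h] leD_refl[OF w(2)] by blast
qed

lemma subst_exp:
  "has_type G T s D \<Longrightarrow> wfG G \<longrightarrow> wfD D \<longrightarrow> (\<forall>M k N. T = substV M k N \<longrightarrow>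
     (\<exists>\<delta>. wff SD \<delta> \<and> has_type G N \<delta> D \<and> has_type (ins k \<delta> G) M s D))"
  "cmd_type G C s' D \<Longrightarrow> wfG G \<longrightarrow> wfD D \<longrightarrow> (\<forall>C0 k N. C = substVc C0 k N \<longrightarrow>
     (\<exists>\<delta>. wff SD \<delta> \<and> has_type G N \<delta> D \<and> cmd_type (ins k \<delta> G) C0 s' D))"
proof (induction rule: has_type_cmd_type.inducts)
  case (Ax G x D)
  show ?case
  proof (intro impI allI)
    fix M k N assume w: "wfG G" "wfD D" and e: "Var x = substV M k N"
    then obtain i where "M = Var i" using sV_inv(1) by blast
    moreover have "has_type G (substV M k N) (G x) D" using e has_type_cmd_type.Ax by metis
    ultimately show "\<exists>\<delta>. wff SD \<delta> \<and> has_type G N \<delta> D \<and> has_type (ins k \<delta> G) M (G x) D"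
      using exp_var w by blast
  qed
next
  case (Abs \<delta>0 G M1 \<kappa> \<rho> D)
  show ?case
  proof (intro impI allI)
    fix M k N assume w: "wfG G" "wfD D" and e: "Lam M1 = substV M k N"
    have ty: "has_type G (substV M k N) (TArr (TProd \<delta>0 \<kappa>) \<rho>) D"
      using Abs.hyps e has_type_cmd_type.Abs by metis
    from sV_inv(2)[OF e] show "\<exists>\<delta>. wff SD \<delta> \<and> has_type G N \<delta> D \<and> has_type (ins k \<delta> G) M (TArr (TProd \<delta>0 \<kappa>) \<rho>) D"
    proof
      assume "\<exists>i. M = Var i" then show ?thesis using exp_var ty w by blast
    next
      assume "\<exists>M0. M = Lam M0 \<and> M1 = substV M0 (Suc k) (liftV 0 N)"
      then obtain M0 where m: "M = Lam M0" "M1 = substV M0 (Suc k) (liftV 0 N)" by blast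
      have wd: "wff SD \<delta>0" using Abs.hyps(2) by simp
      have "wfG (extend \<delta>0 G)" using w(1) wd by (rule wfG_extend)
      then obtain \<delta> where d: "wff SD \<delta>" "has_type (extend \<delta>0 G) (liftV 0 N) \<delta> D"
          "has_type (ins (Suc k) \<delta> (extend \<delta>0 G)) M0 (TArr \<kappa> \<rho>) D"
        using Abs.IH w m by blast
      have e1: "extend \<delta>0 G = ins 0 \<delta>0 G" by (rule extend_ins0)
      have "has_type G N \<delta> D" using liftV_strength(1)[OF d(2)] e1 by blast
      moreover have "has_type (extend \<delta>0 (ins k \<delta> G)) M0 (TArr \<kappa> \<rho>) D" using d(3) by (simp add: extend_ins_Suc)
      then have "has_type (ins k \<delta> G) M (TArr (TProd \<delta>0 \<kappa>) \<rho>) D" using m Abs'[OF _ wd] by simp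
      ultimately show ?thesis using d(1) by blast
    qed
  qed
next
  case (App G M1 \<delta>0 \<kappa> \<rho> D N1)
  show ?case
  proof (intro impI allI)
    fix M k N assume w: "wfG G" "wfD D" and e: "App M1 N1 = substV M k N"
    have ty: "has_type G (substV M k N) (TArr \<kappa> \<rho>) D"
      using App.hyps e has_type_cmd_type.App by metis
    from sV_inv(3)[OF e] show "\<exists>\<delta>. wff SD \<delta> \<and> has_type G N \<delta> D \<and> has_type (ins k \<delta> G) M (TArr \<kappa> \<rho>) D"
    proof
      assume "\<exists>i. M = Var i" then show ?thesis using exp_var ty w by blast
    next
      assume "\<exists>Ma Mb. M = App Ma Mb \<and> M1 = substV Ma k N \<and> N1 = substV Mb k N"
      then obtain Ma Mb where m: "M = App Ma Mb" "M1 = substV Ma k N" "N1 = substV Mb k N" by blast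
      obtain d1 where d1: "wff SD d1" "has_type G N d1 D" "has_type (ins k d1 G) Ma (TArr (TProd \<delta>0 \<kappa>) \<rho>) D"
        using App.IH(1) w m by blast
      obtain d2 where d2: "wff SD d2" "has_type G N d2 D" "has_type (ins k d2 G) Mb \<delta>0 D"
        using App.IH(2) w m by blast
      have "has_type (ins k (TInter d1 d2) G) Ma (TArr (TProd \<delta>0 \<kappa>) \<rho>) D" using combine_ins[OF w d1(1) d2(1) d1(3)] .
      moreover have "has_type (ins k (TInter d1 d2) G) Mb \<delta>0 D" using combine_ins2[OF w d1(1) d2(1) d2(3)] .
      ultimately have "has_type (ins k (TInter d1 d2) G) M (TArr \<kappa> \<rho>) D" using m has_type_cmd_type.App by blast
      moreover have "has_type G N (TInter d1 d2) D" using d1(2) d2(2) by (rule has_type_cmd_type.Inter)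
      moreover have "wff SD (TInter d1 d2)" using d1(1) d2(1) by simp
      ultimately show ?thesis by blast
    qed
  qed
next
  case (Cmd G M1 \<delta>0 D a)
  show ?case
  proof (intro impI allI)
    fix C0 k N assume w: "wfG G" "wfD D" and e: "Cmd a M1 = substVc C0 k N"
    then obtain M0 where m: "C0 = Cmd a M0" "M1 = substV M0 k N" using sV_inv(5) by blast
    then obtain \<delta> where d: "wff SD \<delta>" "has_type G N \<delta> D" "has_type (ins k \<delta> G) M0 \<delta>0 D"
      using Cmd.IH w by blast
    then have "cmd_type (ins k \<delta> G) C0 (TProd \<delta>0 (D a)) D" using m has_type_cmd_type.Cmd by blast
    then show "\<exists>\<delta>. wff SD \<delta> \<and> has_type G N \<delta> D \<and> cmd_type (ins k \<delta> G) C0 (TProd \<delta>0 (D a)) D"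
      using d by blast
  qed
next
  case (Mu G C1 \<kappa>' \<rho> \<kappa> D)
  show ?case
  proof (intro impI allI)
    fix M k N assume w: "wfG G" "wfD D" and e: "Mu C1 = substV M k N"
    have ty: "has_type G (substV M k N) (TArr \<kappa> \<rho>) D"
      using Mu.hyps e has_type_cmd_type.Mu by metis
    from sV_inv(4)[OF e] show "\<exists>\<delta>. wff SD \<delta> \<and> has_type G N \<delta> D \<and> has_type (ins k \<delta> G) M (TArr \<kappa> \<rho>) D"
    proof
      assume "\<exists>i. M = Var i" then show ?thesis using exp_var ty w by blast
    next
      assume "\<exists>C0. M = Mu C0 \<and> C1 = substVc C0 k (liftN 0 N)"
      then obtain C0 where m: "M = Mu C0" "C1 = substVc C0 k (liftN 0 N)" by blast
      have wk: "wff SC \<kappa>" using Mu.hyps(2) by simp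
      have "wfD (extend \<kappa> D)" using w(2) wk by (rule wfD_extend)
      then obtain \<delta> where d: "wff SD \<delta>" "has_type G (liftN 0 N) \<delta> (extend \<kappa> D)"
          "cmd_type (ins k \<delta> G) C0 (TProd (TArr \<kappa>' \<rho>) \<kappa>') (extend \<kappa> D)"
        using Mu.IH w m by blast
      have e1: "extend \<kappa> D = ins 0 \<kappa> D" by (rule extend_ins0)
      have "has_type G N \<delta> D" using liftN_strength(1)[OF d(2)] e1 by blast
      moreover have "has_type (ins k \<delta> G) M (TArr \<kappa> \<rho>) D" using m Mu'[OF d(3) wk] by simp
      ultimately show ?thesis using d(1) by blast
    qed
  qed
next
  case (Inter G T \<sigma> D \<tau>)
  show ?case
  proof (intro impI allI)
    fix M k N assume w: "wfG G" "wfD D" and e: "T = substV M k N"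
    obtain d1 where d1: "wff SD d1" "has_type G N d1 D" "has_type (ins k d1 G) M \<sigma> D"
      using Inter.IH(1) w e by blast
    obtain d2 where d2: "wff SD d2" "has_type G N d2 D" "has_type (ins k d2 G) M \<tau> D"
      using Inter.IH(2) w e by blast
    have "has_type (ins k (TInter d1 d2) G) M \<sigma> D" using combine_ins[OF w d1(1) d2(1) d1(3)] .
    moreover have "has_type (ins k (TInter d1 d2) G) M \<tau> D" using combine_ins2[OF w d1(1) d2(1) d2(3)] .
    ultimately have "has_type (ins k (TInter d1 d2) G) M (TInter \<sigma> \<tau>) D" by (rule has_type_cmd_type.Inter)
    moreover have "has_type G N (TInter d1 d2) D" using d1(2) d2(2) by (rule has_type_cmd_type.Inter)
    moreover have "wff SD (TInter d1 d2)" using d1(1) d2(1) by simp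
    ultimately show "\<exists>\<delta>. wff SD \<delta> \<and> has_type G N \<delta> D \<and> has_type (ins k \<delta> G) M (TInter \<sigma> \<tau>) D" by blast
  qed
next
  case (Om G T D)
  show ?case
  proof (intro impI allI)
    fix M k N
    have "has_type G N TOm D" "has_type (ins k TOm G) M TOm D" by (rule has_type_cmd_type.Om)+
    then show "\<exists>\<delta>. wff SD \<delta> \<and> has_type G N \<delta> D \<and> has_type (ins k \<delta> G) M TOm D"
      by (intro exI[of _ TOm]) simp
  qed
next
  case (Sub G T \<sigma> D \<tau>)
  show ?case
  proof (intro impI allI)
    fix M k N assume w: "wfG G" "wfD D" and e: "T = substV M k N"
    obtain d where d: "wff SD d" "has_type G N d D" "has_type (ins k d G) M \<sigma> D"
      using Sub.IH w e by blast
    have "has_type (ins k d G) M \<tau> D" using d(3) Sub.hyps(2) by (rule has_type_cmd_type.Sub)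
    then show "\<exists>\<delta>. wff SD \<delta> \<and> has_type G N \<delta> D \<and> has_type (ins k \<delta> G) M \<tau> D" using d by blast
  qed
next
  case (CInter G C \<sigma> D \<tau>)
  show ?case
  proof (intro impI allI)
    fix M k N assume w: "wfG G" "wfD D" and e: "C = substVc M k N"
    obtain d1 where d1: "wff SD d1" "has_type G N d1 D" "cmd_type (ins k d1 G) M \<sigma> D"
      using CInter.IH(1) w e by blast
    obtain d2 where d2: "wff SD d2" "has_type G N d2 D" "cmd_type (ins k d2 G) M \<tau> D"
      using CInter.IH(2) w e by blast
    have "cmd_type (ins k (TInter d1 d2) G) M \<sigma> D" using combine_insc[OF w d1(1) d2(1) d1(3)] .
    moreover have "cmd_type (ins k (TInter d1 d2) G) M \<tau> D" using combine_insc2[OF w d1(1) d2(1) d2(3)] .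
    ultimately have "cmd_type (ins k (TInter d1 d2) G) M (TInter \<sigma> \<tau>) D" by (rule has_type_cmd_type.CInter)
    moreover have "has_type G N (TInter d1 d2) D" using d1(2) d2(2) by (rule has_type_cmd_type.Inter)
    moreover have "wff SD (TInter d1 d2)" using d1(1) d2(1) by simp
    ultimately show "\<exists>\<delta>. wff SD \<delta> \<and> has_type G N \<delta> D \<and> cmd_type (ins k \<delta> G) M (TInter \<sigma> \<tau>) D" by blast
  qed
next
  case (COm G C D)
  show ?case
  proof (intro impI allI)
    fix M k N
    have "has_type G N TOm D" by (rule has_type_cmd_type.Om)
    moreover have "cmd_type (ins k TOm G) M TOm D" by (rule has_type_cmd_type.COm)
    ultimately show "\<exists>\<delta>. wff SD \<delta> \<and> has_type G N \<delta> D \<and> cmd_type (ins k \<delta> G) M TOm D"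
      by (intro exI[of _ TOm]) simp
  qed
next
  case (CSub G C \<sigma> D \<tau>)
  show ?case
  proof (intro impI allI)
    fix M k N assume w: "wfG G" "wfD D" and e: "C = substVc M k N"
    obtain d where d: "wff SD d" "has_type G N d D" "cmd_type (ins k d G) M \<sigma> D"
      using CSub.IH w e by blast
    have "cmd_type (ins k d G) M \<tau> D" using d(3) CSub.hyps(2) by (rule has_type_cmd_type.CSub)
    then show "\<exists>\<delta>. wff SD \<delta> \<and> has_type G N \<delta> D \<and> cmd_type (ins k \<delta> G) M \<tau> D" using d by blast
  qed
qed



definition mD :: "'a::complete_lattice ity \<Rightarrow> 'a ity" where "mD k = meet (map fst (prods k))"
definition mC :: "'a::complete_lattice ity \<Rightarrow> 'a ity" where "mC k = meet (map snd (prods k))"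

lemma mDC_wf: "wff SC k \<Longrightarrow> wff SD (mD k) \<and> wff SC (mC k)"
  unfolding mD_def mC_def using meet_wf prods_fst_wf prods_snd_wf by blast

lemma mDC_mono: "sub SC k' k \<Longrightarrow> sub SD (mD k') (mD k) \<and> sub SC (mC k') (mC k)"
proof -
  assume h: "sub SC k' k"
  then have p: "PR k' k" by (rule sub_PR) simp
  have w: "wff SC k'" using h sub_wf by blast
  have 1: "sub SD (mD k') (mD k)" unfolding mD_def
  proof (rule meet_glb)
    show "wff SD (meet (map fst (prods k')))" using mDC_wf[OF w] unfolding mD_def by blast
    show "\<forall>x\<in>set (map fst (prods k)). sub SD (meet (map fst (prods k'))) x"
      using p unfolding PR_def by force
  qed
  have 2: "sub SC (mC k') (mC k)" unfolding mC_def
  proof (rule meet_glb)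
    show "wff SC (meet (map snd (prods k')))" using mDC_wf[OF w] unfolding mC_def by blast
    show "\<forall>x\<in>set (map snd (prods k)). sub SC (meet (map snd (prods k'))) x"
      using p unfolding PR_def by force
  qed
  show ?thesis using 1 2 by blast
qed

lemma mDC_prod: "mD (TProd d k) = TInter d TOm" "mC (TProd d k) = TInter k TOm"
  by (simp_all add: mD_def mC_def)

definition PLam :: "(nat \<Rightarrow> 'a::complete_lattice ity) \<Rightarrow> trm \<Rightarrow> (nat \<Rightarrow> 'a ity) \<Rightarrow> 'a ity \<Rightarrow> 'a ity \<Rightarrow> bool" where
  "PLam G M D k r \<longleftrightarrow> has_type (extend (mD k) G) M (TArr (mC k) r) D"

lemma closed_PLam: fixes G :: "nat \<Rightarrow> 'a::complete_lattice ity"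
  shows "wfG G \<Longrightarrow> wfD D \<Longrightarrow> closedP (PLam G M D)"
proof (rule closedPI)
  fix k :: "'a ity" assume "wff SC k"
  then have "wff SC (mC k)" using mDC_wf by blast
  then have "sub SD TOm (TArr (mC k) TOm)" by (rule Om_le_arr) simp
  then show "PLam G M D k TOm" unfolding PLam_def
    by (rule has_type_cmd_type.Sub[OF has_type_cmd_type.Om])
next
  fix k r1 r2 :: "'a ity" assume a: "wff SC k" "wff SR r1" "wff SR r2" "PLam G M D k r1" "PLam G M D k r2"
  then have "has_type (extend (mD k) G) M (TInter (TArr (mC k) r1) (TArr (mC k) r2)) D"
    unfolding PLam_def by (blast intro: has_type_cmd_type.Inter)
  moreover have "sub SD (TInter (TArr (mC k) r1) (TArr (mC k) r2)) (TArr (mC k) (TInter r1 r2))"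
    using a mDC_wf by (blast intro: sarr_inter)
  ultimately show "PLam G M D k (TInter r1 r2)" unfolding PLam_def by (rule has_type_cmd_type.Sub)
next
  fix k r k' r' :: "'a ity" assume a: "PLam G M D k r" "wff SC k" "wff SR r" "sub SC k' k" "sub SR r r'"
    and w: "wfG G" "wfD D"
  have m: "sub SD (mD k') (mD k)" "sub SC (mC k') (mC k)" using mDC_mono[OF a(4)] by blast+
  have "leG (extend (mD k') G) (extend (mD k) G)" using leG_refl[OF w(1)] m(1) by (rule leG_extend)
  then have "has_type (extend (mD k') G) M (TArr (mC k) r) D"
    using has_type_mono(1)[OF a(1)[unfolded PLam_def]] leD_refl[OF w(2)] by blast
  moreover have "sub SD (TArr (mC k) r) (TArr (mC k') r')" using m(2) a(5) by (rule sub.arr_mono)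
  ultimately show "PLam G M D k' r'" unfolding PLam_def by (rule has_type_cmd_type.Sub)
qed

lemma genLam:
  "has_type G T t D \<Longrightarrow> wfG G \<longrightarrow> wfD D \<longrightarrow> T = Lam M \<longrightarrow> (\<forall>(k,r)\<in>set (arr t). PLam G M D k r)"
  "cmd_type G C s D \<Longrightarrow> True"
proof (induction rule: has_type_cmd_type.inducts)
  case (Abs \<delta> G M1 \<kappa> \<rho> D)
  show ?case
  proof (intro impI)
    assume w: "wfG G" "wfD D" and e: "Lam M1 = Lam M"
    have wd: "wff SD \<delta>" using Abs.hyps(2) by simp
    have "wff SD (TArr \<kappa> \<rho>)" using has_type_wf(1)[OF Abs.hyps(1) wfG_extend[OF w(1) wd] w(2)] .
    then have wk: "wff SC \<kappa>" "wff SR \<rho>" by simp_all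
    have "leG (extend (TInter \<delta> TOm) G) (extend \<delta> G)" using leG_refl[OF w(1)] sIL[OF wd wff_TOm] by (rule leG_extend)
    then have "has_type (extend (TInter \<delta> TOm) G) M (TArr \<kappa> \<rho>) D"
      using has_type_mono(1)[OF Abs.hyps(1)] leD_refl[OF w(2)] e by blast
    moreover have "sub SD (TArr \<kappa> \<rho>) (TArr (TInter \<kappa> TOm) \<rho>)"
      using sIL[OF wk(1) wff_TOm] sref[OF wk(2)] by (rule sub.arr_mono)
    ultimately have "has_type (extend (TInter \<delta> TOm) G) M (TArr (TInter \<kappa> TOm) \<rho>) D" by (rule has_type_cmd_type.Sub)
    then show "\<forall>(k,r)\<in>set (arr (TArr (TProd \<delta> \<kappa>) \<rho>)). PLam G M D k r"
      by (simp add: PLam_def mDC_prod)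
  qed
next
  case (Inter G T \<sigma> D \<tau>)
  then show ?case by auto
next
  case (Sub G T \<sigma> D \<tau>)
  show ?case
  proof (intro impI)
    assume w: "wfG G" "wfD D" and e: "T = Lam M"
    then have "\<forall>(k,r)\<in>set (arr \<sigma>). PLam G M D k r" using Sub.IH by blast
    then show "\<forall>(k,r)\<in>set (arr \<tau>). PLam G M D k r" using gen_sub[OF closed_PLam[OF w] Sub.hyps(2)] by blast
  qed
qed auto

lemma gen_Lam:
  assumes t: "has_type G (Lam M) (TArr (TProd \<delta> \<kappa>) \<rho>) D" and w: "wfG G" "wfD D"
  shows "has_type (extend \<delta> G) M (TArr \<kappa> \<rho>) D"
proof -
  have "PLam G M D (TProd \<delta> \<kappa>) \<rho>" using genLam(1)[OF t] w by simp
  then have h: "has_type (extend (TInter \<delta> TOm) G) M (TArr (TInter \<kappa> TOm) \<rho>) D"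
    by (simp add: PLam_def mDC_prod)
  have "wff SD (TArr (TProd \<delta> \<kappa>) \<rho>)" using has_type_wf(1)[OF t w] .
  then have wk: "wff SD \<delta>" "wff SC \<kappa>" "wff SR \<rho>" by simp_all
  have "leG (extend \<delta> G) (extend (TInter \<delta> TOm) G)" using leG_refl[OF w(1)] inter_om_ge[OF wk(1)] by (rule leG_extend)
  then have "has_type (extend \<delta> G) M (TArr (TInter \<kappa> TOm) \<rho>) D"
    using has_type_mono(1)[OF h] leD_refl[OF w(2)] by blast
  moreover have "sub SD (TArr (TInter \<kappa> TOm) \<rho>) (TArr \<kappa> \<rho>)"
    using inter_om_ge[OF wk(2)] sref[OF wk(3)] by (rule sub.arr_mono)
  ultimately show ?thesis by (rule has_type_cmd_type.Sub)
qed

lemma beta_red: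
  "has_type G T t D \<Longrightarrow> wfG G \<longrightarrow> wfD D \<longrightarrow> T = App (Lam M) N \<longrightarrow> has_type G (substV M 0 N) t D"
  "cmd_type G C s D \<Longrightarrow> True"
proof (induction rule: has_type_cmd_type.inducts)
  case (App G M1 \<delta> \<kappa> \<rho> D N1)
  show ?case
  proof (intro impI)
    assume w: "wfG G" "wfD D" and e: "App M1 N1 = App (Lam M) N"
    then have "has_type G (Lam M) (TArr (TProd \<delta> \<kappa>) \<rho>) D" "has_type G N \<delta> D" using App.hyps by auto
    then have h: "has_type (extend \<delta> G) M (TArr \<kappa> \<rho>) D" "has_type G N \<delta> D" using gen_Lam w by blast+
    have e1: "extend \<delta> G = ins 0 \<delta> G" by (rule extend_ins0)
    show "has_type G (substV M 0 N) (TArr \<kappa> \<rho>) D" using subst_typing(1)[OF h(1)] e1 h(2) by blast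
  qed
next
  case (Inter G T \<sigma> D \<tau>)
  then show ?case by (blast intro: has_type_cmd_type.Inter)
next
  case (Om G T D)
  then show ?case by (blast intro: has_type_cmd_type.Om)
next
  case (Sub G T \<sigma> D \<tau>)
  then show ?case by (blast intro: has_type_cmd_type.Sub[OF _ Sub.hyps(2)])
qed auto

lemma beta_exp:
  assumes t: "has_type G (substV M 0 N) s D" and w: "wfG G" "wfD D"
  shows "has_type G (App (Lam M) N) s D"
proof -
  obtain \<delta> where d: "wff SD \<delta>" "has_type G N \<delta> D" "has_type (ins 0 \<delta> G) M s D"
    using subst_exp(1)[OF t] w by blast
  have ws: "wff SD s" using has_type_wf(1)[OF t w] .
  have wg: "wfG (extend \<delta> G)" using w(1) d(1) by (rule wfG_extend)
  have hm: "has_type (extend \<delta> G) M s D" using d(3) by (simp add: extend_ins0)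
  have "\<forall>(k,r)\<in>set (arr s). has_type G (App (Lam M) N) (TArr k r) D"
  proof (clarify)
    fix k r assume kr: "(k,r) \<in> set (arr s)"
    have "has_type (extend \<delta> G) M (TArr k r) D" using typing_arr[OF hm wg w(2) kr] .
    then have "has_type G (Lam M) (TArr (TProd \<delta> k) r) D" using d(1) by (rule Abs')
    then show "has_type G (App (Lam M) N) (TArr k r) D" using d(2) by (rule has_type_cmd_type.App)
  qed
  then show ?thesis using typing_arrl[OF ws] by blast
qed

definition PApp :: "(nat \<Rightarrow> 'a::complete_lattice ity) \<Rightarrow> trm \<Rightarrow> trm \<Rightarrow> (nat \<Rightarrow> 'a ity) \<Rightarrow> 'a ity \<Rightarrow> 'a ity \<Rightarrow> bool" where
  "PApp G M N D k r \<longleftrightarrow> (\<exists>\<delta>. wff SD \<delta> \<and> has_type G N \<delta> D \<and> has_type G M (TArr (TProd \<delta> k) r) D)"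

lemma closed_PApp: fixes G :: "nat \<Rightarrow> 'a::complete_lattice ity"
  shows "closedP (PApp G M N D)"
proof (rule closedPI)
  fix k :: "'a ity" assume a: "wff SC k"
  then have "sub SD TOm (TArr (TProd TOm k) TOm)" by (intro Om_le_arr) simp_all
  then have "has_type G M (TArr (TProd TOm k) TOm) D" by (rule has_type_cmd_type.Sub[OF has_type_cmd_type.Om])
  then show "PApp G M N D k TOm" unfolding PApp_def by (intro exI[of _ TOm]) (simp add: has_type_cmd_type.Om)
next
  fix k r1 r2 :: "'a ity" assume a: "wff SC k" "wff SR r1" "wff SR r2" "PApp G M N D k r1" "PApp G M N D k r2"
  obtain d1 where d1: "wff SD d1" "has_type G N d1 D" "has_type G M (TArr (TProd d1 k) r1) D"
    using a(4) unfolding PApp_def by blast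
  obtain d2 where d2: "wff SD d2" "has_type G N d2 D" "has_type G M (TArr (TProd d2 k) r2) D"
    using a(5) unfolding PApp_def by blast
  define d where "d = TInter d1 d2"
  have wd: "wff SD d" using d1(1) d2(1) by (simp add: d_def)
  have "sub SC (TProd d k) (TProd d1 k)" using sIL[OF d1(1) d2(1)] sref[OF a(1)] unfolding d_def by (rule sub.prod_mono)
  then have "sub SD (TArr (TProd d1 k) r1) (TArr (TProd d k) r1)" using sref[OF a(2)] by (rule sub.arr_mono)
  then have 1: "has_type G M (TArr (TProd d k) r1) D" using d1(3) has_type_cmd_type.Sub by blast
  have "sub SC (TProd d k) (TProd d2 k)" using sIR[OF d1(1) d2(1)] sref[OF a(1)] unfolding d_def by (rule sub.prod_mono)
  then have "sub SD (TArr (TProd d2 k) r2) (TArr (TProd d k) r2)" using sref[OF a(3)] by (rule sub.arr_mono)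
  then have 2: "has_type G M (TArr (TProd d k) r2) D" using d2(3) has_type_cmd_type.Sub by blast
  have "has_type G M (TInter (TArr (TProd d k) r1) (TArr (TProd d k) r2)) D" using 1 2 by (rule has_type_cmd_type.Inter)
  moreover have "sub SD (TInter (TArr (TProd d k) r1) (TArr (TProd d k) r2)) (TArr (TProd d k) (TInter r1 r2))"
    using wd a by (intro sarr_inter) simp_all
  ultimately have "has_type G M (TArr (TProd d k) (TInter r1 r2)) D" by (rule has_type_cmd_type.Sub)
  moreover have "has_type G N d D" unfolding d_def using d1(2) d2(2) by (rule has_type_cmd_type.Inter)
  ultimately show "PApp G M N D k (TInter r1 r2)" unfolding PApp_def using wd by blast
next
  fix k r k' r' :: "'a ity" assume a: "PApp G M N D k r" "wff SC k" "wff SR r" "sub SC k' k" "sub SR r r'"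
  obtain d where d: "wff SD d" "has_type G N d D" "has_type G M (TArr (TProd d k) r) D"
    using a(1) unfolding PApp_def by blast
  have "sub SC (TProd d k') (TProd d k)" using sref[OF d(1)] a(4) by (rule sub.prod_mono)
  then have "sub SD (TArr (TProd d k) r) (TArr (TProd d k') r')" using a(5) by (rule sub.arr_mono)
  then have "has_type G M (TArr (TProd d k') r') D" using d(3) has_type_cmd_type.Sub by blast
  then show "PApp G M N D k' r'" unfolding PApp_def using d by blast
qed

lemma genApp:
  "has_type G T t D \<Longrightarrow> wfG G \<longrightarrow> wfD D \<longrightarrow> T = App M N \<longrightarrow> (\<forall>(k,r)\<in>set (arr t). PApp G M N D k r)"
  "cmd_type G C s D \<Longrightarrow> True"
proof (induction rule: has_type_cmd_type.inducts)
  case (App G M1 \<delta> \<kappa> \<rho> D N1)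
  show ?case
  proof (intro impI)
    assume w: "wfG G" "wfD D" and e: "App M1 N1 = App M N"
    have "wff SD \<delta>" using has_type_wf(1)[OF App.hyps(2) w] .
    then show "\<forall>(k,r)\<in>set (arr (TArr \<kappa> \<rho>)). PApp G M N D k r"
      using App.hyps e unfolding PApp_def by auto
  qed
next
  case (Inter G T \<sigma> D \<tau>)
  then show ?case by auto
next
  case (Sub G T \<sigma> D \<tau>)
  show ?case
  proof (intro impI)
    assume w: "wfG G" "wfD D" and e: "T = App M N"
    then have "\<forall>(k,r)\<in>set (arr \<sigma>). PApp G M N D k r" using Sub.IH by blast
    then show "\<forall>(k,r)\<in>set (arr \<tau>). PApp G M N D k r" using gen_sub[OF closed_PApp Sub.hyps(2)] by blast
  qed
qed auto

lemma gen_App: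
  assumes t: "has_type G (App M N) (TArr \<kappa> \<rho>) D" and w: "wfG G" "wfD D"
  shows "\<exists>\<delta>. wff SD \<delta> \<and> has_type G N \<delta> D \<and> has_type G M (TArr (TProd \<delta> \<kappa>) \<rho>) D"
  using genApp(1)[OF t] w unfolding PApp_def by simp

definition PMu :: "(nat \<Rightarrow> 'a::complete_lattice ity) \<Rightarrow> cmd \<Rightarrow> (nat \<Rightarrow> 'a ity) \<Rightarrow> 'a ity \<Rightarrow> 'a ity \<Rightarrow> bool" where
  "PMu G C D k r \<longleftrightarrow> (\<exists>k'. wff SC k' \<and> cmd_type G C (TProd (TArr k' r) k') (extend k D))"

lemma closed_PMu: fixes G :: "nat \<Rightarrow> 'a::complete_lattice ity"
  shows "wfG G \<Longrightarrow> wfD D \<Longrightarrow> closedP (PMu G C D)"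
proof (rule closedPI)
  fix k :: "'a ity" assume a: "wff SC k"
  have "cmd_type G C (TProd (TArr TOm TOm) TOm) (extend k D)" by (rule cmd_triv) simp
  then show "PMu G C D k TOm" unfolding PMu_def by (intro exI[of _ TOm]) simp
next
  fix k r1 r2 :: "'a ity" assume a: "wff SC k" "wff SR r1" "wff SR r2" "PMu G C D k r1" "PMu G C D k r2"
  obtain k1 where k1: "wff SC k1" "cmd_type G C (TProd (TArr k1 r1) k1) (extend k D)"
    using a(4) unfolding PMu_def by blast
  obtain k2 where k2: "wff SC k2" "cmd_type G C (TProd (TArr k2 r2) k2) (extend k D)"
    using a(5) unfolding PMu_def by blast
  define K where "K = TInter k1 k2"
  have wK: "wff SC K" using k1(1) k2(1) by (simp add: K_def)
  have "cmd_type G C (TInter (TProd (TArr k1 r1) k1) (TProd (TArr k2 r2) k2)) (extend k D)"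
    using k1(2) k2(2) by (rule has_type_cmd_type.CInter)
  moreover have "sub SC (TInter (TProd (TArr k1 r1) k1) (TProd (TArr k2 r2) k2))
      (TProd (TInter (TArr k1 r1) (TArr k2 r2)) K)" unfolding K_def using k1(1) k2(1) a
    by (intro sprod_inter) simp_all
  moreover have "sub SC (TProd (TInter (TArr k1 r1) (TArr k2 r2)) K) (TProd (TArr K (TInter r1 r2)) K)"
  proof (rule sub.prod_mono)
    have "sub SD (TArr k1 r1) (TArr K r1)" using sIL[OF k1(1) k2(1)] sref[OF a(2)] unfolding K_def by (rule sub.arr_mono)
    moreover have "sub SD (TArr k2 r2) (TArr K r2)" using sIR[OF k1(1) k2(1)] sref[OF a(3)] unfolding K_def by (rule sub.arr_mono)
    ultimately have "sub SD (TInter (TArr k1 r1) (TArr k2 r2)) (TInter (TArr K r1) (TArr K r2))" by (rule sub_inter_mono)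
    moreover have "sub SD (TInter (TArr K r1) (TArr K r2)) (TArr K (TInter r1 r2))" using wK a by (intro sarr_inter)
    ultimately show "sub SD (TInter (TArr k1 r1) (TArr k2 r2)) (TArr K (TInter r1 r2))" by (rule sub.trans)
    show "sub SC K K" using wK by (rule sref)
  qed
  ultimately have "cmd_type G C (TProd (TArr K (TInter r1 r2)) K) (extend k D)"
    by (blast intro: has_type_cmd_type.CSub sub.trans)
  then show "PMu G C D k (TInter r1 r2)" unfolding PMu_def using wK by blast
next
  fix k r k0 r' :: "'a ity" assume a: "PMu G C D k r" "wff SC k" "wff SR r" "sub SC k0 k" "sub SR r r'"
    and w: "wfG G" "wfD D"
  obtain k' where k': "wff SC k'" "cmd_type G C (TProd (TArr k' r) k') (extend k D)"
    using a(1) unfolding PMu_def by blast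
  have "leD (extend k0 D) (extend k D)" using leD_refl[OF w(2)] a(4) by (rule leD_extend)
  then have "cmd_type G C (TProd (TArr k' r) k') (extend k0 D)"
    using has_type_mono(2)[OF k'(2)] leG_refl[OF w(1)] by blast
  moreover have "sub SC (TProd (TArr k' r) k') (TProd (TArr k' r') k')"
    using sub.arr_mono[OF sref[OF k'(1)] a(5)] sref[OF k'(1)] by (rule sub.prod_mono)
  ultimately have "cmd_type G C (TProd (TArr k' r') k') (extend k0 D)" by (rule has_type_cmd_type.CSub)
  then show "PMu G C D k0 r'" unfolding PMu_def using k'(1) by blast
qed

lemma genMu:
  "has_type G T t D \<Longrightarrow> wfG G \<longrightarrow> wfD D \<longrightarrow> T = Mu C \<longrightarrow> (\<forall>(k,r)\<in>set (arr t). PMu G C D k r)"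
  "cmd_type G C' s D \<Longrightarrow> True"
proof (induction rule: has_type_cmd_type.inducts)
  case (Mu G C1 \<kappa>' \<rho> \<kappa> D)
  show ?case
  proof (intro impI)
    assume w: "wfG G" "wfD D" and e: "Mu C1 = Mu C"
    have wk: "wff SC \<kappa>" using Mu.hyps(2) by simp
    have "wff SC (TProd (TArr \<kappa>' \<rho>) \<kappa>')" using has_type_wf(2)[OF Mu.hyps(1) w(1) wfD_extend[OF w(2) wk]] .
    then have "wff SC \<kappa>'" by simp
    then show "\<forall>(k,r)\<in>set (arr (TArr \<kappa> \<rho>)). PMu G C D k r"
      using Mu.hyps e unfolding PMu_def by auto
  qed
next
  case (Inter G T \<sigma> D \<tau>)
  then show ?case by auto
next
  case (Sub G T \<sigma> D \<tau>)
  show ?case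
  proof (intro impI)
    assume w: "wfG G" "wfD D" and e: "T = Mu C"
    then have "\<forall>(k,r)\<in>set (arr \<sigma>). PMu G C D k r" using Sub.IH by blast
    then show "\<forall>(k,r)\<in>set (arr \<tau>). PMu G C D k r" using gen_sub[OF closed_PMu[OF w] Sub.hyps(2)] by blast
  qed
qed auto

lemma gen_Mu:
  assumes t: "has_type G (Mu C) (TArr \<kappa> \<rho>) D" and w: "wfG G" "wfD D"
  shows "\<exists>\<kappa>'. wff SC \<kappa>' \<and> cmd_type G C (TProd (TArr \<kappa>' \<rho>) \<kappa>') (extend \<kappa> D)"
  using genMu(1)[OF t] w unfolding PMu_def by simp

lemma genCmd:
  "has_type G T t D \<Longrightarrow> True"
  "cmd_type G C s D \<Longrightarrow> wfG G \<longrightarrow> wfD D \<longrightarrow> C = Cmd a M \<longrightarrow>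
     (sub SC TOm s \<or> (\<exists>\<sigma>. has_type G M \<sigma> D \<and> sub SC (TProd \<sigma> (D a)) s))"
proof (induction rule: has_type_cmd_type.inducts)
  case (Cmd G M1 \<delta> D b)
  show ?case
  proof (intro impI)
    assume w: "wfG G" "wfD D" and e: "Cmd b M1 = Cmd a M"
    have "wff SD \<delta>" using has_type_wf(1)[OF Cmd.hyps w] .
    then have "sub SC (TProd \<delta> (D a)) (TProd \<delta> (D a))" using w(2) unfolding wfD_def by (intro sref) simp
    then show "sub SC TOm (TProd \<delta> (D b)) \<or> (\<exists>\<sigma>. has_type G M \<sigma> D \<and> sub SC (TProd \<sigma> (D a)) (TProd \<delta> (D b)))"
      using Cmd.hyps e by auto
  qed
next
  case (CInter G C s1 D s2)
  show ?case
  proof (intro impI)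
    assume w: "wfG G" "wfD D" and e: "C = Cmd a M"
    have wa: "wff SC (D a)" using w(2) unfolding wfD_def by blast
    from CInter.IH(1) w e have A: "sub SC TOm s1 \<or> (\<exists>\<sigma>. has_type G M \<sigma> D \<and> sub SC (TProd \<sigma> (D a)) s1)" by blast
    from CInter.IH(2) w e have B: "sub SC TOm s2 \<or> (\<exists>\<sigma>. has_type G M \<sigma> D \<and> sub SC (TProd \<sigma> (D a)) s2)" by blast
    show "sub SC TOm (TInter s1 s2) \<or> (\<exists>\<sigma>. has_type G M \<sigma> D \<and> sub SC (TProd \<sigma> (D a)) (TInter s1 s2))"
    proof (cases "sub SC TOm s1")
      case T1: True
      show ?thesis
      proof (cases "sub SC TOm s2")
        case True then show ?thesis using T1 by (blast intro: sub.glb)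
      next
        case False
        then obtain \<sigma> where s: "has_type G M \<sigma> D" "sub SC (TProd \<sigma> (D a)) s2" using B by blast
        have "wff SC (TProd \<sigma> (D a))" using s(2) sub_wf by blast
        then have "sub SC (TProd \<sigma> (D a)) TOm" by (rule stop)
        then have "sub SC (TProd \<sigma> (D a)) s1" using T1 by (rule sub.trans)
        then show ?thesis using s by (blast intro: sub.glb)
      qed
    next
      case F1: False
      then obtain \<sigma>1 where s1: "has_type G M \<sigma>1 D" "sub SC (TProd \<sigma>1 (D a)) s1" using A by blast
      have w1: "wff SD \<sigma>1" using s1(2) sub_wf by fastforce
      show ?thesis
      proof (cases "sub SC TOm s2")
        case True
        have "wff SC (TProd \<sigma>1 (D a))" using s1(2) sub_wf by blast
        then have "sub SC (TProd \<sigma>1 (D a)) TOm" by (rule stop)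
        then have "sub SC (TProd \<sigma>1 (D a)) s2" using True by (rule sub.trans)
        then show ?thesis using s1 by (blast intro: sub.glb)
      next
        case False
        then obtain \<sigma>2 where s2: "has_type G M \<sigma>2 D" "sub SC (TProd \<sigma>2 (D a)) s2" using B by blast
        have w2: "wff SD \<sigma>2" using s2(2) sub_wf by fastforce
        have "sub SC (TProd (TInter \<sigma>1 \<sigma>2) (D a)) (TProd \<sigma>1 (D a))" using sIL[OF w1 w2] sref[OF wa] by (rule sub.prod_mono)
        then have 1: "sub SC (TProd (TInter \<sigma>1 \<sigma>2) (D a)) s1" using s1(2) by (rule sub.trans)
        have "sub SC (TProd (TInter \<sigma>1 \<sigma>2) (D a)) (TProd \<sigma>2 (D a))" using sIR[OF w1 w2] sref[OF wa] by (rule sub.prod_mono)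
        then have 2: "sub SC (TProd (TInter \<sigma>1 \<sigma>2) (D a)) s2" using s2(2) by (rule sub.trans)
        have "has_type G M (TInter \<sigma>1 \<sigma>2) D" using s1(1) s2(1) by (rule has_type_cmd_type.Inter)
        then show ?thesis using sub.glb[OF 1 2] by blast
      qed
    qed
  qed
next
  case (COm G C D)
  then show ?case by simp
next
  case (CSub G C s1 D s2)
  show ?case
  proof (intro impI)
    assume w: "wfG G" "wfD D" and e: "C = Cmd a M"
    from CSub.IH w e have A: "sub SC TOm s1 \<or> (\<exists>\<sigma>. has_type G M \<sigma> D \<and> sub SC (TProd \<sigma> (D a)) s1)" by blast
    then show "sub SC TOm s2 \<or> (\<exists>\<sigma>. has_type G M \<sigma> D \<and> sub SC (TProd \<sigma> (D a)) s2)"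
      using CSub.hyps(2) sub.trans by blast
  qed
qed auto

lemma cmd_gen:
  assumes t: "cmd_type G (Cmd a M) (TProd (TArr k1 r) k1) D" and w: "wfG G" "wfD D"
  shows "sub SR TOm r \<or> (has_type G M (TArr k1 r) D \<and> sub SC (D a) k1)"
proof -
  have "sub SC TOm (TProd (TArr k1 r) k1) \<or> (\<exists>\<sigma>. has_type G M \<sigma> D \<and> sub SC (TProd \<sigma> (D a)) (TProd (TArr k1 r) k1))"
    using genCmd(2)[OF t] w by blast
  then show ?thesis
  proof
    assume "sub SC TOm (TProd (TArr k1 r) k1)" then show ?thesis using triv_rho by blast
  next
    assume "\<exists>\<sigma>. has_type G M \<sigma> D \<and> sub SC (TProd \<sigma> (D a)) (TProd (TArr k1 r) k1)"
    then obtain \<sigma> where s: "has_type G M \<sigma> D" "sub SC (TProd \<sigma> (D a)) (TProd (TArr k1 r) k1)" by blast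
    then have "sub SD \<sigma> (TArr k1 r)" "sub SC (D a) k1" using prod_inv by blast+
    then show ?thesis using s(1) has_type_cmd_type.Sub by blast
  qed
qed

lemma cong_Cmd:
  assumes t: "cmd_type G (Cmd a M) s D" and w: "wfG G" "wfD D"
    and h: "\<And>t. has_type G M t D \<Longrightarrow> has_type G M' t D"
  shows "cmd_type G (Cmd a M') s D"
proof -
  have "sub SC TOm s \<or> (\<exists>\<sigma>. has_type G M \<sigma> D \<and> sub SC (TProd \<sigma> (D a)) s)"
    using genCmd(2)[OF t] w by blast
  then show ?thesis
  proof
    assume "sub SC TOm s" then show ?thesis by (rule has_type_cmd_type.CSub[OF has_type_cmd_type.COm])
  next
    assume "\<exists>\<sigma>. has_type G M \<sigma> D \<and> sub SC (TProd \<sigma> (D a)) s"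
    then obtain \<sigma> where s: "has_type G M \<sigma> D" "sub SC (TProd \<sigma> (D a)) s" by blast
    then have "cmd_type G (Cmd a M') (TProd \<sigma> (D a)) D" using h has_type_cmd_type.Cmd by blast
    then show ?thesis using s(2) by (rule has_type_cmd_type.CSub)
  qed
qed



lemma var_anyD:
  "has_type G T s D \<Longrightarrow> T = Var x \<longrightarrow> has_type G (Var x) s D'"
  "cmd_type G C s' D \<Longrightarrow> True"
proof (induction rule: has_type_cmd_type.inducts)
  case (Ax G y D) then show ?case using has_type_cmd_type.Ax by blast
next
  case (Inter G T \<sigma> D \<tau>) then show ?case using has_type_cmd_type.Inter by blast
next
  case (Om G T D) then show ?case using has_type_cmd_type.Om by blast
next
  case (Sub G T \<sigma> D \<tau>) then show ?case using has_type_cmd_type.Sub by blast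
qed auto

lemma cong_Lam:
  "has_type G T s D \<Longrightarrow> T = Lam M \<longrightarrow>
    (\<forall>\<delta> \<kappa> \<rho>. wff SD \<delta> \<longrightarrow> has_type (extend \<delta> G) M (TArr \<kappa> \<rho>) D \<longrightarrow> has_type (extend \<delta> G') M' (TArr \<kappa> \<rho>) D') \<longrightarrow>
    has_type G' (Lam M') s D'"
  "cmd_type G C s' D \<Longrightarrow> True"
proof (induction rule: has_type_cmd_type.inducts)
  case (Abs \<delta> G M1 \<kappa> \<rho> D)
  show ?case
  proof (intro impI)
    assume e: "Lam M1 = Lam M" and h: "\<forall>\<delta> \<kappa> \<rho>. wff SD \<delta> \<longrightarrow> has_type (extend \<delta> G) M (TArr \<kappa> \<rho>) D \<longrightarrow> has_type (extend \<delta> G') M' (TArr \<kappa> \<rho>) D'"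
    have wd: "wff SD \<delta>" using Abs.hyps(2) by simp
    then have "has_type (extend \<delta> G') M' (TArr \<kappa> \<rho>) D'" using h Abs.hyps(1) e by blast
    then show "has_type G' (Lam M') (TArr (TProd \<delta> \<kappa>) \<rho>) D'" using wd by (rule Abs')
  qed
next
  case (Inter G T \<sigma> D \<tau>) then show ?case using has_type_cmd_type.Inter by blast
next
  case (Om G T D) then show ?case using has_type_cmd_type.Om by blast
next
  case (Sub G T \<sigma> D \<tau>) then show ?case using has_type_cmd_type.Sub by blast
qed auto

lemma cong_App:
  "has_type G T s D \<Longrightarrow> T = App M N \<longrightarrow>
    (\<forall>t. has_type G M t D \<longrightarrow> has_type G' M' t D') \<longrightarrow> (\<forall>t. has_type G N t D \<longrightarrow> has_type G' N' t D') \<longrightarrow>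
    has_type G' (App M' N') s D'"
  "cmd_type G C s' D \<Longrightarrow> True"
proof (induction rule: has_type_cmd_type.inducts)
  case (App G M1 \<delta> \<kappa> \<rho> D N1)
  then show ?case using has_type_cmd_type.App by blast
next
  case (Inter G T \<sigma> D \<tau>) then show ?case using has_type_cmd_type.Inter by blast
next
  case (Om G T D) then show ?case using has_type_cmd_type.Om by blast
next
  case (Sub G T \<sigma> D \<tau>) then show ?case using has_type_cmd_type.Sub by blast
qed auto

lemma cong_Mu:
  "has_type G T s D \<Longrightarrow> wfG G \<longrightarrow> wfD D \<longrightarrow> T = Mu C \<longrightarrow>
    (\<forall>\<kappa> \<kappa>' \<rho>. wff SC \<kappa> \<longrightarrow> wff SC \<kappa>' \<longrightarrow> cmd_type G C (TProd (TArr \<kappa>' \<rho>) \<kappa>') (extend \<kappa> D) \<longrightarrow>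
       (\<exists>\<kappa>''. cmd_type G' C' (TProd (TArr \<kappa>'' \<rho>) \<kappa>'') (extend \<kappa> D'))) \<longrightarrow>
    has_type G' (Mu C') s D'"
  "cmd_type G C0 s' D \<Longrightarrow> True"
proof (induction rule: has_type_cmd_type.inducts)
  case (Mu G C1 \<kappa>' \<rho> \<kappa> D)
  show ?case
  proof (intro impI)
    assume w: "wfG G" "wfD D" and e: "Mu C1 = Mu C" and h: "\<forall>\<kappa> \<kappa>' \<rho>. wff SC \<kappa> \<longrightarrow> wff SC \<kappa>' \<longrightarrow> cmd_type G C (TProd (TArr \<kappa>' \<rho>) \<kappa>') (extend \<kappa> D) \<longrightarrow>
       (\<exists>\<kappa>''. cmd_type G' C' (TProd (TArr \<kappa>'' \<rho>) \<kappa>'') (extend \<kappa> D'))"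
    have wk: "wff SC \<kappa>" using Mu.hyps(2) by simp
    have "wff SC (TProd (TArr \<kappa>' \<rho>) \<kappa>')" using has_type_wf(2)[OF Mu.hyps(1) w(1) wfD_extend[OF w(2) wk]] .
    then have "wff SC \<kappa>'" by simp
    then obtain \<kappa>'' where "cmd_type G' C' (TProd (TArr \<kappa>'' \<rho>) \<kappa>'') (extend \<kappa> D')" using h wk Mu.hyps(1) e by blast
    then show "has_type G' (Mu C') (TArr \<kappa> \<rho>) D'" using wk by (rule Mu')
  qed
next
  case (Inter G T \<sigma> D \<tau>) then show ?case using has_type_cmd_type.Inter by blast
next
  case (Om G T D) then show ?case using has_type_cmd_type.Om by blast
next
  case (Sub G T \<sigma> D \<tau>) then show ?case using has_type_cmd_type.Sub by blast
qed auto

lemma extend_upd: "extend e (D(k := x)) = (extend e D)(Suc k := x)"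
  by (rule ext) (auto simp: extend_def split: nat.split)

lemma extend_upd0: "(extend e D)(0 := x) = extend x D"
  by (rule ext) (auto simp: extend_def split: nat.split)

lemma struct_red:
  "\<forall>(G::nat \<Rightarrow> 'a::complete_lattice ity) D s k L \<delta> \<kappa>. wfG G \<longrightarrow> wfD D \<longrightarrow> D k = TProd \<delta> \<kappa> \<longrightarrow> has_type G L \<delta> (D(k := \<kappa>)) \<longrightarrow>
     has_type G T s D \<longrightarrow> has_type G (struct T k L) s (D(k := \<kappa>))"
  "\<forall>(G::nat \<Rightarrow> 'a::complete_lattice ity) D r \<kappa>1 k L \<delta> \<kappa>. wfG G \<longrightarrow> wfD D \<longrightarrow> D k = TProd \<delta> \<kappa> \<longrightarrow> has_type G L \<delta> (D(k := \<kappa>)) \<longrightarrow>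
     cmd_type G C (TProd (TArr \<kappa>1 r) \<kappa>1) D \<longrightarrow> (\<exists>\<kappa>2. cmd_type G (structc C k L) (TProd (TArr \<kappa>2 r) \<kappa>2) (D(k := \<kappa>)))"
proof (induction T and C)
  case (Var x)
  show ?case
  proof (intro allI impI)
    fix G :: "nat \<Rightarrow> 'a ity" and D s k L \<delta> \<kappa> assume t: "has_type G (Var x) s D"
    show "has_type G (struct (Var x) k L) s (D(k := \<kappa>))" using var_anyD(1)[OF t] by simp
  qed
next
  case (Lam M)
  show ?case
  proof (intro allI impI)
    fix G :: "nat \<Rightarrow> 'a ity" and D s k L \<delta> \<kappa> assume w: "wfG G" "wfD D" and dk: "D k = TProd \<delta> \<kappa>" and l: "has_type G L \<delta> (D(k := \<kappa>))"
      and t: "has_type G (Lam M) s D"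
    have "\<forall>\<delta>0 \<kappa>0 \<rho>. wff SD \<delta>0 \<longrightarrow> has_type (extend \<delta>0 G) M (TArr \<kappa>0 \<rho>) D \<longrightarrow>
        has_type (extend \<delta>0 G) (struct M k (liftV 0 L)) (TArr \<kappa>0 \<rho>) (D(k := \<kappa>))"
    proof (intro allI impI)
      fix \<delta>0 \<kappa>0 \<rho> assume d0: "wff SD \<delta>0" and m: "has_type (extend \<delta>0 G) M (TArr \<kappa>0 \<rho>) D"
      have "has_type (ins 0 \<delta>0 G) (liftV 0 L) \<delta> (D(k := \<kappa>))" using liftV_typing(1)[OF l] by blast
      then have "has_type (extend \<delta>0 G) (liftV 0 L) \<delta> (D(k := \<kappa>))" by (simp add: extend_ins0)
      moreover have "wfG (extend \<delta>0 G)" using w(1) d0 by (rule wfG_extend)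
      ultimately show "has_type (extend \<delta>0 G) (struct M k (liftV 0 L)) (TArr \<kappa>0 \<rho>) (D(k := \<kappa>))"
        using Lam.IH[rule_format, where G="extend \<delta>0 G" and D=D and s="TArr \<kappa>0 \<rho>" and k=k and L="liftV 0 L" and \<delta>=\<delta> and \<kappa>=\<kappa>] w(2) dk m by blast
    qed
    then have "has_type G (Lam (struct M k (liftV 0 L))) s (D(k := \<kappa>))" using cong_Lam(1)[OF t] by blast
    then show "has_type G (struct (Lam M) k L) s (D(k := \<kappa>))" by simp
  qed
next
  case (App M N)
  show ?case
  proof (intro allI impI)
    fix G :: "nat \<Rightarrow> 'a ity" and D s k L \<delta> \<kappa> assume w: "wfG G" "wfD D" and dk: "D k = TProd \<delta> \<kappa>" and l: "has_type G L \<delta> (D(k := \<kappa>))"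
      and t: "has_type G (App M N) s D"
    have "\<forall>t. has_type G M t D \<longrightarrow> has_type G (struct M k L) t (D(k := \<kappa>))" using App.IH(1)[rule_format, where G=G and D=D and k=k and L=L and \<delta>=\<delta> and \<kappa>=\<kappa>] w dk l by blast
    moreover have "\<forall>t. has_type G N t D \<longrightarrow> has_type G (struct N k L) t (D(k := \<kappa>))" using App.IH(2)[rule_format, where G=G and D=D and k=k and L=L and \<delta>=\<delta> and \<kappa>=\<kappa>] w dk l by blast
    ultimately have "has_type G (App (struct M k L) (struct N k L)) s (D(k := \<kappa>))" using cong_App(1)[OF t] by blast
    then show "has_type G (struct (App M N) k L) s (D(k := \<kappa>))" by simp
  qed
next
  case (Mu C)
  show ?case
  proof (intro allI impI)
    fix G :: "nat \<Rightarrow> 'a ity" and D s k L \<delta> \<kappa> assume w: "wfG G" "wfD D" and dk: "D k = TProd \<delta> \<kappa>" and l: "has_type G L \<delta> (D(k := \<kappa>))"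
      and t: "has_type G (Mu C) s D"
    have "\<forall>\<kappa>0 \<kappa>' \<rho>. wff SC \<kappa>0 \<longrightarrow> wff SC \<kappa>' \<longrightarrow> cmd_type G C (TProd (TArr \<kappa>' \<rho>) \<kappa>') (extend \<kappa>0 D) \<longrightarrow>
       (\<exists>\<kappa>''. cmd_type G (structc C (Suc k) (liftN 0 L)) (TProd (TArr \<kappa>'' \<rho>) \<kappa>'') (extend \<kappa>0 (D(k := \<kappa>))))"
    proof (intro allI impI)
      fix \<kappa>0 \<kappa>' \<rho> assume k0: "wff SC \<kappa>0" "wff SC \<kappa>'" and c: "cmd_type G C (TProd (TArr \<kappa>' \<rho>) \<kappa>') (extend \<kappa>0 D)"
      have "has_type G (liftN 0 L) \<delta> (ins 0 \<kappa>0 (D(k := \<kappa>)))" using liftN_typing(1)[OF l] by blast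
      then have "has_type G (liftN 0 L) \<delta> ((extend \<kappa>0 D)(Suc k := \<kappa>))" by (simp add: extend_ins0[symmetric] extend_upd)
      moreover have "wfD (extend \<kappa>0 D)" using w(2) k0(1) by (rule wfD_extend)
      moreover have "extend \<kappa>0 D (Suc k) = TProd \<delta> \<kappa>" using dk by simp
      ultimately have "\<exists>\<kappa>''. cmd_type G (structc C (Suc k) (liftN 0 L)) (TProd (TArr \<kappa>'' \<rho>) \<kappa>'') ((extend \<kappa>0 D)(Suc k := \<kappa>))"
        using Mu.IH[rule_format, where G=G and D="extend \<kappa>0 D" and r=\<rho> and k="Suc k" and L="liftN 0 L" and \<delta>=\<delta> and \<kappa>=\<kappa>] w(1) c by blast
      then show "\<exists>\<kappa>''. cmd_type G (structc C (Suc k) (liftN 0 L)) (TProd (TArr \<kappa>'' \<rho>) \<kappa>'') (extend \<kappa>0 (D(k := \<kappa>)))"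
        by (simp add: extend_upd)
    qed
    moreover have "wfD (D(k := \<kappa>))"
    proof -
      have "wff SC (D k)" using w(2) unfolding wfD_def by blast
      then have "wff SC \<kappa>" using dk by simp
      then show ?thesis using w(2) wfD_upd by blast
    qed
    ultimately have "has_type G (Mu (structc C (Suc k) (liftN 0 L))) s (D(k := \<kappa>))"
      using cong_Mu(1)[OF t] w by blast
    then show "has_type G (struct (Mu C) k L) s (D(k := \<kappa>))" by simp
  qed
next
  case (Cmd b M)
  show ?case
  proof (intro allI impI)
    fix G :: "nat \<Rightarrow> 'a ity" and D r \<kappa>1 k L \<delta> \<kappa> assume w: "wfG G" "wfD D" and dk: "D k = TProd \<delta> \<kappa>" and l: "has_type G L \<delta> (D(k := \<kappa>))"
      and t: "cmd_type G (Cmd b M) (TProd (TArr \<kappa>1 r) \<kappa>1) D"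
    have "sub SR TOm r \<or> (has_type G M (TArr \<kappa>1 r) D \<and> sub SC (D b) \<kappa>1)" using cmd_gen[OF t w] .
    then show "\<exists>\<kappa>2. cmd_type G (structc (Cmd b M) k L) (TProd (TArr \<kappa>2 r) \<kappa>2) (D(k := \<kappa>))"
    proof
      assume "sub SR TOm r" then show ?thesis using cmd_triv by blast
    next
      assume h: "has_type G M (TArr \<kappa>1 r) D \<and> sub SC (D b) \<kappa>1"
      have wf1: "wff SD (TArr \<kappa>1 r)" using has_type_wf(1) h w by blast
      show ?thesis
      proof (cases "b = k")
        case True
        have "sub SC (TProd \<delta> \<kappa>) \<kappa>1" using h True dk by simp
        then have "sub SD (TArr \<kappa>1 r) (TArr (TProd \<delta> \<kappa>) r)" using sref[of SR r] wf1 by (intro sub.arr_mono) simp_all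
        then have "has_type G M (TArr (TProd \<delta> \<kappa>) r) D" using h has_type_cmd_type.Sub by blast
        then have "has_type G (struct M k L) (TArr (TProd \<delta> \<kappa>) r) (D(k := \<kappa>))" using Cmd.IH[rule_format, where G=G and D=D and k=k and L=L and \<delta>=\<delta> and \<kappa>=\<kappa>] w dk l by blast
        then have "has_type G (App (struct M k L) L) (TArr \<kappa> r) (D(k := \<kappa>))" using l by (rule has_type_cmd_type.App)
        then have "cmd_type G (Cmd k (App (struct M k L) L)) (TProd (TArr \<kappa> r) \<kappa>) (D(k := \<kappa>))" by (intro Cmd') simp_all
        then show ?thesis using True by auto
      next
        case False
        have "has_type G (struct M k L) (TArr \<kappa>1 r) (D(k := \<kappa>))" using Cmd.IH[rule_format, where G=G and D=D and k=k and L=L and \<delta>=\<delta> and \<kappa>=\<kappa>] w dk l h by blast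
        then have "cmd_type G (Cmd b (struct M k L)) (TProd (TArr \<kappa>1 r) (D b)) (D(k := \<kappa>))"
          using False by (intro Cmd') simp_all
        moreover have "sub SC (TProd (TArr \<kappa>1 r) (D b)) (TProd (TArr \<kappa>1 r) \<kappa>1)" using sref[OF wf1] h by (intro sub.prod_mono) simp_all
        ultimately have "cmd_type G (Cmd b (struct M k L)) (TProd (TArr \<kappa>1 r) \<kappa>1) (D(k := \<kappa>))" by (rule has_type_cmd_type.CSub)
        then show ?thesis using False by auto
      qed
    qed
  qed
qed



lemma leD_F:
  assumes "wfD D" "wff SC \<kappa>" "wff SD d1" "wff SD d2"
  shows "leD (D(k := TProd (TInter d1 d2) \<kappa>)) (D(k := TProd d1 \<kappa>))"
    and "leD (D(k := TProd (TInter d1 d2) \<kappa>)) (D(k := TProd d2 \<kappa>))"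
proof -
  have "sub SC (TProd (TInter d1 d2) \<kappa>) (TProd d1 \<kappa>)" using sIL[OF assms(3,4)] sref[OF assms(2)] by (rule sub.prod_mono)
  then show "leD (D(k := TProd (TInter d1 d2) \<kappa>)) (D(k := TProd d1 \<kappa>))" using assms(1) by (rule leD_upd[rotated])
  have "sub SC (TProd (TInter d1 d2) \<kappa>) (TProd d2 \<kappa>)" using sIR[OF assms(3,4)] sref[OF assms(2)] by (rule sub.prod_mono)
  then show "leD (D(k := TProd (TInter d1 d2) \<kappa>)) (D(k := TProd d2 \<kappa>))" using assms(1) by (rule leD_upd[rotated])
qed

lemma combF:
  assumes w: "wfG G" "wfD D" "wff SC \<kappa>" "wff SD d1" "wff SD d2"
  shows "has_type G X s (D(k := TProd d1 \<kappa>)) \<Longrightarrow> has_type G X s (D(k := TProd (TInter d1 d2) \<kappa>))"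
    and "has_type G X s (D(k := TProd d2 \<kappa>)) \<Longrightarrow> has_type G X s (D(k := TProd (TInter d1 d2) \<kappa>))"
  using has_type_mono(1) leD_F[OF w(2-5)] leG_refl[OF w(1)] by blast+

lemma combFc:
  assumes w: "wfG G" "wfD D" "wff SC \<kappa>" "wff SD d1" "wff SD d2" "wff SC k0"
  shows "cmd_type G X s (extend k0 (D(k := TProd d1 \<kappa>))) \<Longrightarrow> cmd_type G X s (extend k0 (D(k := TProd (TInter d1 d2) \<kappa>)))"
    and "cmd_type G X s (extend k0 (D(k := TProd d2 \<kappa>))) \<Longrightarrow> cmd_type G X s (extend k0 (D(k := TProd (TInter d1 d2) \<kappa>)))"
proof -
  have r: "sub SC k0 k0" using w(6) by (rule sref)
  show "cmd_type G X s (extend k0 (D(k := TProd d1 \<kappa>))) \<Longrightarrow> cmd_type G X s (extend k0 (D(k := TProd (TInter d1 d2) \<kappa>)))"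
    using has_type_mono(2) leD_extend[OF leD_F(1)[OF w(2-5)] r] leG_refl[OF w(1)] by blast
  show "cmd_type G X s (extend k0 (D(k := TProd d2 \<kappa>))) \<Longrightarrow> cmd_type G X s (extend k0 (D(k := TProd (TInter d1 d2) \<kappa>)))"
    using has_type_mono(2) leD_extend[OF leD_F(2)[OF w(2-5)] r] leG_refl[OF w(1)] by blast
qed

lemma expc_Lam:
  "has_type G T s D \<Longrightarrow> wfG G \<longrightarrow> wfD D \<longrightarrow> wff SC \<kappa> \<longrightarrow> T = Lam M' \<longrightarrow>
   (\<forall>\<delta>0 \<kappa>0 \<rho>. wff SD \<delta>0 \<longrightarrow> has_type (extend \<delta>0 G) M' (TArr \<kappa>0 \<rho>) D \<longrightarrow>
      (\<exists>\<delta>. wff SD \<delta> \<and> has_type G L \<delta> D \<and> has_type (extend \<delta>0 G) M (TArr \<kappa>0 \<rho>) (D(k := TProd \<delta> \<kappa>)))) \<longrightarrow>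
   (\<exists>\<delta>. wff SD \<delta> \<and> has_type G L \<delta> D \<and> has_type G (Lam M) s (D(k := TProd \<delta> \<kappa>)))"
  "cmd_type G C s' D \<Longrightarrow> True"
proof (induction rule: has_type_cmd_type.inducts)
  case (Abs \<delta>0 G M1 \<kappa>0 \<rho> D)
  show ?case
  proof (intro impI)
    assume h: "Lam M1 = Lam M'" "\<forall>\<delta>0 \<kappa>0 \<rho>. wff SD \<delta>0 \<longrightarrow> has_type (extend \<delta>0 G) M' (TArr \<kappa>0 \<rho>) D \<longrightarrow>
      (\<exists>\<delta>. wff SD \<delta> \<and> has_type G L \<delta> D \<and> has_type (extend \<delta>0 G) M (TArr \<kappa>0 \<rho>) (D(k := TProd \<delta> \<kappa>)))"
    have wd: "wff SD \<delta>0" using Abs.hyps(2) by simp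
    then obtain \<delta> where d: "wff SD \<delta>" "has_type G L \<delta> D" "has_type (extend \<delta>0 G) M (TArr \<kappa>0 \<rho>) (D(k := TProd \<delta> \<kappa>))"
      using h Abs.hyps(1) by blast
    have "has_type G (Lam M) (TArr (TProd \<delta>0 \<kappa>0) \<rho>) (D(k := TProd \<delta> \<kappa>))" using d(3) wd by (rule Abs')
    then show "\<exists>\<delta>. wff SD \<delta> \<and> has_type G L \<delta> D \<and> has_type G (Lam M) (TArr (TProd \<delta>0 \<kappa>0) \<rho>) (D(k := TProd \<delta> \<kappa>))"
      using d by blast
  qed
next
  case (Inter G T \<sigma> D \<tau>)
  show ?case
  proof (intro impI)
    assume w: "wfG G" "wfD D" "wff SC \<kappa>" and h: "T = Lam M'" "\<forall>\<delta>0 \<kappa>0 \<rho>. wff SD \<delta>0 \<longrightarrow> has_type (extend \<delta>0 G) M' (TArr \<kappa>0 \<rho>) D \<longrightarrow>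
      (\<exists>\<delta>. wff SD \<delta> \<and> has_type G L \<delta> D \<and> has_type (extend \<delta>0 G) M (TArr \<kappa>0 \<rho>) (D(k := TProd \<delta> \<kappa>)))"
    obtain d1 where d1: "wff SD d1" "has_type G L d1 D" "has_type G (Lam M) \<sigma> (D(k := TProd d1 \<kappa>))" using Inter.IH(1) w h by blast
    obtain d2 where d2: "wff SD d2" "has_type G L d2 D" "has_type G (Lam M) \<tau> (D(k := TProd d2 \<kappa>))" using Inter.IH(2) w h by blast
    have "has_type G (Lam M) (TInter \<sigma> \<tau>) (D(k := TProd (TInter d1 d2) \<kappa>))"
      using combF(1)[OF w d1(1) d2(1) d1(3)] combF(2)[OF w d1(1) d2(1) d2(3)] by (rule has_type_cmd_type.Inter)
    moreover have "has_type G L (TInter d1 d2) D" using d1(2) d2(2) by (rule has_type_cmd_type.Inter)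
    ultimately show "\<exists>\<delta>. wff SD \<delta> \<and> has_type G L \<delta> D \<and> has_type G (Lam M) (TInter \<sigma> \<tau>) (D(k := TProd \<delta> \<kappa>))"
      using d1(1) d2(1) by (intro exI[of _ "TInter d1 d2"]) simp
  qed
next
  case (Om G T D)
  show ?case by (intro impI exI[of _ TOm]) (simp add: has_type_cmd_type.Om)
next
  case (Sub G T \<sigma> D \<tau>)
  show ?case
  proof (intro impI)
    assume a: "wfG G" "wfD D" "wff SC \<kappa>" "T = Lam M'" "\<forall>\<delta>0 \<kappa>0 \<rho>. wff SD \<delta>0 \<longrightarrow> has_type (extend \<delta>0 G) M' (TArr \<kappa>0 \<rho>) D \<longrightarrow>
      (\<exists>\<delta>. wff SD \<delta> \<and> has_type G L \<delta> D \<and> has_type (extend \<delta>0 G) M (TArr \<kappa>0 \<rho>) (D(k := TProd \<delta> \<kappa>)))"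
    then obtain d where d: "wff SD d" "has_type G L d D" "has_type G (Lam M) \<sigma> (D(k := TProd d \<kappa>))" using Sub.IH by blast
    have "has_type G (Lam M) \<tau> (D(k := TProd d \<kappa>))" using d(3) Sub.hyps(2) by (rule has_type_cmd_type.Sub)
    then show "\<exists>\<delta>. wff SD \<delta> \<and> has_type G L \<delta> D \<and> has_type G (Lam M) \<tau> (D(k := TProd \<delta> \<kappa>))" using d by blast
  qed
qed auto

lemma expc_App:
  "has_type G T s D \<Longrightarrow> wfG G \<longrightarrow> wfD D \<longrightarrow> wff SC \<kappa> \<longrightarrow> T = App M' N' \<longrightarrow>
   (\<forall>t. has_type G M' t D \<longrightarrow> (\<exists>\<delta>. wff SD \<delta> \<and> has_type G L \<delta> D \<and> has_type G M t (D(k := TProd \<delta> \<kappa>)))) \<longrightarrow>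
   (\<forall>t. has_type G N' t D \<longrightarrow> (\<exists>\<delta>. wff SD \<delta> \<and> has_type G L \<delta> D \<and> has_type G N t (D(k := TProd \<delta> \<kappa>)))) \<longrightarrow>
   (\<exists>\<delta>. wff SD \<delta> \<and> has_type G L \<delta> D \<and> has_type G (App M N) s (D(k := TProd \<delta> \<kappa>)))"
  "cmd_type G C s' D \<Longrightarrow> True"
proof (induction rule: has_type_cmd_type.inducts)
  case (App G M1 \<delta>0 \<kappa>0 \<rho> D N1)
  show ?case
  proof (intro impI)
    assume w: "wfG G" "wfD D" "wff SC \<kappa>" and h: "App M1 N1 = App M' N'"
      "\<forall>t. has_type G M' t D \<longrightarrow> (\<exists>\<delta>. wff SD \<delta> \<and> has_type G L \<delta> D \<and> has_type G M t (D(k := TProd \<delta> \<kappa>)))"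
      "\<forall>t. has_type G N' t D \<longrightarrow> (\<exists>\<delta>. wff SD \<delta> \<and> has_type G L \<delta> D \<and> has_type G N t (D(k := TProd \<delta> \<kappa>)))"
    obtain d1 where d1: "wff SD d1" "has_type G L d1 D" "has_type G M (TArr (TProd \<delta>0 \<kappa>0) \<rho>) (D(k := TProd d1 \<kappa>))"
      using h App.hyps(1) by blast
    obtain d2 where d2: "wff SD d2" "has_type G L d2 D" "has_type G N \<delta>0 (D(k := TProd d2 \<kappa>))"
      using h App.hyps(2) by blast
    have "has_type G (App M N) (TArr \<kappa>0 \<rho>) (D(k := TProd (TInter d1 d2) \<kappa>))"
      using combF(1)[OF w d1(1) d2(1) d1(3)] combF(2)[OF w d1(1) d2(1) d2(3)] by (rule has_type_cmd_type.App)
    moreover have "has_type G L (TInter d1 d2) D" using d1(2) d2(2) by (rule has_type_cmd_type.Inter)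
    ultimately show "\<exists>\<delta>. wff SD \<delta> \<and> has_type G L \<delta> D \<and> has_type G (App M N) (TArr \<kappa>0 \<rho>) (D(k := TProd \<delta> \<kappa>))"
      using d1(1) d2(1) by (intro exI[of _ "TInter d1 d2"]) simp
  qed
next
  case (Inter G T \<sigma> D \<tau>)
  show ?case
  proof (intro impI)
    assume w: "wfG G" "wfD D" "wff SC \<kappa>" and h: "T = App M' N'"
      "\<forall>t. has_type G M' t D \<longrightarrow> (\<exists>\<delta>. wff SD \<delta> \<and> has_type G L \<delta> D \<and> has_type G M t (D(k := TProd \<delta> \<kappa>)))"
      "\<forall>t. has_type G N' t D \<longrightarrow> (\<exists>\<delta>. wff SD \<delta> \<and> has_type G L \<delta> D \<and> has_type G N t (D(k := TProd \<delta> \<kappa>)))"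
    obtain d1 where d1: "wff SD d1" "has_type G L d1 D" "has_type G (App M N) \<sigma> (D(k := TProd d1 \<kappa>))" using Inter.IH(1) w h by blast
    obtain d2 where d2: "wff SD d2" "has_type G L d2 D" "has_type G (App M N) \<tau> (D(k := TProd d2 \<kappa>))" using Inter.IH(2) w h by blast
    have "has_type G (App M N) (TInter \<sigma> \<tau>) (D(k := TProd (TInter d1 d2) \<kappa>))"
      using combF(1)[OF w d1(1) d2(1) d1(3)] combF(2)[OF w d1(1) d2(1) d2(3)] by (rule has_type_cmd_type.Inter)
    moreover have "has_type G L (TInter d1 d2) D" using d1(2) d2(2) by (rule has_type_cmd_type.Inter)
    ultimately show "\<exists>\<delta>. wff SD \<delta> \<and> has_type G L \<delta> D \<and> has_type G (App M N) (TInter \<sigma> \<tau>) (D(k := TProd \<delta> \<kappa>))"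
      using d1(1) d2(1) by (intro exI[of _ "TInter d1 d2"]) simp
  qed
next
  case (Om G T D)
  show ?case by (intro impI exI[of _ TOm]) (simp add: has_type_cmd_type.Om)
next
  case (Sub G T \<sigma> D \<tau>)
  show ?case
  proof (intro impI)
    assume a: "wfG G" "wfD D" "wff SC \<kappa>" "T = App M' N'"
      "\<forall>t. has_type G M' t D \<longrightarrow> (\<exists>\<delta>. wff SD \<delta> \<and> has_type G L \<delta> D \<and> has_type G M t (D(k := TProd \<delta> \<kappa>)))"
      "\<forall>t. has_type G N' t D \<longrightarrow> (\<exists>\<delta>. wff SD \<delta> \<and> has_type G L \<delta> D \<and> has_type G N t (D(k := TProd \<delta> \<kappa>)))"
    then obtain d where d: "wff SD d" "has_type G L d D" "has_type G (App M N) \<sigma> (D(k := TProd d \<kappa>))" using Sub.IH by blast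
    have "has_type G (App M N) \<tau> (D(k := TProd d \<kappa>))" using d(3) Sub.hyps(2) by (rule has_type_cmd_type.Sub)
    then show "\<exists>\<delta>. wff SD \<delta> \<and> has_type G L \<delta> D \<and> has_type G (App M N) \<tau> (D(k := TProd \<delta> \<kappa>))" using d by blast
  qed
qed auto

lemma expc_Mu:
  "has_type G T s D \<Longrightarrow> wfG G \<longrightarrow> wfD D \<longrightarrow> wff SC \<kappa> \<longrightarrow> T = Mu C' \<longrightarrow>
   (\<forall>\<kappa>0 \<kappa>' \<rho>. wff SC \<kappa>0 \<longrightarrow> wff SC \<kappa>' \<longrightarrow> cmd_type G C' (TProd (TArr \<kappa>' \<rho>) \<kappa>') (extend \<kappa>0 D) \<longrightarrow>
      (\<exists>\<delta> \<kappa>''. wff SD \<delta> \<and> wff SC \<kappa>'' \<and> has_type G L \<delta> D \<and> cmd_type G C (TProd (TArr \<kappa>'' \<rho>) \<kappa>'') (extend \<kappa>0 (D(k := TProd \<delta> \<kappa>))))) \<longrightarrow>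
   (\<exists>\<delta>. wff SD \<delta> \<and> has_type G L \<delta> D \<and> has_type G (Mu C) s (D(k := TProd \<delta> \<kappa>)))"
  "cmd_type G C0 s' D \<Longrightarrow> True"
proof (induction rule: has_type_cmd_type.inducts)
  case (Mu G C1 \<kappa>' \<rho> \<kappa>0 D)
  show ?case
  proof (intro impI)
    assume w: "wfG G" "wfD D" "wff SC \<kappa>" and h: "Mu C1 = Mu C'"
      "\<forall>\<kappa>0 \<kappa>' \<rho>. wff SC \<kappa>0 \<longrightarrow> wff SC \<kappa>' \<longrightarrow> cmd_type G C' (TProd (TArr \<kappa>' \<rho>) \<kappa>') (extend \<kappa>0 D) \<longrightarrow>
      (\<exists>\<delta> \<kappa>''. wff SD \<delta> \<and> wff SC \<kappa>'' \<and> has_type G L \<delta> D \<and> cmd_type G C (TProd (TArr \<kappa>'' \<rho>) \<kappa>'') (extend \<kappa>0 (D(k := TProd \<delta> \<kappa>))))"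
    have wk: "wff SC \<kappa>0" using Mu.hyps(2) by simp
    have "wff SC (TProd (TArr \<kappa>' \<rho>) \<kappa>')" using has_type_wf(2)[OF Mu.hyps(1) w(1) wfD_extend[OF w(2) wk]] .
    then have "wff SC \<kappa>'" by simp
    then obtain \<delta> \<kappa>'' where d: "wff SD \<delta>" "wff SC \<kappa>''" "has_type G L \<delta> D"
        "cmd_type G C (TProd (TArr \<kappa>'' \<rho>) \<kappa>'') (extend \<kappa>0 (D(k := TProd \<delta> \<kappa>)))"
      using h wk Mu.hyps(1) by blast
    have "has_type G (Mu C) (TArr \<kappa>0 \<rho>) (D(k := TProd \<delta> \<kappa>))" using d(4) wk by (rule Mu')
    then show "\<exists>\<delta>. wff SD \<delta> \<and> has_type G L \<delta> D \<and> has_type G (Mu C) (TArr \<kappa>0 \<rho>) (D(k := TProd \<delta> \<kappa>))"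
      using d by blast
  qed
next
  case (Inter G T \<sigma> D \<tau>)
  show ?case
  proof (intro impI)
    assume w: "wfG G" "wfD D" "wff SC \<kappa>" and h: "T = Mu C'"
      "\<forall>\<kappa>0 \<kappa>' \<rho>. wff SC \<kappa>0 \<longrightarrow> wff SC \<kappa>' \<longrightarrow> cmd_type G C' (TProd (TArr \<kappa>' \<rho>) \<kappa>') (extend \<kappa>0 D) \<longrightarrow>
      (\<exists>\<delta> \<kappa>''. wff SD \<delta> \<and> wff SC \<kappa>'' \<and> has_type G L \<delta> D \<and> cmd_type G C (TProd (TArr \<kappa>'' \<rho>) \<kappa>'') (extend \<kappa>0 (D(k := TProd \<delta> \<kappa>))))"
    obtain d1 where d1: "wff SD d1" "has_type G L d1 D" "has_type G (Mu C) \<sigma> (D(k := TProd d1 \<kappa>))" using Inter.IH(1) w h by blast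
    obtain d2 where d2: "wff SD d2" "has_type G L d2 D" "has_type G (Mu C) \<tau> (D(k := TProd d2 \<kappa>))" using Inter.IH(2) w h by blast
    have "has_type G (Mu C) (TInter \<sigma> \<tau>) (D(k := TProd (TInter d1 d2) \<kappa>))"
      using combF(1)[OF w d1(1) d2(1) d1(3)] combF(2)[OF w d1(1) d2(1) d2(3)] by (rule has_type_cmd_type.Inter)
    moreover have "has_type G L (TInter d1 d2) D" using d1(2) d2(2) by (rule has_type_cmd_type.Inter)
    ultimately show "\<exists>\<delta>. wff SD \<delta> \<and> has_type G L \<delta> D \<and> has_type G (Mu C) (TInter \<sigma> \<tau>) (D(k := TProd \<delta> \<kappa>))"
      using d1(1) d2(1) by (intro exI[of _ "TInter d1 d2"]) simp
  qed
next
  case (Om G T D)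
  show ?case by (intro impI exI[of _ TOm]) (simp add: has_type_cmd_type.Om)
next
  case (Sub G T \<sigma> D \<tau>)
  show ?case
  proof (intro impI)
    assume a: "wfG G" "wfD D" "wff SC \<kappa>" "T = Mu C'"
      "\<forall>\<kappa>0 \<kappa>' \<rho>. wff SC \<kappa>0 \<longrightarrow> wff SC \<kappa>' \<longrightarrow> cmd_type G C' (TProd (TArr \<kappa>' \<rho>) \<kappa>') (extend \<kappa>0 D) \<longrightarrow>
      (\<exists>\<delta> \<kappa>''. wff SD \<delta> \<and> wff SC \<kappa>'' \<and> has_type G L \<delta> D \<and> cmd_type G C (TProd (TArr \<kappa>'' \<rho>) \<kappa>'') (extend \<kappa>0 (D(k := TProd \<delta> \<kappa>))))"
    then obtain d where d: "wff SD d" "has_type G L d D" "has_type G (Mu C) \<sigma> (D(k := TProd d \<kappa>))" using Sub.IH by blast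
    have "has_type G (Mu C) \<tau> (D(k := TProd d \<kappa>))" using d(3) Sub.hyps(2) by (rule has_type_cmd_type.Sub)
    then show "\<exists>\<delta>. wff SD \<delta> \<and> has_type G L \<delta> D \<and> has_type G (Mu C) \<tau> (D(k := TProd \<delta> \<kappa>))" using d by blast
  qed
qed auto



lemma struct_exp:
  "\<forall>(G::nat \<Rightarrow> 'a::complete_lattice ity) D s k L. wfG G \<longrightarrow> wfD D \<longrightarrow> has_type G (struct T k L) s D \<longrightarrow>
     (\<exists>\<delta>. wff SD \<delta> \<and> has_type G L \<delta> D \<and> has_type G T s (D(k := TProd \<delta> (D k))))"
  "\<forall>(G::nat \<Rightarrow> 'a::complete_lattice ity) D r \<kappa>1 k L. wfG G \<longrightarrow> wfD D \<longrightarrow>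
     cmd_type G (structc C k L) (TProd (TArr \<kappa>1 r) \<kappa>1) D \<longrightarrow>
     (\<exists>\<delta> \<kappa>2. wff SD \<delta> \<and> wff SC \<kappa>2 \<and> has_type G L \<delta> D \<and> cmd_type G C (TProd (TArr \<kappa>2 r) \<kappa>2) (D(k := TProd \<delta> (D k))))"
proof (induction T and C)
  case (Var x)
  show ?case
  proof (intro allI impI)
    fix G :: "nat \<Rightarrow> 'a ity" and D s k L assume t: "has_type G (struct (Var x) k L) s D"
    have "has_type G (Var x) s (D(k := TProd TOm (D k)))" using var_anyD(1)[of G "Var x" s D x] t by simp
    moreover have "has_type G L TOm D" by (rule has_type_cmd_type.Om)
    ultimately show "\<exists>\<delta>. wff SD \<delta> \<and> has_type G L \<delta> D \<and> has_type G (Var x) s (D(k := TProd \<delta> (D k)))"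
      by (intro exI[of _ TOm]) simp
  qed
next
  case (Lam M)
  show ?case
  proof (intro allI impI)
    fix G :: "nat \<Rightarrow> 'a ity" and D s k L assume w: "wfG G" "wfD D" and t: "has_type G (struct (Lam M) k L) s D"
    have wk: "wff SC (D k)" using w(2) unfolding wfD_def by blast
    have t': "has_type G (Lam (struct M k (liftV 0 L))) s D" using t by simp
    have "\<forall>\<delta>0 \<kappa>0 \<rho>. wff SD \<delta>0 \<longrightarrow> has_type (extend \<delta>0 G) (struct M k (liftV 0 L)) (TArr \<kappa>0 \<rho>) D \<longrightarrow>
      (\<exists>\<delta>. wff SD \<delta> \<and> has_type G L \<delta> D \<and> has_type (extend \<delta>0 G) M (TArr \<kappa>0 \<rho>) (D(k := TProd \<delta> (D k))))"
    proof (intro allI impI)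
      fix \<delta>0 \<kappa>0 \<rho> assume d0: "wff SD \<delta>0" and m: "has_type (extend \<delta>0 G) (struct M k (liftV 0 L)) (TArr \<kappa>0 \<rho>) D"
      have "wfG (extend \<delta>0 G)" using w(1) d0 by (rule wfG_extend)
      then obtain \<delta> where d: "wff SD \<delta>" "has_type (extend \<delta>0 G) (liftV 0 L) \<delta> D"
          "has_type (extend \<delta>0 G) M (TArr \<kappa>0 \<rho>) (D(k := TProd \<delta> (D k)))"
        using Lam.IH[rule_format, where G="extend \<delta>0 G" and D=D and s="TArr \<kappa>0 \<rho>" and k=k and L="liftV 0 L"] w(2) m by blast
      have e1: "extend \<delta>0 G = ins 0 \<delta>0 G" by (rule extend_ins0)
      have "has_type G L \<delta> D" using liftV_strength(1)[OF d(2)] e1 by blast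
      then show "\<exists>\<delta>. wff SD \<delta> \<and> has_type G L \<delta> D \<and> has_type (extend \<delta>0 G) M (TArr \<kappa>0 \<rho>) (D(k := TProd \<delta> (D k)))"
        using d by blast
    qed
    then show "\<exists>\<delta>. wff SD \<delta> \<and> has_type G L \<delta> D \<and> has_type G (Lam M) s (D(k := TProd \<delta> (D k)))"
      using expc_Lam(1)[OF t'] w wk by blast
  qed
next
  case (App M N)
  show ?case
  proof (intro allI impI)
    fix G :: "nat \<Rightarrow> 'a ity" and D s k L assume w: "wfG G" "wfD D" and t: "has_type G (struct (App M N) k L) s D"
    have wk: "wff SC (D k)" using w(2) unfolding wfD_def by blast
    have t': "has_type G (App (struct M k L) (struct N k L)) s D" using t by simp
    have "\<forall>t. has_type G (struct M k L) t D \<longrightarrow> (\<exists>\<delta>. wff SD \<delta> \<and> has_type G L \<delta> D \<and> has_type G M t (D(k := TProd \<delta> (D k))))"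
      using App.IH(1)[rule_format, where G=G and D=D and k=k and L=L] w by blast
    moreover have "\<forall>t. has_type G (struct N k L) t D \<longrightarrow> (\<exists>\<delta>. wff SD \<delta> \<and> has_type G L \<delta> D \<and> has_type G N t (D(k := TProd \<delta> (D k))))"
      using App.IH(2)[rule_format, where G=G and D=D and k=k and L=L] w by blast
    ultimately show "\<exists>\<delta>. wff SD \<delta> \<and> has_type G L \<delta> D \<and> has_type G (App M N) s (D(k := TProd \<delta> (D k)))"
      using expc_App(1)[OF t'] w wk by blast
  qed
next
  case (Mu C)
  show ?case
  proof (intro allI impI)
    fix G :: "nat \<Rightarrow> 'a ity" and D s k L assume w: "wfG G" "wfD D" and t: "has_type G (struct (Mu C) k L) s D"
    have wk: "wff SC (D k)" using w(2) unfolding wfD_def by blast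
    have t': "has_type G (Mu (structc C (Suc k) (liftN 0 L))) s D" using t by simp
    have "\<forall>\<kappa>0 \<kappa>' \<rho>. wff SC \<kappa>0 \<longrightarrow> wff SC \<kappa>' \<longrightarrow> cmd_type G (structc C (Suc k) (liftN 0 L)) (TProd (TArr \<kappa>' \<rho>) \<kappa>') (extend \<kappa>0 D) \<longrightarrow>
      (\<exists>\<delta> \<kappa>''. wff SD \<delta> \<and> wff SC \<kappa>'' \<and> has_type G L \<delta> D \<and> cmd_type G C (TProd (TArr \<kappa>'' \<rho>) \<kappa>'') (extend \<kappa>0 (D(k := TProd \<delta> (D k)))))"
    proof (intro allI impI)
      fix \<kappa>0 \<kappa>' \<rho> assume k0: "wff SC \<kappa>0" "wff SC \<kappa>'" and c: "cmd_type G (structc C (Suc k) (liftN 0 L)) (TProd (TArr \<kappa>' \<rho>) \<kappa>') (extend \<kappa>0 D)"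
      have "wfD (extend \<kappa>0 D)" using w(2) k0(1) by (rule wfD_extend)
      then obtain \<delta> \<kappa>2 where d: "wff SD \<delta>" "wff SC \<kappa>2" "has_type G (liftN 0 L) \<delta> (extend \<kappa>0 D)"
          "cmd_type G C (TProd (TArr \<kappa>2 \<rho>) \<kappa>2) ((extend \<kappa>0 D)(Suc k := TProd \<delta> (extend \<kappa>0 D (Suc k))))"
        using Mu.IH[rule_format, where G=G and D="extend \<kappa>0 D" and r=\<rho> and k="Suc k" and L="liftN 0 L"] w(1) c by blast
      have e1: "extend \<kappa>0 D = ins 0 \<kappa>0 D" by (rule extend_ins0)
      have "has_type G L \<delta> D" using liftN_strength(1)[OF d(3)] e1 by blast
      moreover have "cmd_type G C (TProd (TArr \<kappa>2 \<rho>) \<kappa>2) (extend \<kappa>0 (D(k := TProd \<delta> (D k))))"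
        using d(4) by (simp add: extend_upd)
      ultimately show "\<exists>\<delta> \<kappa>''. wff SD \<delta> \<and> wff SC \<kappa>'' \<and> has_type G L \<delta> D \<and> cmd_type G C (TProd (TArr \<kappa>'' \<rho>) \<kappa>'') (extend \<kappa>0 (D(k := TProd \<delta> (D k))))"
        using d(1,2) by blast
    qed
    then show "\<exists>\<delta>. wff SD \<delta> \<and> has_type G L \<delta> D \<and> has_type G (Mu C) s (D(k := TProd \<delta> (D k)))"
      using expc_Mu(1)[OF t'] w wk by blast
  qed
next
  case (Cmd b M)
  show ?case
  proof (intro allI impI)
    fix G :: "nat \<Rightarrow> 'a ity" and D r \<kappa>1 k L assume w: "wfG G" "wfD D"
      and t: "cmd_type G (structc (Cmd b M) k L) (TProd (TArr \<kappa>1 r) \<kappa>1) D"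
    have wk: "wff SC (D k)" using w(2) unfolding wfD_def by blast
    show "\<exists>\<delta> \<kappa>2. wff SD \<delta> \<and> wff SC \<kappa>2 \<and> has_type G L \<delta> D \<and> cmd_type G (Cmd b M) (TProd (TArr \<kappa>2 r) \<kappa>2) (D(k := TProd \<delta> (D k)))"
    proof (cases "b = k")
      case True
      then have t': "cmd_type G (Cmd k (App (struct M k L) L)) (TProd (TArr \<kappa>1 r) \<kappa>1) D" using t by simp
      have "sub SR TOm r \<or> (has_type G (App (struct M k L) L) (TArr \<kappa>1 r) D \<and> sub SC (D k) \<kappa>1)"
        using cmd_gen[OF t' w] .
      then show ?thesis
      proof
        assume "sub SR TOm r"
        then have "cmd_type G (Cmd b M) (TProd (TArr TOm r) TOm) (D(k := TProd TOm (D k)))" by (rule cmd_triv)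
        then show ?thesis by (intro exI[of _ TOm]) (simp add: has_type_cmd_type.Om)
      next
        assume h: "has_type G (App (struct M k L) L) (TArr \<kappa>1 r) D \<and> sub SC (D k) \<kappa>1"
        obtain d1 where d1: "wff SD d1" "has_type G L d1 D" "has_type G (struct M k L) (TArr (TProd d1 \<kappa>1) r) D"
          using gen_App[OF _ w] h by blast
        obtain d2 where d2: "wff SD d2" "has_type G L d2 D" "has_type G M (TArr (TProd d1 \<kappa>1) r) (D(k := TProd d2 (D k)))"
          using Cmd.IH[rule_format, where G=G and D=D and k=k and L=L] w d1(3) by blast
        define d where "d = TInter d2 d1"
        have wd: "wff SD d" using d1(1) d2(1) by (simp add: d_def)
        have m: "has_type G M (TArr (TProd d1 \<kappa>1) r) (D(k := TProd d (D k)))"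
          unfolding d_def using combF(1)[OF w(1,2) wk d2(1) d1(1) d2(3)] .
        have wr: "wff SR r" using has_type_wf(1)[OF d1(3) w] by simp
        have "sub SC (TProd d (D k)) (TProd d1 \<kappa>1)" using sIR[OF d2(1) d1(1)] h unfolding d_def by (intro sub.prod_mono) simp_all
        then have "sub SD (TArr (TProd d1 \<kappa>1) r) (TArr (TProd d (D k)) r)" using sref[OF wr] by (rule sub.arr_mono)
        then have "has_type G M (TArr (TProd d (D k)) r) (D(k := TProd d (D k)))" using m has_type_cmd_type.Sub by blast
        then have "cmd_type G (Cmd k M) (TProd (TArr (TProd d (D k)) r) (TProd d (D k))) (D(k := TProd d (D k)))"
          by (intro Cmd') simp_all
        moreover have "has_type G L d D" unfolding d_def using d2(2) d1(2) by (rule has_type_cmd_type.Inter)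
        moreover have "wff SC (TProd d (D k))" using wd wk by simp
        ultimately show ?thesis using True wd by blast
      qed
    next
      case False
      then have t': "cmd_type G (Cmd b (struct M k L)) (TProd (TArr \<kappa>1 r) \<kappa>1) D" using t by simp
      have "sub SR TOm r \<or> (has_type G (struct M k L) (TArr \<kappa>1 r) D \<and> sub SC (D b) \<kappa>1)"
        using cmd_gen[OF t' w] .
      then show ?thesis
      proof
        assume "sub SR TOm r"
        then have "cmd_type G (Cmd b M) (TProd (TArr TOm r) TOm) (D(k := TProd TOm (D k)))" by (rule cmd_triv)
        then show ?thesis by (intro exI[of _ TOm]) (simp add: has_type_cmd_type.Om)
      next
        assume h: "has_type G (struct M k L) (TArr \<kappa>1 r) D \<and> sub SC (D b) \<kappa>1"
        obtain d where d: "wff SD d" "has_type G L d D" "has_type G M (TArr \<kappa>1 r) (D(k := TProd d (D k)))"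
          using Cmd.IH[rule_format, where G=G and D=D and k=k and L=L] w h by blast
        have wt: "wff SD (TArr \<kappa>1 r)" using has_type_wf(1) h w by blast
        have "cmd_type G (Cmd b M) (TProd (TArr \<kappa>1 r) (D b)) (D(k := TProd d (D k)))"
          using d(3) False by (intro Cmd') simp_all
        moreover have "sub SC (TProd (TArr \<kappa>1 r) (D b)) (TProd (TArr \<kappa>1 r) \<kappa>1)" using sref[OF wt] h by (intro sub.prod_mono) simp_all
        ultimately have "cmd_type G (Cmd b M) (TProd (TArr \<kappa>1 r) \<kappa>1) (D(k := TProd d (D k)))" by (rule has_type_cmd_type.CSub)
        moreover have "wff SC \<kappa>1" using wt by simp
        ultimately show ?thesis using d by blast
      qed
    qed
  qed
qed



lemma mu_red:
  "has_type G T s D \<Longrightarrow> wfG G \<longrightarrow> wfD D \<longrightarrow> T = App (Mu C) N \<longrightarrow> has_type G (Mu (structc C 0 (liftN 0 N))) s D"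
  "cmd_type G C0 s' D \<Longrightarrow> True"
proof (induction rule: has_type_cmd_type.inducts)
  case (App G M1 \<delta> \<kappa> \<rho> D N1)
  show ?case
  proof (intro impI)
    assume w: "wfG G" "wfD D" and e: "App M1 N1 = App (Mu C) N"
    then have tm: "has_type G (Mu C) (TArr (TProd \<delta> \<kappa>) \<rho>) D" and tn: "has_type G N \<delta> D" using App.hyps by auto
    have "wff SD (TArr (TProd \<delta> \<kappa>) \<rho>)" using has_type_wf(1)[OF tm w] .
    then have wd: "wff SD \<delta>" "wff SC \<kappa>" by simp_all
    obtain \<kappa>' where k': "wff SC \<kappa>'" "cmd_type G C (TProd (TArr \<kappa>' \<rho>) \<kappa>') (extend (TProd \<delta> \<kappa>) D)"
      using gen_Mu[OF tm w] by blast
    have wD: "wfD (extend (TProd \<delta> \<kappa>) D)" using w(2) by (rule wfD_extend) (simp add: wd)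
    have "has_type G (liftN 0 N) \<delta> (ins 0 \<kappa> D)" using liftN_typing(1)[OF tn] by blast
    then have l: "has_type G (liftN 0 N) \<delta> ((extend (TProd \<delta> \<kappa>) D)(0 := \<kappa>))" by (simp add: extend_upd0 extend_ins0[symmetric])
    have "\<exists>\<kappa>2. cmd_type G (structc C 0 (liftN 0 N)) (TProd (TArr \<kappa>2 \<rho>) \<kappa>2) ((extend (TProd \<delta> \<kappa>) D)(0 := \<kappa>))"
      using struct_red(2)[rule_format, where G=G and D="extend (TProd \<delta> \<kappa>) D" and r=\<rho> and k=0 and L="liftN 0 N" and \<delta>=\<delta> and \<kappa>=\<kappa>]
        w(1) wD l k'(2) by simp
    then obtain \<kappa>2 where "cmd_type G (structc C 0 (liftN 0 N)) (TProd (TArr \<kappa>2 \<rho>) \<kappa>2) (extend \<kappa> D)"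
      by (auto simp: extend_upd0)
    then show "has_type G (Mu (structc C 0 (liftN 0 N))) (TArr \<kappa> \<rho>) D" using wd(2) by (rule Mu')
  qed
next
  case (Inter G T \<sigma> D \<tau>)
  then show ?case by (blast intro: has_type_cmd_type.Inter)
next
  case (Om G T D)
  then show ?case by (blast intro: has_type_cmd_type.Om)
next
  case (Sub G T \<sigma> D \<tau>)
  then show ?case by (blast intro: has_type_cmd_type.Sub[OF _ Sub.hyps(2)])
qed auto

lemma mu_exp:
  "has_type G T s D \<Longrightarrow> wfG G \<longrightarrow> wfD D \<longrightarrow> T = Mu (structc C 0 (liftN 0 N)) \<longrightarrow> has_type G (App (Mu C) N) s D"
  "cmd_type G C0 s' D \<Longrightarrow> True"
proof (induction rule: has_type_cmd_type.inducts)
  case (Mu G C1 \<kappa>' \<rho> \<kappa> D)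
  show ?case
  proof (intro impI)
    assume w: "wfG G" "wfD D" and e: "Mu C1 = Mu (structc C 0 (liftN 0 N))"
    have wk: "wff SC \<kappa>" using Mu.hyps(2) by simp
    have wD: "wfD (extend \<kappa> D)" using w(2) wk by (rule wfD_extend)
    have c: "cmd_type G (structc C 0 (liftN 0 N)) (TProd (TArr \<kappa>' \<rho>) \<kappa>') (extend \<kappa> D)" using Mu.hyps(1) e by simp
    obtain \<delta> \<kappa>2 where d: "wff SD \<delta>" "wff SC \<kappa>2" "has_type G (liftN 0 N) \<delta> (extend \<kappa> D)"
        "cmd_type G C (TProd (TArr \<kappa>2 \<rho>) \<kappa>2) ((extend \<kappa> D)(0 := TProd \<delta> (extend \<kappa> D 0)))"
      using struct_exp(2)[rule_format, where G=G and D="extend \<kappa> D" and r=\<rho> and k=0 and L="liftN 0 N"] w(1) wD c by blast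
    have e1: "extend \<kappa> D = ins 0 \<kappa> D" by (rule extend_ins0)
    have tn: "has_type G N \<delta> D" using liftN_strength(1)[OF d(3)] e1 by blast
    have "cmd_type G C (TProd (TArr \<kappa>2 \<rho>) \<kappa>2) (extend (TProd \<delta> \<kappa>) D)" using d(4) by (simp add: extend_upd0)
    then have "has_type G (Mu C) (TArr (TProd \<delta> \<kappa>) \<rho>) D" using d(1) wk by (intro Mu') simp_all
    then show "has_type G (App (Mu C) N) (TArr \<kappa> \<rho>) D" using tn by (rule has_type_cmd_type.App)
  qed
next
  case (Inter G T \<sigma> D \<tau>)
  then show ?case by (blast intro: has_type_cmd_type.Inter)
next
  case (Om G T D)
  then show ?case by (blast intro: has_type_cmd_type.Om)
next
  case (Sub G T \<sigma> D \<tau>)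
  then show ?case by (blast intro: has_type_cmd_type.Sub[OF _ Sub.hyps(2)])
qed auto

lemma ren_red:
  assumes t: "cmd_type G (Cmd a (Mu C)) (TProd (TArr k1 r) k1) D" and w: "wfG G" "wfD D"
  shows "\<exists>k2. wff SC k2 \<and> cmd_type G (renNc C 0 a) (TProd (TArr k2 r) k2) D"
proof -
  have "sub SR TOm r \<or> (has_type G (Mu C) (TArr k1 r) D \<and> sub SC (D a) k1)" using cmd_gen[OF t w] .
  then show ?thesis
  proof
    assume "sub SR TOm r"
    then have "cmd_type G (renNc C 0 a) (TProd (TArr TOm r) TOm) D" by (rule cmd_triv)
    then show ?thesis by (intro exI[of _ TOm]) simp
  next
    assume h: "has_type G (Mu C) (TArr k1 r) D \<and> sub SC (D a) k1"
    have "wff SD (TArr k1 r)" using has_type_wf(1) h w by blast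
    then have wr: "wff SR r" by simp
    have "sub SD (TArr k1 r) (TArr (D a) r)" using h sref[OF wr] by (intro sub.arr_mono) simp_all
    then have "has_type G (Mu C) (TArr (D a) r) D" using h has_type_cmd_type.Sub by blast
    then obtain k' where k': "wff SC k'" "cmd_type G C (TProd (TArr k' r) k') (extend (D a) D)"
      using gen_Mu w by blast
    have e1: "extend (D a) D = ins 0 (D a) D" by (rule extend_ins0)
    have "cmd_type G (renNc C 0 a) (TProd (TArr k' r) k') D" using ren_typing(2)[OF k'(2)] e1 by blast
    then show ?thesis using k'(1) by blast
  qed
qed

lemma ren_exp2:
  assumes t: "cmd_type G (renNc C 0 a) (TProd (TArr k1 r) k1) D" and w: "wfG G" "wfD D"
  shows "\<exists>k2. wff SC k2 \<and> cmd_type G (Cmd a (Mu C)) (TProd (TArr k2 r) k2) D"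
proof -
  have "cmd_type G C (TProd (TArr k1 r) k1) (ins 0 (D a) D)" using ren_exp(2)[OF t] by blast
  then have c: "cmd_type G C (TProd (TArr k1 r) k1) (extend (D a) D)" by (simp add: extend_ins0)
  have wa: "wff SC (D a)" using w(2) unfolding wfD_def by blast
  have "has_type G (Mu C) (TArr (D a) r) D" using c wa by (rule Mu')
  then have "cmd_type G (Cmd a (Mu C)) (TProd (TArr (D a) r) (D a)) D" by (rule has_type_cmd_type.Cmd)
  then show ?thesis using wa by blast
qed

lemma red_pres:
  "red M N \<Longrightarrow> \<forall>(G::nat \<Rightarrow> 'a::complete_lattice ity) D s. wfG G \<longrightarrow> wfD D \<longrightarrow> (has_type G M s D \<longleftrightarrow> has_type G N s D)"
  "redc C C' \<Longrightarrow> \<forall>(G::nat \<Rightarrow> 'a::complete_lattice ity) D r. wfG G \<longrightarrow> wfD D \<longrightarrow>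
     ((\<exists>\<kappa>. wff SC \<kappa> \<and> cmd_type G C (TProd (TArr \<kappa> r) \<kappa>) D) \<longleftrightarrow> (\<exists>\<kappa>. wff SC \<kappa> \<and> cmd_type G C' (TProd (TArr \<kappa> r) \<kappa>) D))"
proof (induction rule: red_redc.inducts)
  case (beta M N)
  show ?case
  proof (intro allI impI iffI)
    fix G D :: "nat \<Rightarrow> 'a ity" and s assume w: "wfG G" "wfD D"
    { assume "has_type G (App (Lam M) N) s D"
      then show "has_type G (substV M 0 N) s D" using beta_red(1) w by blast }
    { assume "has_type G (substV M 0 N) s D"
      then show "has_type G (App (Lam M) N) s D" using beta_exp w by blast }
  qed
next
  case (mu C N)
  show ?case
  proof (intro allI impI iffI)
    fix G D :: "nat \<Rightarrow> 'a ity" and s assume w: "wfG G" "wfD D"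
    { assume "has_type G (App (Mu C) N) s D"
      then show "has_type G (Mu (structc C 0 (liftN 0 N))) s D" using mu_red(1) w by blast }
    { assume "has_type G (Mu (structc C 0 (liftN 0 N))) s D"
      then show "has_type G (App (Mu C) N) s D" using mu_exp(1) w by blast }
  qed
next
  case (ren a C)
  show ?case
  proof (intro allI impI iffI)
    fix G D :: "nat \<Rightarrow> 'a ity" and r assume w: "wfG G" "wfD D"
    { assume "\<exists>\<kappa>. wff SC \<kappa> \<and> cmd_type G (Cmd a (Mu C)) (TProd (TArr \<kappa> r) \<kappa>) D"
      then show "\<exists>\<kappa>. wff SC \<kappa> \<and> cmd_type G (renNc C 0 a) (TProd (TArr \<kappa> r) \<kappa>) D" using ren_red w by blast }
    { assume "\<exists>\<kappa>. wff SC \<kappa> \<and> cmd_type G (renNc C 0 a) (TProd (TArr \<kappa> r) \<kappa>) D"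
      then show "\<exists>\<kappa>. wff SC \<kappa> \<and> cmd_type G (Cmd a (Mu C)) (TProd (TArr \<kappa> r) \<kappa>) D" using ren_exp2 w by blast }
  qed
next
  case (lam M M')
  show ?case
  proof (intro allI impI iffI)
    fix G D :: "nat \<Rightarrow> 'a ity" and s assume w: "wfG G" "wfD D"
    have h: "\<And>\<delta> t. wff SD \<delta> \<Longrightarrow> (has_type (extend \<delta> G) M t D \<longleftrightarrow> has_type (extend \<delta> G) M' t D)"
      using lam.IH wfG_extend[OF w(1)] w(2) by blast
    { assume "has_type G (Lam M) s D"
      then show "has_type G (Lam M') s D" using cong_Lam(1) h by blast }
    { assume "has_type G (Lam M') s D"
      then show "has_type G (Lam M) s D" using cong_Lam(1) h by blast }
  qed
next
  case (appL M M' N)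
  show ?case
  proof (intro allI impI iffI)
    fix G D :: "nat \<Rightarrow> 'a ity" and s assume w: "wfG G" "wfD D"
    have h: "\<And>t. has_type G M t D \<longleftrightarrow> has_type G M' t D" using appL.IH w by blast
    { assume "has_type G (App M N) s D"
      then show "has_type G (App M' N) s D" using cong_App(1) h by blast }
    { assume "has_type G (App M' N) s D"
      then show "has_type G (App M N) s D" using cong_App(1) h by blast }
  qed
next
  case (appR N N' M)
  show ?case
  proof (intro allI impI iffI)
    fix G D :: "nat \<Rightarrow> 'a ity" and s assume w: "wfG G" "wfD D"
    have h: "\<And>t. has_type G N t D \<longleftrightarrow> has_type G N' t D" using appR.IH w by blast
    { assume "has_type G (App M N) s D"
      then show "has_type G (App M N') s D" using cong_App(1) h by blast }
    { assume "has_type G (App M N') s D"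
      then show "has_type G (App M N) s D" using cong_App(1) h by blast }
  qed
next
  case (muC C C')
  show ?case
  proof (intro allI impI iffI)
    fix G D :: "nat \<Rightarrow> 'a ity" and s assume w: "wfG G" "wfD D"
    have h: "\<And>\<kappa> r. wff SC \<kappa> \<Longrightarrow> ((\<exists>k. wff SC k \<and> cmd_type G C (TProd (TArr k r) k) (extend \<kappa> D)) \<longleftrightarrow>
        (\<exists>k. wff SC k \<and> cmd_type G C' (TProd (TArr k r) k) (extend \<kappa> D)))"
      using muC.IH w(1) wfD_extend[OF w(2)] by blast
    { assume t: "has_type G (Mu C) s D"
      have "\<forall>\<kappa> \<kappa>' \<rho>. wff SC \<kappa> \<longrightarrow> wff SC \<kappa>' \<longrightarrow> cmd_type G C (TProd (TArr \<kappa>' \<rho>) \<kappa>') (extend \<kappa> D) \<longrightarrow>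
       (\<exists>\<kappa>''. cmd_type G C' (TProd (TArr \<kappa>'' \<rho>) \<kappa>'') (extend \<kappa> D))" using h by blast
      then show "has_type G (Mu C') s D" using cong_Mu(1)[OF t] w by blast }
    { assume t: "has_type G (Mu C') s D"
      have "\<forall>\<kappa> \<kappa>' \<rho>. wff SC \<kappa> \<longrightarrow> wff SC \<kappa>' \<longrightarrow> cmd_type G C' (TProd (TArr \<kappa>' \<rho>) \<kappa>') (extend \<kappa> D) \<longrightarrow>
       (\<exists>\<kappa>''. cmd_type G C (TProd (TArr \<kappa>'' \<rho>) \<kappa>'') (extend \<kappa> D))" using h by blast
      then show "has_type G (Mu C) s D" using cong_Mu(1)[OF t] w by blast }
  qed
next
  case (cmdC M M' a)
  show ?case
  proof (intro allI impI iffI)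
    fix G D :: "nat \<Rightarrow> 'a ity" and r assume w: "wfG G" "wfD D"
    have h: "\<And>t. has_type G M t D \<longleftrightarrow> has_type G M' t D" using cmdC.IH w by blast
    { assume "\<exists>\<kappa>. wff SC \<kappa> \<and> cmd_type G (Cmd a M) (TProd (TArr \<kappa> r) \<kappa>) D"
      then obtain \<kappa> where k: "wff SC \<kappa>" "cmd_type G (Cmd a M) (TProd (TArr \<kappa> r) \<kappa>) D" by blast
      have "cmd_type G (Cmd a M') (TProd (TArr \<kappa> r) \<kappa>) D" using cong_Cmd[OF k(2) w] h by blast
      then show "\<exists>\<kappa>. wff SC \<kappa> \<and> cmd_type G (Cmd a M') (TProd (TArr \<kappa> r) \<kappa>) D" using k(1) by blast }
    { assume "\<exists>\<kappa>. wff SC \<kappa> \<and> cmd_type G (Cmd a M') (TProd (TArr \<kappa> r) \<kappa>) D"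
      then obtain \<kappa> where k: "wff SC \<kappa>" "cmd_type G (Cmd a M') (TProd (TArr \<kappa> r) \<kappa>) D" by blast
      have "cmd_type G (Cmd a M) (TProd (TArr \<kappa> r) \<kappa>) D" using cong_Cmd[OF k(2) w] h by blast
      then show "\<exists>\<kappa>. wff SC \<kappa> \<and> cmd_type G (Cmd a M) (TProd (TArr \<kappa> r) \<kappa>) D" using k(1) by blast }
  qed
qed

lemma eq_pres:
  fixes G D :: "nat \<Rightarrow> 'a::complete_lattice ity"
  assumes "lmu_eq M N" and w: "wfG G" "wfD D"
  shows "has_type G M s D \<Longrightarrow> has_type G N s D"
proof -
  have "(symclp red)\<^sup>*\<^sup>* M N" using assms(1) unfolding lmu_eq_def equivclp_def .
  then show "has_type G M s D \<Longrightarrow> has_type G N s D"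
  proof (induction rule: rtranclp_induct)
    case base then show ?case .
  next
    case (step y z)
    then have t: "has_type G y s D" by blast
    from step(2) show ?case
    proof (rule symclpE)
      assume "red y z" then show ?thesis using red_pres(1) w t by blast
    next
      assume "red z y" then show ?thesis using red_pres(1) w t by blast
    qed
  qed
qed

theorem theorem5p1:
  fixes M N :: trm and G D :: "nat \<Rightarrow> 'a::complete_lattice ity" and \<delta> :: "'a ity"
  assumes "omega_algebraic TYPE('a)"
    and "is_basis G" and "is_context D"
    and "lmu_eq M N"
    and "has_type G M \<delta> D"
  shows "has_type G N \<delta> D"
proof -
  have "wfG G" using assms(2) unfolding is_basis_def wfG_def by simp
  moreover have "wfD D" using assms(3) unfolding is_context_def wfD_def by simp
  ultimately show ?thesis using eq_pres[OF assms(4)] assms(5) by blast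
qed


end
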